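(* Let $(\omega,\gamma,\mu,c)$ be a normalized quasi-abelian 3-cocycle on a finite crossed module $(G,X,\partial)$. Let $H=H(\omega,\gamma,\mu,c)$ be the vector space with basis $\{t_xg\}_{(x,g)\in X\times G}$, with product $(t_xg)(t_yh)=\delta_{x,{}^hy}\,\gamma_{g,h}(y)^{-1}\,t_y(gh)$, unit $1=\sum_{x\in X}t_xe$, coproduct $\Delta(t_xg)=\sum_{a,b\in X,\ ab=x}\mu_g(a,b)\,t_ag\otimes t_bg$, counit $\varepsilon(t_xg)=\delta_{x,e}$, Drinfeld associator $\Phi=\sum_{x,y,z\in X}\omega(x,y,z)\,t_xe\otimes t_ye\otimes t_ze$, elements $\alpha=1$, $\beta=\sum_{x\in X}\omega(x^{-1},x,x^{-1})\,t_xe$, linear map $S(t_xg)=\frac{\gamma_{g^{-1},g}(x^{-1})}{\mu_g(x,x^{-1})}\,t_{{}^g(x^{-1})}g^{-1}$, and $R=\sum_{x,y\in X}c(x,y)\,t_xe\otimes t_y\partial(x)$. Then these data make $H$ a quasi-triangular quasi-Hopf algebra (with antipode $(S,\alpha,\beta)$, $S$ an algebra anti-automorphism) with universal $R$-matrix $R$.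
   Context: $\mathbb{K}$ is an algebraically closed field of characteristic $0$. Quasi-Hopf and quasi-triangular quasi-Hopf algebras are in the sense of Drinfeld (as in Kassel, Quantum Groups, Chapter XV: a quasi-bialgebra $(H,\Delta,\varepsilon,\Phi)$ with antipode $(S,\alpha,\beta)$ and an invertible universal $R$-matrix). A finite crossed module is a triple $(G,X,\partial)$ with $G,X$ finite groups, $G$ acting on $X$ by automorphisms $(g,x)\mapsto {}^{g}x$, and $\partial:X\to G$ a homomorphism with ${}^{\partial(x)}x'=xx'x^{-1}$ and $\partial({}^gx)=g\partial(x)g^{-1}$. A quasi-abelian 3-cocycle on it is a quadruple $(\omega,\gamma,\mu,c)$ of functions $\omega:X^3\to\mathbb{K}^\times$, $(g,h,x)\mapsto\gamma_{g,h}(x)$ on $G\times G\times X$, $(g,x,y)\mapsto\mu_g(x,y)$ on $G\times X\times X$, $c:X^2\to\mathbb{K}^\times$, such that for all $g,h,k\in G$, $w,x,y,z\in X$: (a) $\omega(x,y,z)\omega(w,xy,z)\omega(w,x,y)=\omega(w,x,yz)\omega(wx,y,z)$; (b) $\gamma_{h,k}(x)\gamma_{g,hk}(x)=\gamma_{gh,k}(x)\gamma_{g,h}({}^kx)$; (c) $\frac{\mu_g(y,z)\mu_g(x,yz)}{\mu_g(xy,z)\mu_g(x,y)}=\frac{\omega({}^gx,{}^gy,{}^gz)}{\omega(x,y,z)}$; (d) $\frac{\gamma_{g,h}(x)\gamma_{g,h}(y)}{\gamma_{g,h}(xy)}=\frac{\mu_g({}^hx,{}^hy)\mu_h(x,y)}{\mu_{gh}(x,y)}$;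 (e) $\frac{c({}^gx,{}^gy)}{c(x,y)}=\frac{\mu_g(xyx^{-1},x)}{\mu_g(x,y)}\cdot\frac{\gamma_{g\partial(x)g^{-1},g}(y)}{\gamma_{g,\partial(x)}(y)}$; (f) $c(xy,z)=\frac{\omega(x,y,z)\,\omega((xy)z(xy)^{-1},x,y)}{\omega(x,yzy^{-1},y)\,\gamma_{\partial(x),\partial(y)}(z)}\,c(x,yzy^{-1})\,c(y,z)$; (g) $c(x,yz)=\frac{\omega(xyx^{-1},x,z)}{\omega(x,y,z)\,\omega(xyx^{-1},xzx^{-1},x)\,\mu_{\partial(x)}(y,z)}\,c(x,y)\,c(x,z)$. It is normalized if $\omega(x,y,z)=1$ whenever one of $x,y,z$ is $e$, $\gamma_{g,h}(x)=1$ whenever one of $g,h,x$ is $e$, $\mu_g(x,y)=1$ whenever one of $g,x,y$ is $e$, and $c(x,y)=1$ whenever $x$ or $y$ is $e$. *)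

theory Defs
  imports "HOL-Algebra.Group" "HOL-Computational_Algebra.Polynomial"
begin

definition alg_closed_field :: "'k::field itself \<Rightarrow> bool" where
  "alg_closed_field _ \<longleftrightarrow> (\<forall>p::'k poly. degree p \<noteq> 0 \<longrightarrow> (\<exists>z. poly p z = 0))"

definition finite_crossed_module ::
  "'g monoid \<Rightarrow> 'x monoid \<Rightarrow> ('g \<Rightarrow> 'x \<Rightarrow> 'x) \<Rightarrow> ('x \<Rightarrow> 'g) \<Rightarrow> bool" where
  "finite_crossed_module G X act d \<longleftrightarrow>
     group G \<and> group X \<and> finite (carrier G) \<and> finite (carrier X) \<and>
     (\<forall>g\<in>carrier G. \<forall>x\<in>carrier X. act g x \<in> carrier X) \<and>
     (\<forall>x\<in>carrier X. act \<one>\<^bsub>G\<^esub> x = x) \<and>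
     (\<forall>g\<in>carrier G. \<forall>h\<in>carrier G. \<forall>x\<in>carrier X.
        act (g \<otimes>\<^bsub>G\<^esub> h) x = act g (act h x)) \<and>
     (\<forall>g\<in>carrier G. \<forall>x\<in>carrier X. \<forall>y\<in>carrier X.
        act g (x \<otimes>\<^bsub>X\<^esub> y) = act g x \<otimes>\<^bsub>X\<^esub> act g y) \<and>
     d \<in> hom X G \<and>
     (\<forall>x\<in>carrier X. \<forall>x'\<in>carrier X.
        act (d x) x' = x \<otimes>\<^bsub>X\<^esub> x' \<otimes>\<^bsub>X\<^esub> inv\<^bsub>X\<^esub> x) \<and>
     (\<forall>g\<in>carrier G. \<forall>x\<in>carrier X.
        d (act g x) = g \<otimes>\<^bsub>G\<^esub> d x \<otimes>\<^bsub>G\<^esub> inv\<^bsub>G\<^esub> g)"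

definition quasi_abelian_3_cocycle ::
  "'g monoid \<Rightarrow> 'x monoid \<Rightarrow> ('g \<Rightarrow> 'x \<Rightarrow> 'x) \<Rightarrow> ('x \<Rightarrow> 'g) \<Rightarrow>
   ('x \<Rightarrow> 'x \<Rightarrow> 'x \<Rightarrow> 'k::field) \<Rightarrow> ('g \<Rightarrow> 'g \<Rightarrow> 'x \<Rightarrow> 'k) \<Rightarrow>
   ('g \<Rightarrow> 'x \<Rightarrow> 'x \<Rightarrow> 'k) \<Rightarrow> ('x \<Rightarrow> 'x \<Rightarrow> 'k) \<Rightarrow> bool" where
  "quasi_abelian_3_cocycle G X act d \<omega> \<gamma> \<mu> c \<longleftrightarrow>
     (\<forall>x\<in>carrier X. \<forall>y\<in>carrier X. \<forall>z\<in>carrier X. \<omega> x y z \<noteq> 0) \<and>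
     (\<forall>g\<in>carrier G. \<forall>h\<in>carrier G. \<forall>x\<in>carrier X. \<gamma> g h x \<noteq> 0) \<and>
     (\<forall>g\<in>carrier G. \<forall>x\<in>carrier X. \<forall>y\<in>carrier X. \<mu> g x y \<noteq> 0) \<and>
     (\<forall>x\<in>carrier X. \<forall>y\<in>carrier X. c x y \<noteq> 0) \<and>
     \<comment> \<open>(a)\<close>
     (\<forall>w\<in>carrier X. \<forall>x\<in>carrier X. \<forall>y\<in>carrier X. \<forall>z\<in>carrier X.
        \<omega> x y z * \<omega> w (x \<otimes>\<^bsub>X\<^esub> y) z * \<omega> w x y
        = \<omega> w x (y \<otimes>\<^bsub>X\<^esub> z) * \<omega> (w \<otimes>\<^bsub>X\<^esub> x) y z) \<and>
     \<comment> \<open>(b)\<close>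
     (\<forall>g\<in>carrier G. \<forall>h\<in>carrier G. \<forall>k\<in>carrier G. \<forall>x\<in>carrier X.
        \<gamma> h k x * \<gamma> g (h \<otimes>\<^bsub>G\<^esub> k) x = \<gamma> (g \<otimes>\<^bsub>G\<^esub> h) k x * \<gamma> g h (act k x)) \<and>
     \<comment> \<open>(c)\<close>
     (\<forall>g\<in>carrier G. \<forall>x\<in>carrier X. \<forall>y\<in>carrier X. \<forall>z\<in>carrier X.
        (\<mu> g y z * \<mu> g x (y \<otimes>\<^bsub>X\<^esub> z)) / (\<mu> g (x \<otimes>\<^bsub>X\<^esub> y) z * \<mu> g x y)
        = \<omega> (act g x) (act g y) (act g z) / \<omega> x y z) \<and>
     \<comment> \<open>(d)\<close>
     (\<forall>g\<in>carrier G. \<forall>h\<in>carrier G. \<forall>x\<in>carrier X. \<forall>y\<in>carrier X.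
        (\<gamma> g h x * \<gamma> g h y) / \<gamma> g h (x \<otimes>\<^bsub>X\<^esub> y)
        = (\<mu> g (act h x) (act h y) * \<mu> h x y) / \<mu> (g \<otimes>\<^bsub>G\<^esub> h) x y) \<and>
     \<comment> \<open>(e)\<close>
     (\<forall>g\<in>carrier G. \<forall>x\<in>carrier X. \<forall>y\<in>carrier X.
        c (act g x) (act g y) / c x y
        = (\<mu> g (x \<otimes>\<^bsub>X\<^esub> y \<otimes>\<^bsub>X\<^esub> inv\<^bsub>X\<^esub> x) x / \<mu> g x y) *
          (\<gamma> (g \<otimes>\<^bsub>G\<^esub> d x \<otimes>\<^bsub>G\<^esub> inv\<^bsub>G\<^esub> g) g y / \<gamma> g (d x) y)) \<and>
     \<comment> \<open>(f)\<close>
     (\<forall>x\<in>carrier X. \<forall>y\<in>carrier X. \<forall>z\<in>carrier X.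
        c (x \<otimes>\<^bsub>X\<^esub> y) z
        = (\<omega> x y z * \<omega> ((x \<otimes>\<^bsub>X\<^esub> y) \<otimes>\<^bsub>X\<^esub> z \<otimes>\<^bsub>X\<^esub> inv\<^bsub>X\<^esub> (x \<otimes>\<^bsub>X\<^esub> y)) x y)
          / (\<omega> x (y \<otimes>\<^bsub>X\<^esub> z \<otimes>\<^bsub>X\<^esub> inv\<^bsub>X\<^esub> y) y * \<gamma> (d x) (d y) z)
          * c x (y \<otimes>\<^bsub>X\<^esub> z \<otimes>\<^bsub>X\<^esub> inv\<^bsub>X\<^esub> y) * c y z) \<and>
     \<comment> \<open>(g)\<close>
     (\<forall>x\<in>carrier X. \<forall>y\<in>carrier X. \<forall>z\<in>carrier X.
        c x (y \<otimes>\<^bsub>X\<^esub> z)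
        = \<omega> (x \<otimes>\<^bsub>X\<^esub> y \<otimes>\<^bsub>X\<^esub> inv\<^bsub>X\<^esub> x) x z
          / (\<omega> x y z * \<omega> (x \<otimes>\<^bsub>X\<^esub> y \<otimes>\<^bsub>X\<^esub> inv\<^bsub>X\<^esub> x)
                              (x \<otimes>\<^bsub>X\<^esub> z \<otimes>\<^bsub>X\<^esub> inv\<^bsub>X\<^esub> x) x
             * \<mu> (d x) y z)
          * c x y * c x z)"

definition normalized_cocycle ::
  "'g monoid \<Rightarrow> 'x monoid \<Rightarrow>
   ('x \<Rightarrow> 'x \<Rightarrow> 'x \<Rightarrow> 'k::field) \<Rightarrow> ('g \<Rightarrow> 'g \<Rightarrow> 'x \<Rightarrow> 'k) \<Rightarrow>
   ('g \<Rightarrow> 'x \<Rightarrow> 'x \<Rightarrow> 'k) \<Rightarrow> ('x \<Rightarrow> 'x \<Rightarrow> 'k) \<Rightarrow> bool" where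
  "normalized_cocycle G X \<omega> \<gamma> \<mu> c \<longleftrightarrow>
     (\<forall>x\<in>carrier X. \<forall>y\<in>carrier X. \<forall>z\<in>carrier X.
        (x = \<one>\<^bsub>X\<^esub> \<or> y = \<one>\<^bsub>X\<^esub> \<or> z = \<one>\<^bsub>X\<^esub>) \<longrightarrow> \<omega> x y z = 1) \<and>
     (\<forall>g\<in>carrier G. \<forall>h\<in>carrier G. \<forall>x\<in>carrier X.
        (g = \<one>\<^bsub>G\<^esub> \<or> h = \<one>\<^bsub>G\<^esub> \<or> x = \<one>\<^bsub>X\<^esub>) \<longrightarrow> \<gamma> g h x = 1) \<and>
     (\<forall>g\<in>carrier G. \<forall>x\<in>carrier X. \<forall>y\<in>carrier X.
        (g = \<one>\<^bsub>G\<^esub> \<or> x = \<one>\<^bsub>X\<^esub> \<or> y = \<one>\<^bsub>X\<^esub>) \<longrightarrow> \<mu> g x y = 1) \<and>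
     (\<forall>x\<in>carrier X. \<forall>y\<in>carrier X.
        (x = \<one>\<^bsub>X\<^esub> \<or> y = \<one>\<^bsub>X\<^esub>) \<longrightarrow> c x y = 1)"

section \<open>Finite-dimensional algebras given on a finite basis\<close>

text \<open>A vector of H (with finite basis B) is a coefficient function vanishing outside B;
  elements of H\<otimes>H, H\<otimes>H\<otimes>H, H\<otimes>H\<otimes>H\<otimes>H are coefficient functions on B\<times>B etc.
  The algebra H is given by structure constants sc (e_i e_j = \<Sum>_p sc i j p e_p),
  the coproduct by dc (\<Delta> e_i = \<Sum>_{p,q} dc i p q e_p\<otimes>e_q), the counit by its
  values ep on the basis, the linear map S by its matrix sm (S e_i = \<Sum>_p sm i p e_p).\<close>

definition ext0 :: "'a set \<Rightarrow> ('a \<Rightarrow> 'k::zero) \<Rightarrow> 'a \<Rightarrow> 'k" where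
  "ext0 A f = (\<lambda>x. if x \<in> A then f x else 0)"

definition V1 :: "'b set \<Rightarrow> ('b \<Rightarrow> 'k::zero) set" where
  "V1 B = {v. \<forall>i. i \<notin> B \<longrightarrow> v i = 0}"
definition V2 :: "'b set \<Rightarrow> ('b \<times> 'b \<Rightarrow> 'k::zero) set" where
  "V2 B = {v. \<forall>i. i \<notin> B \<times> B \<longrightarrow> v i = 0}"
definition V3 :: "'b set \<Rightarrow> ('b \<times> 'b \<times> 'b \<Rightarrow> 'k::zero) set" where
  "V3 B = {v. \<forall>i. i \<notin> B \<times> B \<times> B \<longrightarrow> v i = 0}"

definition bvec :: "'b \<Rightarrow> 'b \<Rightarrow> 'k::{zero,one}" where
  "bvec i = (\<lambda>j. if j = i then 1 else 0)"

definition smult1 :: "'k::times \<Rightarrow> ('b \<Rightarrow> 'k) \<Rightarrow> 'b \<Rightarrow> 'k" where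
  "smult1 a v = (\<lambda>p. a * v p)"

definition mul1 :: "'b set \<Rightarrow> ('b \<Rightarrow> 'b \<Rightarrow> 'b \<Rightarrow> 'k::field) \<Rightarrow>
    ('b \<Rightarrow> 'k) \<Rightarrow> ('b \<Rightarrow> 'k) \<Rightarrow> 'b \<Rightarrow> 'k" where
  "mul1 B sc u v = ext0 B (\<lambda>p. \<Sum>i\<in>B. \<Sum>k\<in>B. u i * v k * sc i k p)"

definition mul2 :: "'b set \<Rightarrow> ('b \<Rightarrow> 'b \<Rightarrow> 'b \<Rightarrow> 'k::field) \<Rightarrow>
    ('b \<times> 'b \<Rightarrow> 'k) \<Rightarrow> ('b \<times> 'b \<Rightarrow> 'k) \<Rightarrow> 'b \<times> 'b \<Rightarrow> 'k" where
  "mul2 B sc u v = ext0 (B \<times> B) (\<lambda>(p, q).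
     \<Sum>(i, j)\<in>B \<times> B. \<Sum>(k, l)\<in>B \<times> B. u (i, j) * v (k, l) * sc i k p * sc j l q)"

definition mul3 :: "'b set \<Rightarrow> ('b \<Rightarrow> 'b \<Rightarrow> 'b \<Rightarrow> 'k::field) \<Rightarrow>
    ('b \<times> 'b \<times> 'b \<Rightarrow> 'k) \<Rightarrow> ('b \<times> 'b \<times> 'b \<Rightarrow> 'k) \<Rightarrow> 'b \<times> 'b \<times> 'b \<Rightarrow> 'k" where
  "mul3 B sc u v = ext0 (B \<times> B \<times> B) (\<lambda>(p, q, r).
     \<Sum>(i, j, k)\<in>B \<times> B \<times> B. \<Sum>(i', j', k')\<in>B \<times> B \<times> B.
       u (i, j, k) * v (i', j', k') * sc i i' p * sc j j' q * sc k k' r)"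

definition mul4 :: "'b set \<Rightarrow> ('b \<Rightarrow> 'b \<Rightarrow> 'b \<Rightarrow> 'k::field) \<Rightarrow>
    ('b \<times> 'b \<times> 'b \<times> 'b \<Rightarrow> 'k) \<Rightarrow> ('b \<times> 'b \<times> 'b \<times> 'b \<Rightarrow> 'k) \<Rightarrow> 'b \<times> 'b \<times> 'b \<times> 'b \<Rightarrow> 'k" where
  "mul4 B sc u v = ext0 (B \<times> B \<times> B \<times> B) (\<lambda>(p, q, r, s).
     \<Sum>(i, j, k, l)\<in>B \<times> B \<times> B \<times> B. \<Sum>(i', j', k', l')\<in>B \<times> B \<times> B \<times> B.
       u (i, j, k, l) * v (i', j', k', l') * sc i i' p * sc j j' q * sc k k' r * sc l l' s)"

definition one2 :: "('b \<Rightarrow> 'k::times) \<Rightarrow> 'b \<times> 'b \<Rightarrow> 'k" where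
  "one2 un = (\<lambda>(p, q). un p * un q)"
definition one3 :: "('b \<Rightarrow> 'k::times) \<Rightarrow> 'b \<times> 'b \<times> 'b \<Rightarrow> 'k" where
  "one3 un = (\<lambda>(p, q, r). un p * un q * un r)"

definition invertible2 where
  "invertible2 B sc un u \<longleftrightarrow> (\<exists>v\<in>V2 B. mul2 B sc u v = one2 un \<and> mul2 B sc v u = one2 un)"
definition inv2 where
  "inv2 B sc un u = (THE v. v \<in> V2 B \<and> mul2 B sc u v = one2 un \<and> mul2 B sc v u = one2 un)"
definition invertible3 where
  "invertible3 B sc un u \<longleftrightarrow> (\<exists>v\<in>V3 B. mul3 B sc u v = one3 un \<and> mul3 B sc v u = one3 un)"
definition inv3 where
  "inv3 B sc un u = (THE v. v \<in> V3 B \<and> mul3 B sc u v = one3 un \<and> mul3 B sc v u = one3 un)"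

definition Delta :: "'b set \<Rightarrow> ('b \<Rightarrow> 'b \<Rightarrow> 'b \<Rightarrow> 'k::field) \<Rightarrow> ('b \<Rightarrow> 'k) \<Rightarrow> 'b \<times> 'b \<Rightarrow> 'k" where
  "Delta B dc u = ext0 (B \<times> B) (\<lambda>(p, q). \<Sum>i\<in>B. u i * dc i p q)"

definition Delta_op :: "'b set \<Rightarrow> ('b \<Rightarrow> 'b \<Rightarrow> 'b \<Rightarrow> 'k::field) \<Rightarrow> ('b \<Rightarrow> 'k) \<Rightarrow> 'b \<times> 'b \<Rightarrow> 'k" where
  "Delta_op B dc u = (\<lambda>(p, q). Delta B dc u (q, p))"

definition Delta_x_id :: "'b set \<Rightarrow> ('b \<Rightarrow> 'b \<Rightarrow> 'b \<Rightarrow> 'k::field) \<Rightarrow> ('b \<times> 'b \<Rightarrow> 'k) \<Rightarrow> 'b \<times> 'b \<times> 'b \<Rightarrow> 'k" where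
  "Delta_x_id B dc u = ext0 (B \<times> B \<times> B) (\<lambda>(p, q, r). \<Sum>i\<in>B. u (i, r) * dc i p q)"
definition id_x_Delta :: "'b set \<Rightarrow> ('b \<Rightarrow> 'b \<Rightarrow> 'b \<Rightarrow> 'k::field) \<Rightarrow> ('b \<times> 'b \<Rightarrow> 'k) \<Rightarrow> 'b \<times> 'b \<times> 'b \<Rightarrow> 'k" where
  "id_x_Delta B dc u = ext0 (B \<times> B \<times> B) (\<lambda>(p, q, r). \<Sum>j\<in>B. u (p, j) * dc j q r)"

definition Delta_1_3 :: "'b set \<Rightarrow> ('b \<Rightarrow> 'b \<Rightarrow> 'b \<Rightarrow> 'k::field) \<Rightarrow> ('b \<times> 'b \<times> 'b \<Rightarrow> 'k) \<Rightarrow> 'b \<times> 'b \<times> 'b \<times> 'b \<Rightarrow> 'k" where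
  "Delta_1_3 B dc u = ext0 (B \<times> B \<times> B \<times> B) (\<lambda>(p, q, r, s). \<Sum>i\<in>B. u (i, r, s) * dc i p q)"
definition Delta_2_3 :: "'b set \<Rightarrow> ('b \<Rightarrow> 'b \<Rightarrow> 'b \<Rightarrow> 'k::field) \<Rightarrow> ('b \<times> 'b \<times> 'b \<Rightarrow> 'k) \<Rightarrow> 'b \<times> 'b \<times> 'b \<times> 'b \<Rightarrow> 'k" where
  "Delta_2_3 B dc u = ext0 (B \<times> B \<times> B \<times> B) (\<lambda>(p, q, r, s). \<Sum>j\<in>B. u (p, j, s) * dc j q r)"
definition Delta_3_3 :: "'b set \<Rightarrow> ('b \<Rightarrow> 'b \<Rightarrow> 'b \<Rightarrow> 'k::field) \<Rightarrow> ('b \<times> 'b \<times> 'b \<Rightarrow> 'k) \<Rightarrow> 'b \<times> 'b \<times> 'b \<times> 'b \<Rightarrow> 'k" where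
  "Delta_3_3 B dc u = ext0 (B \<times> B \<times> B \<times> B) (\<lambda>(p, q, r, s). \<Sum>k\<in>B. u (p, q, k) * dc k r s)"

definition one_x3 :: "('b \<Rightarrow> 'k::times) \<Rightarrow> ('b \<times> 'b \<times> 'b \<Rightarrow> 'k) \<Rightarrow> 'b \<times> 'b \<times> 'b \<times> 'b \<Rightarrow> 'k" where
  "one_x3 un u = (\<lambda>(p, q, r, s). un p * u (q, r, s))"
definition x3_one :: "('b \<Rightarrow> 'k::times) \<Rightarrow> ('b \<times> 'b \<times> 'b \<Rightarrow> 'k) \<Rightarrow> 'b \<times> 'b \<times> 'b \<times> 'b \<Rightarrow> 'k" where
  "x3_one un u = (\<lambda>(p, q, r, s). u (p, q, r) * un s)"

definition eps :: "'b set \<Rightarrow> ('b \<Rightarrow> 'k::field) \<Rightarrow> ('b \<Rightarrow> 'k) \<Rightarrow> 'k" where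
  "eps B ep u = (\<Sum>i\<in>B. u i * ep i)"
definition eps_x_id :: "'b set \<Rightarrow> ('b \<Rightarrow> 'k::field) \<Rightarrow> ('b \<times> 'b \<Rightarrow> 'k) \<Rightarrow> 'b \<Rightarrow> 'k" where
  "eps_x_id B ep u = ext0 B (\<lambda>q. \<Sum>p\<in>B. ep p * u (p, q))"
definition id_x_eps :: "'b set \<Rightarrow> ('b \<Rightarrow> 'k::field) \<Rightarrow> ('b \<times> 'b \<Rightarrow> 'k) \<Rightarrow> 'b \<Rightarrow> 'k" where
  "id_x_eps B ep u = ext0 B (\<lambda>p. \<Sum>q\<in>B. u (p, q) * ep q)"
definition id_eps_id :: "'b set \<Rightarrow> ('b \<Rightarrow> 'k::field) \<Rightarrow> ('b \<times> 'b \<times> 'b \<Rightarrow> 'k) \<Rightarrow> 'b \<times> 'b \<Rightarrow> 'k" where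
  "id_eps_id B ep u = ext0 (B \<times> B) (\<lambda>(p, r). \<Sum>q\<in>B. u (p, q, r) * ep q)"

definition lin_map :: "'b set \<Rightarrow> ('b \<Rightarrow> 'b \<Rightarrow> 'k::field) \<Rightarrow> ('b \<Rightarrow> 'k) \<Rightarrow> 'b \<Rightarrow> 'k" where
  "lin_map B sm u = ext0 B (\<lambda>p. \<Sum>i\<in>B. u i * sm i p)"

text \<open>Leg notation: for u = \<Sum> X\<otimes>Y\<otimes>Z, u_{ijk} puts X in slot i, Y in slot j, Z in slot k
  (so \<Phi>_{312} = \<Sum> Y\<otimes>Z\<otimes>X); likewise R_{13} = \<Sum> R'\<otimes>1\<otimes>R'' etc.\<close>
definition leg312 :: "('b \<times> 'b \<times> 'b \<Rightarrow> 'k) \<Rightarrow> 'b \<times> 'b \<times> 'b \<Rightarrow> 'k" where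
  "leg312 u = (\<lambda>(s1, s2, s3). u (s3, s1, s2))"
definition leg231 :: "('b \<times> 'b \<times> 'b \<Rightarrow> 'k) \<Rightarrow> 'b \<times> 'b \<times> 'b \<Rightarrow> 'k" where
  "leg231 u = (\<lambda>(s1, s2, s3). u (s2, s3, s1))"
definition leg213 :: "('b \<times> 'b \<times> 'b \<Rightarrow> 'k) \<Rightarrow> 'b \<times> 'b \<times> 'b \<Rightarrow> 'k" where
  "leg213 u = (\<lambda>(s1, s2, s3). u (s2, s1, s3))"
definition leg132 :: "('b \<times> 'b \<times> 'b \<Rightarrow> 'k) \<Rightarrow> 'b \<times> 'b \<times> 'b \<Rightarrow> 'k" where
  "leg132 u = (\<lambda>(s1, s2, s3). u (s1, s3, s2))"

definition R12 :: "('b \<Rightarrow> 'k::times) \<Rightarrow> ('b \<times> 'b \<Rightarrow> 'k) \<Rightarrow> 'b \<times> 'b \<times> 'b \<Rightarrow> 'k" where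
  "R12 un R = (\<lambda>(p, q, r). R (p, q) * un r)"
definition R13 :: "('b \<Rightarrow> 'k::times) \<Rightarrow> ('b \<times> 'b \<Rightarrow> 'k) \<Rightarrow> 'b \<times> 'b \<times> 'b \<Rightarrow> 'k" where
  "R13 un R = (\<lambda>(p, q, r). R (p, r) * un q)"
definition R23 :: "('b \<Rightarrow> 'k::times) \<Rightarrow> ('b \<times> 'b \<Rightarrow> 'k) \<Rightarrow> 'b \<times> 'b \<times> 'b \<Rightarrow> 'k" where
  "R23 un R = (\<lambda>(p, q, r). un p * R (q, r))"

section \<open>Quasi-bialgebras, quasi-Hopf algebras, quasi-triangularity (Drinfeld / Kassel XV)\<close>

definition quasi_bialgebra ::
  "'b set \<Rightarrow> ('b \<Rightarrow> 'b \<Rightarrow> 'b \<Rightarrow> 'k::field) \<Rightarrow> ('b \<Rightarrow> 'k) \<Rightarrow>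
   ('b \<Rightarrow> 'b \<Rightarrow> 'b \<Rightarrow> 'k) \<Rightarrow> ('b \<Rightarrow> 'k) \<Rightarrow> ('b \<times> 'b \<times> 'b \<Rightarrow> 'k) \<Rightarrow> bool" where
  "quasi_bialgebra B sc un dc ep Phi \<longleftrightarrow>
     finite B \<and> un \<in> V1 B \<and> Phi \<in> V3 B \<and>
     \<comment> \<open>associative unital algebra\<close>
     (\<forall>u\<in>V1 B. \<forall>v\<in>V1 B. \<forall>w\<in>V1 B.
        mul1 B sc (mul1 B sc u v) w = mul1 B sc u (mul1 B sc v w)) \<and>
     (\<forall>u\<in>V1 B. mul1 B sc un u = u \<and> mul1 B sc u un = u) \<and>
     \<comment> \<open>\<Delta> and \<epsilon> are algebra morphisms\<close>
     (\<forall>u\<in>V1 B. \<forall>v\<in>V1 B. Delta B dc (mul1 B sc u v) = mul2 B sc (Delta B dc u) (Delta B dc v)) \<and>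
     Delta B dc un = one2 un \<and>
     (\<forall>u\<in>V1 B. \<forall>v\<in>V1 B. eps B ep (mul1 B sc u v) = eps B ep u * eps B ep v) \<and>
     eps B ep un = 1 \<and>
     \<comment> \<open>\<Phi> invertible, quasi-coassociativity, pentagon\<close>
     invertible3 B sc un Phi \<and>
     (\<forall>a\<in>V1 B. id_x_Delta B dc (Delta B dc a)
        = mul3 B sc (mul3 B sc Phi (Delta_x_id B dc (Delta B dc a))) (inv3 B sc un Phi)) \<and>
     mul4 B sc (Delta_3_3 B dc Phi) (Delta_1_3 B dc Phi)
       = mul4 B sc (mul4 B sc (one_x3 un Phi) (Delta_2_3 B dc Phi)) (x3_one un Phi) \<and>
     \<comment> \<open>counit axioms\<close>
     (\<forall>a\<in>V1 B. eps_x_id B ep (Delta B dc a) = a \<and> id_x_eps B ep (Delta B dc a) = a) \<and>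
     id_eps_id B ep Phi = one2 un"

definition quasi_hopf_algebra ::
  "'b set \<Rightarrow> ('b \<Rightarrow> 'b \<Rightarrow> 'b \<Rightarrow> 'k::field) \<Rightarrow> ('b \<Rightarrow> 'k) \<Rightarrow>
   ('b \<Rightarrow> 'b \<Rightarrow> 'b \<Rightarrow> 'k) \<Rightarrow> ('b \<Rightarrow> 'k) \<Rightarrow> ('b \<times> 'b \<times> 'b \<Rightarrow> 'k) \<Rightarrow>
   ('b \<Rightarrow> 'b \<Rightarrow> 'k) \<Rightarrow> ('b \<Rightarrow> 'k) \<Rightarrow> ('b \<Rightarrow> 'k) \<Rightarrow> bool" where
  "quasi_hopf_algebra B sc un dc ep Phi sm al be \<longleftrightarrow>
     quasi_bialgebra B sc un dc ep Phi \<and> al \<in> V1 B \<and> be \<in> V1 B \<and>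
     (let m = mul1 B sc; S = lin_map B sm; D = Delta B dc; Psi = inv3 B sc un Phi in
     \<comment> \<open>S is an algebra anti-automorphism\<close>
     bij_betw S (V1 B) (V1 B) \<and> S un = un \<and>
     (\<forall>u\<in>V1 B. \<forall>v\<in>V1 B. S (m u v) = m (S v) (S u)) \<and>
     \<comment> \<open>\<Sum> S(a') \<alpha> a'' = \<epsilon>(a) \<alpha>,  \<Sum> a' \<beta> S(a'') = \<epsilon>(a) \<beta>\<close>
     (\<forall>a\<in>V1 B. (\<lambda>p. \<Sum>i\<in>B. \<Sum>j\<in>B. D a (i, j) * m (m (S (bvec i)) al) (bvec j) p)
                 = smult1 (eps B ep a) al) \<and>
     (\<forall>a\<in>V1 B. (\<lambda>p. \<Sum>i\<in>B. \<Sum>j\<in>B. D a (i, j) * m (m (bvec i) be) (S (bvec j)) p)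
                 = smult1 (eps B ep a) be) \<and>
     \<comment> \<open>\<Sum> X \<beta> S(Y) \<alpha> Z = 1 for \<Phi> = \<Sum> X\<otimes>Y\<otimes>Z\<close>
     (\<lambda>p. \<Sum>(i, j, k)\<in>B \<times> B \<times> B.
        Phi (i, j, k) * m (m (m (m (bvec i) be) (S (bvec j))) al) (bvec k) p) = un \<and>
     \<comment> \<open>\<Sum> S(x) \<alpha> y \<beta> S(z) = 1 for \<Phi>^-1 = \<Sum> x\<otimes>y\<otimes>z\<close>
     (\<lambda>p. \<Sum>(i, j, k)\<in>B \<times> B \<times> B.
        Psi (i, j, k) * m (m (m (m (S (bvec i)) al) (bvec j)) be) (S (bvec k)) p) = un)"

definition qt_quasi_hopf_algebra ::
  "'b set \<Rightarrow> ('b \<Rightarrow> 'b \<Rightarrow> 'b \<Rightarrow> 'k::field) \<Rightarrow> ('b \<Rightarrow> 'k) \<Rightarrow>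
   ('b \<Rightarrow> 'b \<Rightarrow> 'b \<Rightarrow> 'k) \<Rightarrow> ('b \<Rightarrow> 'k) \<Rightarrow> ('b \<times> 'b \<times> 'b \<Rightarrow> 'k) \<Rightarrow>
   ('b \<Rightarrow> 'b \<Rightarrow> 'k) \<Rightarrow> ('b \<Rightarrow> 'k) \<Rightarrow> ('b \<Rightarrow> 'k) \<Rightarrow> ('b \<times> 'b \<Rightarrow> 'k) \<Rightarrow> bool" where
  "qt_quasi_hopf_algebra B sc un dc ep Phi sm al be R \<longleftrightarrow>
     quasi_hopf_algebra B sc un dc ep Phi sm al be \<and> R \<in> V2 B \<and>
     invertible2 B sc un R \<and>
     (let m2 = mul2 B sc; m3 = mul3 B sc; Psi = inv3 B sc un Phi in
     (\<forall>a\<in>V1 B. Delta_op B dc a = m2 (m2 R (Delta B dc a)) (inv2 B sc un R)) \<and>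
     \<comment> \<open>(\<Delta>\<otimes>id)(R) = \<Phi>_{312} R_{13} \<Phi>^-1_{132} R_{23} \<Phi>\<close>
     Delta_x_id B dc R
       = m3 (m3 (m3 (m3 (leg312 Phi) (R13 un R)) (leg132 Psi)) (R23 un R)) Phi \<and>
     \<comment> \<open>(id\<otimes>\<Delta>)(R) = \<Phi>^-1_{231} R_{13} \<Phi>_{213} R_{12} \<Phi>^-1\<close>
     id_x_Delta B dc R
       = m3 (m3 (m3 (m3 (leg231 Psi) (R13 un R)) (leg213 Phi)) (R12 un R)) Psi)"

section \<open>The algebra H(\<omega>,\<gamma>,\<mu>,c) on the basis {t_x g}, indexed by (x,g) \<in> X \<times> G\<close>

definition H_basis :: "'g monoid \<Rightarrow> 'x monoid \<Rightarrow> ('x \<times> 'g) set" where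
  "H_basis G X = carrier X \<times> carrier G"

definition H_sc :: "'g monoid \<Rightarrow> 'x monoid \<Rightarrow> ('g \<Rightarrow> 'x \<Rightarrow> 'x) \<Rightarrow> ('g \<Rightarrow> 'g \<Rightarrow> 'x \<Rightarrow> 'k::field) \<Rightarrow>
    'x \<times> 'g \<Rightarrow> 'x \<times> 'g \<Rightarrow> 'x \<times> 'g \<Rightarrow> 'k" where
  "H_sc G X act \<gamma> = (\<lambda>(x, g) (y, h) (z, k).
     if x = act h y \<and> z = y \<and> k = g \<otimes>\<^bsub>G\<^esub> h then inverse (\<gamma> g h y) else 0)"

definition H_unit :: "'g monoid \<Rightarrow> 'x monoid \<Rightarrow> 'x \<times> 'g \<Rightarrow> 'k::field" where
  "H_unit G X = ext0 (H_basis G X) (\<lambda>(x, g). if g = \<one>\<^bsub>G\<^esub> then 1 else 0)"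

definition H_dc :: "'g monoid \<Rightarrow> 'x monoid \<Rightarrow> ('g \<Rightarrow> 'x \<Rightarrow> 'x \<Rightarrow> 'k::field) \<Rightarrow>
    'x \<times> 'g \<Rightarrow> 'x \<times> 'g \<Rightarrow> 'x \<times> 'g \<Rightarrow> 'k" where
  "H_dc G X \<mu> = (\<lambda>(x, g) (a, g1) (b, g2).
     if g1 = g \<and> g2 = g \<and> a \<otimes>\<^bsub>X\<^esub> b = x then \<mu> g a b else 0)"

definition H_ep :: "'g monoid \<Rightarrow> 'x monoid \<Rightarrow> 'x \<times> 'g \<Rightarrow> 'k::field" where
  "H_ep G X = (\<lambda>(x, g). if x = \<one>\<^bsub>X\<^esub> then 1 else 0)"

definition H_Phi :: "'g monoid \<Rightarrow> 'x monoid \<Rightarrow> ('x \<Rightarrow> 'x \<Rightarrow> 'x \<Rightarrow> 'k::field) \<Rightarrow>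
    ('x \<times> 'g) \<times> ('x \<times> 'g) \<times> ('x \<times> 'g) \<Rightarrow> 'k" where
  "H_Phi G X \<omega> = ext0 (H_basis G X \<times> H_basis G X \<times> H_basis G X)
     (\<lambda>((x, g1), (y, g2), (z, g3)).
        if g1 = \<one>\<^bsub>G\<^esub> \<and> g2 = \<one>\<^bsub>G\<^esub> \<and> g3 = \<one>\<^bsub>G\<^esub> then \<omega> x y z else 0)"

definition H_beta :: "'g monoid \<Rightarrow> 'x monoid \<Rightarrow> ('x \<Rightarrow> 'x \<Rightarrow> 'x \<Rightarrow> 'k::field) \<Rightarrow> 'x \<times> 'g \<Rightarrow> 'k" where
  "H_beta G X \<omega> = ext0 (H_basis G X) (\<lambda>(x, g).
     if g = \<one>\<^bsub>G\<^esub> then \<omega> (inv\<^bsub>X\<^esub> x) x (inv\<^bsub>X\<^esub> x) else 0)"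

definition H_sm :: "'g monoid \<Rightarrow> 'x monoid \<Rightarrow> ('g \<Rightarrow> 'x \<Rightarrow> 'x) \<Rightarrow>
    ('g \<Rightarrow> 'g \<Rightarrow> 'x \<Rightarrow> 'k::field) \<Rightarrow> ('g \<Rightarrow> 'x \<Rightarrow> 'x \<Rightarrow> 'k) \<Rightarrow> 'x \<times> 'g \<Rightarrow> 'x \<times> 'g \<Rightarrow> 'k" where
  "H_sm G X act \<gamma> \<mu> = (\<lambda>(x, g) (y, h).
     if y = act g (inv\<^bsub>X\<^esub> x) \<and> h = inv\<^bsub>G\<^esub> g
     then \<gamma> (inv\<^bsub>G\<^esub> g) g (inv\<^bsub>X\<^esub> x) / \<mu> g x (inv\<^bsub>X\<^esub> x) else 0)"

definition H_R :: "'g monoid \<Rightarrow> 'x monoid \<Rightarrow> ('x \<Rightarrow> 'g) \<Rightarrow> ('x \<Rightarrow> 'x \<Rightarrow> 'k::field) \<Rightarrow>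
    ('x \<times> 'g) \<times> ('x \<times> 'g) \<Rightarrow> 'k" where
  "H_R G X d c = ext0 (H_basis G X \<times> H_basis G X) (\<lambda>((x, g), (y, h)).
     if g = \<one>\<^bsub>G\<^esub> \<and> h = d x then c x y else 0)"

end

theory Submission
  imports Defs
begin



definition sc_assoc :: "'b set \<Rightarrow> ('b \<Rightarrow> 'b \<Rightarrow> 'b \<Rightarrow> 'k::field) \<Rightarrow> bool" where
  "sc_assoc B sc \<longleftrightarrow> (\<forall>i\<in>B. \<forall>l\<in>B. \<forall>k\<in>B. \<forall>p\<in>B.
     (\<Sum>j\<in>B. sc i l j * sc j k p) = (\<Sum>j\<in>B. sc l k j * sc i j p))"

lemma sum4_swap:
  "(\<Sum>j\<in>B. \<Sum>k\<in>C. \<Sum>i\<in>A. \<Sum>l\<in>D. f i l k j) = (\<Sum>i\<in>A. \<Sum>l\<in>D. \<Sum>k\<in>C. \<Sum>j\<in>B. f i l k j)"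
proof -
  have "(\<Sum>j\<in>B. \<Sum>k\<in>C. \<Sum>i\<in>A. \<Sum>l\<in>D. f i l k j) = (\<Sum>j\<in>B. \<Sum>i\<in>A. \<Sum>k\<in>C. \<Sum>l\<in>D. f i l k j)"
    by (rule sum.cong[OF refl], rule sum.swap)
  also have "\<dots> = (\<Sum>j\<in>B. \<Sum>i\<in>A. \<Sum>l\<in>D. \<Sum>k\<in>C. f i l k j)"
    by (rule sum.cong[OF refl], rule sum.cong[OF refl], rule sum.swap)
  also have "\<dots> = (\<Sum>i\<in>A. \<Sum>j\<in>B. \<Sum>l\<in>D. \<Sum>k\<in>C. f i l k j)"
    by (rule sum.swap)
  also have "\<dots> = (\<Sum>i\<in>A. \<Sum>l\<in>D. \<Sum>j\<in>B. \<Sum>k\<in>C. f i l k j)"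
    by (rule sum.cong[OF refl], rule sum.swap)
  also have "\<dots> = (\<Sum>i\<in>A. \<Sum>l\<in>D. \<Sum>k\<in>C. \<Sum>j\<in>B. f i l k j)"
    by (rule sum.cong[OF refl], rule sum.cong[OF refl], rule sum.swap)
  finally show ?thesis .
qed

lemma sum3_rot:
  "(\<Sum>l\<in>A. \<Sum>k\<in>C. \<Sum>j\<in>B. f l k j) = (\<Sum>j\<in>B. \<Sum>l\<in>A. \<Sum>k\<in>C. f l k j)"
proof -
  have "(\<Sum>l\<in>A. \<Sum>k\<in>C. \<Sum>j\<in>B. f l k j) = (\<Sum>l\<in>A. \<Sum>j\<in>B. \<Sum>k\<in>C. f l k j)"
    by (rule sum.cong[OF refl], rule sum.swap)
  also have "\<dots> = (\<Sum>j\<in>B. \<Sum>l\<in>A. \<Sum>k\<in>C. f l k j)" by (rule sum.swap)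
  finally show ?thesis .
qed

lemma mul1_assoc_gen:
  assumes A: "sc_assoc B sc"
  shows "mul1 B sc (mul1 B sc u v) w = mul1 B sc u (mul1 B sc v w)"
proof
  fix p
  show "mul1 B sc (mul1 B sc u v) w p = mul1 B sc u (mul1 B sc v w) p"
  proof (cases "p \<in> B")
    case False thus ?thesis by (simp add: mul1_def ext0_def)
  next
    case True
    have "mul1 B sc (mul1 B sc u v) w p =
        (\<Sum>j\<in>B. \<Sum>k\<in>B. (\<Sum>i\<in>B. \<Sum>l\<in>B. u i * v l * sc i l j) * w k * sc j k p)"
      using True by (simp add: mul1_def ext0_def cong: sum.cong)
    also have "\<dots> = (\<Sum>j\<in>B. \<Sum>k\<in>B. \<Sum>i\<in>B. \<Sum>l\<in>B. u i * v l * w k * (sc i l j * sc j k p))"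
      by (simp add: sum_distrib_left sum_distrib_right ac_simps)
    also have "\<dots> = (\<Sum>i\<in>B. \<Sum>l\<in>B. \<Sum>k\<in>B. \<Sum>j\<in>B. u i * v l * w k * (sc i l j * sc j k p))"
      by (rule sum4_swap)
    also have "\<dots> = (\<Sum>i\<in>B. \<Sum>l\<in>B. \<Sum>k\<in>B. u i * v l * w k * (\<Sum>j\<in>B. sc i l j * sc j k p))"
      by (simp add: sum_distrib_left)
    also have "\<dots> = (\<Sum>i\<in>B. \<Sum>l\<in>B. \<Sum>k\<in>B. u i * v l * w k * (\<Sum>j\<in>B. sc l k j * sc i j p))"
      using A True unfolding sc_assoc_def by (intro sum.cong refl) auto
    also have "\<dots> = (\<Sum>i\<in>B. \<Sum>l\<in>B. \<Sum>k\<in>B. \<Sum>j\<in>B. u i * (v l * w k * sc l k j) * sc i j p)"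
      by (simp add: sum_distrib_left ac_simps)
    also have "\<dots> = (\<Sum>i\<in>B. \<Sum>j\<in>B. \<Sum>l\<in>B. \<Sum>k\<in>B. u i * (v l * w k * sc l k j) * sc i j p)"
      by (rule sum.cong[OF refl], rule sum3_rot)
    also have "\<dots> = mul1 B sc u (mul1 B sc v w) p"
      using True by (simp add: mul1_def ext0_def sum_distrib_left sum_distrib_right cong: sum.cong)
    finally show ?thesis .
  qed
qed

definition sc_lunit :: "'b set \<Rightarrow> ('b \<Rightarrow> 'b \<Rightarrow> 'b \<Rightarrow> 'k::field) \<Rightarrow> ('b \<Rightarrow> 'k) \<Rightarrow> bool" where
  "sc_lunit B sc un \<longleftrightarrow> (\<forall>k\<in>B. \<forall>p\<in>B. (\<Sum>i\<in>B. un i * sc i k p) = (if k = p then 1 else 0))"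
definition sc_runit :: "'b set \<Rightarrow> ('b \<Rightarrow> 'b \<Rightarrow> 'b \<Rightarrow> 'k::field) \<Rightarrow> ('b \<Rightarrow> 'k) \<Rightarrow> bool" where
  "sc_runit B sc un \<longleftrightarrow> (\<forall>k\<in>B. \<forall>p\<in>B. (\<Sum>i\<in>B. un i * sc k i p) = (if k = p then 1 else 0))"

lemma mul1_lunit_gen:
  assumes "finite B" "sc_lunit B sc un" "u \<in> V1 B"
  shows "mul1 B sc un u = u"
proof
  fix p
  show "mul1 B sc un u p = u p"
  proof (cases "p \<in> B")
    case False thus ?thesis using assms(3) by (simp add: mul1_def ext0_def V1_def)
  next
    case True
    have "mul1 B sc un u p = (\<Sum>i\<in>B. \<Sum>k\<in>B. u k * (un i * sc i k p))"
      using True by (simp add: mul1_def ext0_def ac_simps)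
    also have "\<dots> = (\<Sum>k\<in>B. u k * (\<Sum>i\<in>B. un i * sc i k p))"
      by (subst sum.swap) (simp add: sum_distrib_left)
    also have "\<dots> = (\<Sum>k\<in>B. u k * (if k = p then 1 else 0))"
      using assms(2) True unfolding sc_lunit_def by (intro sum.cong refl) auto
    also have "\<dots> = u p" using True assms(1) by (simp add: if_distrib cong: if_cong)
    finally show ?thesis .
  qed
qed

lemma mul1_runit_gen:
  assumes "finite B" "sc_runit B sc un" "u \<in> V1 B"
  shows "mul1 B sc u un = u"
proof
  fix p
  show "mul1 B sc u un p = u p"
  proof (cases "p \<in> B")
    case False thus ?thesis using assms(3) by (simp add: mul1_def ext0_def V1_def)
  next
    case True
    have "mul1 B sc u un p = (\<Sum>k\<in>B. u k * (\<Sum>i\<in>B. un i * sc k i p))"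
      using True by (simp add: mul1_def ext0_def sum_distrib_left ac_simps)
    also have "\<dots> = (\<Sum>k\<in>B. u k * (if k = p then 1 else 0))"
      using assms(2) True unfolding sc_runit_def by (intro sum.cong refl) auto
    also have "\<dots> = u p" using True assms(1) by (simp add: if_distrib cong: if_cong)
    finally show ?thesis .
  qed
qed

lemma mul1_V1: "mul1 B sc u v \<in> V1 B"
  by (simp add: mul1_def ext0_def V1_def)

lemma inv_unique_gen:
  assumes "finite B" "sc_assoc B sc" "sc_lunit B sc un" "sc_runit B sc un"
    and "v \<in> V1 B" "w \<in> V1 B" "mul1 B sc v u = un" "mul1 B sc u w = un"
  shows "v = w"
proof -
  have "v = mul1 B sc v (mul1 B sc u w)" using assms mul1_runit_gen by metis
  also have "\<dots> = mul1 B sc (mul1 B sc v u) w" using assms(2) by (simp add: mul1_assoc_gen)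
  also have "\<dots> = w" using assms mul1_lunit_gen by metis
  finally show ?thesis .
qed

definition scT :: "('a \<Rightarrow> 'a \<Rightarrow> 'a \<Rightarrow> 'k::field) \<Rightarrow> ('b \<Rightarrow> 'b \<Rightarrow> 'b \<Rightarrow> 'k) \<Rightarrow>
    'a \<times> 'b \<Rightarrow> 'a \<times> 'b \<Rightarrow> 'a \<times> 'b \<Rightarrow> 'k" where
  "scT sa sb = (\<lambda>(i, j) (k, l) (p, q). sa i k p * sb j l q)"

lemma sum_prod_split:
  "(\<Sum>(j1, j2)\<in>A \<times> B. (f j1 :: 'k::comm_semiring_0) * g j2) = (\<Sum>j1\<in>A. f j1) * (\<Sum>j2\<in>B. g j2)"
  by (simp add: sum.cartesian_product[symmetric] sum_product)

lemma scT_assoc: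
  assumes "sc_assoc A sa" "sc_assoc B sb"
  shows "sc_assoc (A \<times> B) (scT sa sb)"
  unfolding sc_assoc_def
proof (clarify)
  fix i1 i2 l1 l2 k1 k2 p1 p2
  assume m: "i1 \<in> A" "i2 \<in> B" "l1 \<in> A" "l2 \<in> B" "k1 \<in> A" "k2 \<in> B" "p1 \<in> A" "p2 \<in> B"
  have "(\<Sum>j\<in>A \<times> B. scT sa sb (i1, i2) (l1, l2) j * scT sa sb j (k1, k2) (p1, p2))
      = (\<Sum>(j1,j2)\<in>A \<times> B. (sa i1 l1 j1 * sa j1 k1 p1) * (sb i2 l2 j2 * sb j2 k2 p2))"
    by (intro sum.cong refl) (auto simp: scT_def)
  also have "\<dots> = (\<Sum>j1\<in>A. sa i1 l1 j1 * sa j1 k1 p1) * (\<Sum>j2\<in>B. sb i2 l2 j2 * sb j2 k2 p2)"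
    by (rule sum_prod_split)
  also have "\<dots> = (\<Sum>j1\<in>A. sa l1 k1 j1 * sa i1 j1 p1) * (\<Sum>j2\<in>B. sb l2 k2 j2 * sb i2 j2 p2)"
    using assms m unfolding sc_assoc_def by simp
  also have "\<dots> = (\<Sum>(j1,j2)\<in>A \<times> B. (sa l1 k1 j1 * sa i1 j1 p1) * (sb l2 k2 j2 * sb i2 j2 p2))"
    by (rule sum_prod_split[symmetric])
  also have "\<dots> = (\<Sum>j\<in>A \<times> B. scT sa sb (l1, l2) (k1, k2) j * scT sa sb (i1, i2) j (p1, p2))"
    by (intro sum.cong refl) (auto simp: scT_def)
  finally show "(\<Sum>j\<in>A \<times> B. scT sa sb (i1, i2) (l1, l2) j * scT sa sb j (k1, k2) (p1, p2))
      = (\<Sum>j\<in>A \<times> B. scT sa sb (l1, l2) (k1, k2) j * scT sa sb (i1, i2) j (p1, p2))" .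
qed

lemma scT_lunit:
  assumes "sc_lunit A sa ua" "sc_lunit B sb ub"
  shows "sc_lunit (A \<times> B) (scT sa sb) (\<lambda>(p, q). ua p * ub q)"
  unfolding sc_lunit_def
proof (clarify)
  fix k1 k2 p1 p2
  assume m: "k1 \<in> A" "k2 \<in> B" "p1 \<in> A" "p2 \<in> B"
  have "(\<Sum>i\<in>A \<times> B. (case i of (p, q) \<Rightarrow> ua p * ub q) * scT sa sb i (k1, k2) (p1, p2))
     = (\<Sum>(i1,i2)\<in>A \<times> B. (ua i1 * sa i1 k1 p1) * (ub i2 * sb i2 k2 p2))"
    by (intro sum.cong refl) (auto simp: scT_def)
  also have "\<dots> = (\<Sum>i1\<in>A. ua i1 * sa i1 k1 p1) * (\<Sum>i2\<in>B. ub i2 * sb i2 k2 p2)"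
    by (rule sum_prod_split)
  also have "\<dots> = (if (k1, k2) = (p1, p2) then 1 else 0)"
    using assms m unfolding sc_lunit_def by simp
  finally show "(\<Sum>i\<in>A \<times> B. (case i of (p, q) \<Rightarrow> ua p * ub q) * scT sa sb i (k1, k2) (p1, p2))
     = (if (k1, k2) = (p1, p2) then 1 else 0)" .
qed

lemma scT_runit:
  assumes "sc_runit A sa ua" "sc_runit B sb ub"
  shows "sc_runit (A \<times> B) (scT sa sb) (\<lambda>(p, q). ua p * ub q)"
  unfolding sc_runit_def
proof (clarify)
  fix k1 k2 p1 p2
  assume m: "k1 \<in> A" "k2 \<in> B" "p1 \<in> A" "p2 \<in> B"
  have "(\<Sum>i\<in>A \<times> B. (case i of (p, q) \<Rightarrow> ua p * ub q) * scT sa sb (k1, k2) i (p1, p2))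
     = (\<Sum>(i1,i2)\<in>A \<times> B. (ua i1 * sa k1 i1 p1) * (ub i2 * sb k2 i2 p2))"
    by (intro sum.cong refl) (auto simp: scT_def)
  also have "\<dots> = (\<Sum>i1\<in>A. ua i1 * sa k1 i1 p1) * (\<Sum>i2\<in>B. ub i2 * sb k2 i2 p2)"
    by (rule sum_prod_split)
  also have "\<dots> = (if (k1, k2) = (p1, p2) then 1 else 0)"
    using assms m unfolding sc_runit_def by simp
  finally show "(\<Sum>i\<in>A \<times> B. (case i of (p, q) \<Rightarrow> ua p * ub q) * scT sa sb (k1, k2) i (p1, p2))
     = (if (k1, k2) = (p1, p2) then 1 else 0)" .
qed

lemma mul2_as_mul1: "mul2 B sc = mul1 (B \<times> B) (scT sc sc)"
  by (intro ext) (simp add: mul2_def mul1_def scT_def ext0_def split_def ac_simps)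

lemma mul3_as_mul1: "mul3 B sc = mul1 (B \<times> B \<times> B) (scT sc (scT sc sc))"
  by (intro ext) (simp add: mul3_def mul1_def scT_def ext0_def split_def ac_simps)

lemma one2_eq: "one2 un = (\<lambda>(p, q). un p * un q)" by (simp add: one2_def)
lemma one3_eq: "one3 (un :: 'b \<Rightarrow> 'k::comm_semiring_1) = (\<lambda>(p, q). un p * (\<lambda>(p, q). un p * un q) q)"
  by (auto simp: one3_def ac_simps fun_eq_iff)

lemma V2_eq: "V2 B = V1 (B \<times> B)" by (simp add: V2_def V1_def)
lemma V3_eq: "V3 B = V1 (B \<times> B \<times> B)" by (simp add: V3_def V1_def)




definition sc_basic :: "'b set \<Rightarrow> ('b \<Rightarrow> 'b \<Rightarrow> 'b \<Rightarrow> 'k::field) \<Rightarrow> ('b \<Rightarrow> 'b \<Rightarrow> bool) \<Rightarrow>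
    ('b \<Rightarrow> 'b \<Rightarrow> 'b) \<Rightarrow> ('b \<Rightarrow> 'b \<Rightarrow> 'k) \<Rightarrow> bool" where
  "sc_basic B sc P pre g \<longleftrightarrow> (\<forall>k\<in>B. \<forall>p\<in>B. \<forall>w.
     (\<Sum>I\<in>B. w I * sc I k p) = (if P k p then w (pre k p) * g k p else 0))"

lemma sc_basic_T_aux:
  assumes "sc_basic A sa Pa prea ga" "sc_basic B sb Pb preb gb"
    and m: "k1 \<in> A" "k2 \<in> B" "p1 \<in> A" "p2 \<in> B"
  shows "(\<Sum>I\<in>A \<times> B. w I * scT sa sb I (k1, k2) (p1, p2)) =
     (if Pa k1 p1 \<and> Pb k2 p2 then w (prea k1 p1, preb k2 p2) * (ga k1 p1 * gb k2 p2) else 0)"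
proof -
  have "(\<Sum>I\<in>A \<times> B. w I * scT sa sb I (k1, k2) (p1, p2))
     = (\<Sum>i1\<in>A. \<Sum>i2\<in>B. w (i1, i2) * (sa i1 k1 p1 * sb i2 k2 p2))"
    by (subst sum.cartesian_product) (auto simp: scT_def intro!: sum.cong)
  also have "\<dots> = (\<Sum>i1\<in>A. sa i1 k1 p1 * (\<Sum>i2\<in>B. w (i1, i2) * sb i2 k2 p2))"
    by (simp add: sum_distrib_left ac_simps)
  also have "\<dots> = (\<Sum>i1\<in>A. sa i1 k1 p1 * (if Pb k2 p2 then w (i1, preb k2 p2) * gb k2 p2 else 0))"
    using assms(2) m unfolding sc_basic_def by simp
  also have "\<dots> = (if Pb k2 p2 then (\<Sum>i1\<in>A. (\<lambda>i1. w (i1, preb k2 p2)) i1 * sa i1 k1 p1) * gb k2 p2 else 0)"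
    by (simp add: sum_distrib_right sum_distrib_left ac_simps)
  also have "\<dots> = (if Pa k1 p1 \<and> Pb k2 p2 then w (prea k1 p1, preb k2 p2) * (ga k1 p1 * gb k2 p2) else 0)"
  proof -
    have H0: "\<forall>w. (\<Sum>I\<in>A. w I * sa I k1 p1) = (if Pa k1 p1 then w (prea k1 p1) * ga k1 p1 else 0)"
      using assms(1) m unfolding sc_basic_def by blast
    show ?thesis using spec[OF H0, of "\<lambda>i1. w (i1, preb k2 p2)"] by simp
  qed
  finally show ?thesis .
qed

lemma sc_basic_T:
  assumes "sc_basic A sa Pa prea ga" "sc_basic B sb Pb preb gb"
  shows "sc_basic (A \<times> B) (scT sa sb) (\<lambda>(k1, k2) (p1, p2). Pa k1 p1 \<and> Pb k2 p2)
     (\<lambda>(k1, k2) (p1, p2). (prea k1 p1, preb k2 p2)) (\<lambda>(k1, k2) (p1, p2). ga k1 p1 * gb k2 p2)"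
  unfolding sc_basic_def by (clarsimp simp: sc_basic_T_aux[OF assms])

lemma mul1_via_basic:
  assumes "sc_basic B sc P pre g" "p \<in> B"
  shows "mul1 B sc u v p = (\<Sum>K\<in>B. v K * (if P K p then u (pre K p) * g K p else 0))"
proof -
  have "mul1 B sc u v p = (\<Sum>I\<in>B. \<Sum>K\<in>B. v K * (u I * sc I K p))"
    using assms(2) by (simp add: mul1_def ext0_def ac_simps)
  also have "\<dots> = (\<Sum>K\<in>B. v K * (\<Sum>I\<in>B. u I * sc I K p))"
    by (subst sum.swap) (simp add: sum_distrib_left)
  also have "\<dots> = (\<Sum>K\<in>B. v K * (if P K p then u (pre K p) * g K p else 0))"
    using assms unfolding sc_basic_def by (intro sum.cong refl) auto
  finally show ?thesis .
qed

lemma mul4_as_mul1: "mul4 B sc = mul1 (B \<times> B \<times> B \<times> B) (scT sc (scT sc (scT sc sc)))"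
  by (intro ext) (simp add: mul4_def mul1_def scT_def ext0_def split_def ac_simps)

lemma sum_support_reindex:
  assumes "finite S" "inj_on \<phi> A" "\<phi> ` A \<subseteq> S" "\<And>s. s \<in> S \<Longrightarrow> s \<notin> \<phi> ` A \<Longrightarrow> h s = 0"
  shows "sum h S = sum (h \<circ> \<phi>) A"
proof -
  have "sum h S = sum h (\<phi> ` A)"
    using assms by (intro sum.mono_neutral_right) auto
  also have "\<dots> = sum (h \<circ> \<phi>) A" using assms(2) by (rule sum.reindex)
  finally show ?thesis .
qed

locale qa =
  fixes G :: "'g monoid" and X :: "'x monoid"
    and act :: "'g \<Rightarrow> 'x \<Rightarrow> 'x" and d :: "'x \<Rightarrow> 'g"
    and \<omega> :: "'x \<Rightarrow> 'x \<Rightarrow> 'x \<Rightarrow> 'k::field"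
    and \<gamma> :: "'g \<Rightarrow> 'g \<Rightarrow> 'x \<Rightarrow> 'k" and \<mu> :: "'g \<Rightarrow> 'x \<Rightarrow> 'x \<Rightarrow> 'k"
    and c :: "'x \<Rightarrow> 'x \<Rightarrow> 'k"
  assumes fcm: "finite_crossed_module G X act d"
    and coc: "quasi_abelian_3_cocycle G X act d \<omega> \<gamma> \<mu> c"
    and nrm: "normalized_cocycle G X \<omega> \<gamma> \<mu> c"
begin

sublocale Gp: group G using fcm by (simp add: finite_crossed_module_def)
sublocale Xp: group X using fcm by (simp add: finite_crossed_module_def)
sublocale dh: group_hom X G d
  using fcm by (simp add: finite_crossed_module_def group_hom_def group_hom_axioms_def)

lemma finG: "finite (carrier G)" and finX: "finite (carrier X)"
  using fcm by (auto simp: finite_crossed_module_def)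

lemma act_closed [simp]: "g \<in> carrier G \<Longrightarrow> x \<in> carrier X \<Longrightarrow> act g x \<in> carrier X"
  using fcm by (auto simp: finite_crossed_module_def)
lemma act_one [simp]: "x \<in> carrier X \<Longrightarrow> act \<one>\<^bsub>G\<^esub> x = x"
  using fcm by (auto simp: finite_crossed_module_def)
lemma act_mult: "g \<in> carrier G \<Longrightarrow> h \<in> carrier G \<Longrightarrow> x \<in> carrier X \<Longrightarrow>
   act (g \<otimes>\<^bsub>G\<^esub> h) x = act g (act h x)"
  using fcm by (auto simp: finite_crossed_module_def)
lemma act_hom [simp]: "g \<in> carrier G \<Longrightarrow> x \<in> carrier X \<Longrightarrow> y \<in> carrier X \<Longrightarrow>
   act g (x \<otimes>\<^bsub>X\<^esub> y) = act g x \<otimes>\<^bsub>X\<^esub> act g y"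
  using fcm by (auto simp: finite_crossed_module_def)
lemma d_act: "x \<in> carrier X \<Longrightarrow> y \<in> carrier X \<Longrightarrow>
   act (d x) y = x \<otimes>\<^bsub>X\<^esub> y \<otimes>\<^bsub>X\<^esub> inv\<^bsub>X\<^esub> x"
  using fcm by (auto simp: finite_crossed_module_def)
lemma d_equiv: "g \<in> carrier G \<Longrightarrow> x \<in> carrier X \<Longrightarrow>
   d (act g x) = g \<otimes>\<^bsub>G\<^esub> d x \<otimes>\<^bsub>G\<^esub> inv\<^bsub>G\<^esub> g"
  using fcm by (auto simp: finite_crossed_module_def)

lemma act_oneX [simp]: "g \<in> carrier G \<Longrightarrow> act g \<one>\<^bsub>X\<^esub> = \<one>\<^bsub>X\<^esub>"
proof -
  assume g: "g \<in> carrier G"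
  have "act g \<one>\<^bsub>X\<^esub> \<otimes>\<^bsub>X\<^esub> act g \<one>\<^bsub>X\<^esub> = act g \<one>\<^bsub>X\<^esub> \<otimes>\<^bsub>X\<^esub> \<one>\<^bsub>X\<^esub>"
    using act_hom[OF g, of "\<one>\<^bsub>X\<^esub>" "\<one>\<^bsub>X\<^esub>"] g by simp
  thus ?thesis using g by (metis Xp.Units_eq Xp.Units_l_cancel act_closed Xp.one_closed)
qed

lemma act_inv [simp]: "g \<in> carrier G \<Longrightarrow> x \<in> carrier X \<Longrightarrow> act g (inv\<^bsub>X\<^esub> x) = inv\<^bsub>X\<^esub> (act g x)"
proof -
  assume g: "g \<in> carrier G" and x: "x \<in> carrier X"
  have "act g (inv\<^bsub>X\<^esub> x) \<otimes>\<^bsub>X\<^esub> act g x = \<one>\<^bsub>X\<^esub>"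
    using act_hom[OF g, of "inv\<^bsub>X\<^esub> x" x] g x by simp
  thus ?thesis using g x by (metis Xp.inv_equality act_closed Xp.inv_closed)
qed

lemma act_inv_act [simp]: "g \<in> carrier G \<Longrightarrow> x \<in> carrier X \<Longrightarrow> act (inv\<^bsub>G\<^esub> g) (act g x) = x"
  by (simp add: act_mult[symmetric])
lemma act_act_inv [simp]: "g \<in> carrier G \<Longrightarrow> x \<in> carrier X \<Longrightarrow> act g (act (inv\<^bsub>G\<^esub> g) x) = x"
  by (simp add: act_mult[symmetric])

lemma act_eq_iff: "g \<in> carrier G \<Longrightarrow> x \<in> carrier X \<Longrightarrow> y \<in> carrier X \<Longrightarrow>
    (act g x = y) \<longleftrightarrow> (x = act (inv\<^bsub>G\<^esub> g) y)"
  by auto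

lemma d_closed [simp]: "x \<in> carrier X \<Longrightarrow> d x \<in> carrier G" by simp

lemma coc_nz: 
  "x \<in> carrier X \<Longrightarrow> y \<in> carrier X \<Longrightarrow> z \<in> carrier X \<Longrightarrow> \<omega> x y z \<noteq> 0"
  "g \<in> carrier G \<Longrightarrow> h \<in> carrier G \<Longrightarrow> x \<in> carrier X \<Longrightarrow> \<gamma> g h x \<noteq> 0"
  "g \<in> carrier G \<Longrightarrow> x \<in> carrier X \<Longrightarrow> y \<in> carrier X \<Longrightarrow> \<mu> g x y \<noteq> 0"
  "x \<in> carrier X \<Longrightarrow> y \<in> carrier X \<Longrightarrow> c x y \<noteq> 0"
  using coc by (auto simp: quasi_abelian_3_cocycle_def)

lemma cocA: "w \<in> carrier X \<Longrightarrow> x \<in> carrier X \<Longrightarrow> y \<in> carrier X \<Longrightarrow> z \<in> carrier X \<Longrightarrow>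
   \<omega> x y z * \<omega> w (x \<otimes>\<^bsub>X\<^esub> y) z * \<omega> w x y = \<omega> w x (y \<otimes>\<^bsub>X\<^esub> z) * \<omega> (w \<otimes>\<^bsub>X\<^esub> x) y z"
  using coc unfolding quasi_abelian_3_cocycle_def by auto
lemma cocB: "g \<in> carrier G \<Longrightarrow> h \<in> carrier G \<Longrightarrow> k \<in> carrier G \<Longrightarrow> x \<in> carrier X \<Longrightarrow>
   \<gamma> h k x * \<gamma> g (h \<otimes>\<^bsub>G\<^esub> k) x = \<gamma> (g \<otimes>\<^bsub>G\<^esub> h) k x * \<gamma> g h (act k x)"
  using coc unfolding quasi_abelian_3_cocycle_def by auto
lemma cocC: "g \<in> carrier G \<Longrightarrow> x \<in> carrier X \<Longrightarrow> y \<in> carrier X \<Longrightarrow> z \<in> carrier X \<Longrightarrow>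
   (\<mu> g y z * \<mu> g x (y \<otimes>\<^bsub>X\<^esub> z)) / (\<mu> g (x \<otimes>\<^bsub>X\<^esub> y) z * \<mu> g x y)
        = \<omega> (act g x) (act g y) (act g z) / \<omega> x y z"
  using coc unfolding quasi_abelian_3_cocycle_def by auto
lemma cocD: "g \<in> carrier G \<Longrightarrow> h \<in> carrier G \<Longrightarrow> x \<in> carrier X \<Longrightarrow> y \<in> carrier X \<Longrightarrow>
   (\<gamma> g h x * \<gamma> g h y) / \<gamma> g h (x \<otimes>\<^bsub>X\<^esub> y)
        = (\<mu> g (act h x) (act h y) * \<mu> h x y) / \<mu> (g \<otimes>\<^bsub>G\<^esub> h) x y"
  using coc unfolding quasi_abelian_3_cocycle_def by auto
lemma cocE: "g \<in> carrier G \<Longrightarrow> x \<in> carrier X \<Longrightarrow> y \<in> carrier X \<Longrightarrow>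
   c (act g x) (act g y) / c x y
        = (\<mu> g (x \<otimes>\<^bsub>X\<^esub> y \<otimes>\<^bsub>X\<^esub> inv\<^bsub>X\<^esub> x) x / \<mu> g x y) *
          (\<gamma> (g \<otimes>\<^bsub>G\<^esub> d x \<otimes>\<^bsub>G\<^esub> inv\<^bsub>G\<^esub> g) g y / \<gamma> g (d x) y)"
  using coc unfolding quasi_abelian_3_cocycle_def by auto
lemma cocF: "x \<in> carrier X \<Longrightarrow> y \<in> carrier X \<Longrightarrow> z \<in> carrier X \<Longrightarrow>
   c (x \<otimes>\<^bsub>X\<^esub> y) z
        = (\<omega> x y z * \<omega> ((x \<otimes>\<^bsub>X\<^esub> y) \<otimes>\<^bsub>X\<^esub> z \<otimes>\<^bsub>X\<^esub> inv\<^bsub>X\<^esub> (x \<otimes>\<^bsub>X\<^esub> y)) x y)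
          / (\<omega> x (y \<otimes>\<^bsub>X\<^esub> z \<otimes>\<^bsub>X\<^esub> inv\<^bsub>X\<^esub> y) y * \<gamma> (d x) (d y) z)
          * c x (y \<otimes>\<^bsub>X\<^esub> z \<otimes>\<^bsub>X\<^esub> inv\<^bsub>X\<^esub> y) * c y z"
  using coc unfolding quasi_abelian_3_cocycle_def by auto
lemma cocG: "x \<in> carrier X \<Longrightarrow> y \<in> carrier X \<Longrightarrow> z \<in> carrier X \<Longrightarrow>
   c x (y \<otimes>\<^bsub>X\<^esub> z)
        = \<omega> (x \<otimes>\<^bsub>X\<^esub> y \<otimes>\<^bsub>X\<^esub> inv\<^bsub>X\<^esub> x) x z
          / (\<omega> x y z * \<omega> (x \<otimes>\<^bsub>X\<^esub> y \<otimes>\<^bsub>X\<^esub> inv\<^bsub>X\<^esub> x)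
                              (x \<otimes>\<^bsub>X\<^esub> z \<otimes>\<^bsub>X\<^esub> inv\<^bsub>X\<^esub> x) x
             * \<mu> (d x) y z)
          * c x y * c x z"
  using coc unfolding quasi_abelian_3_cocycle_def by auto

lemma nrm_simps [simp]:
  "y \<in> carrier X \<Longrightarrow> z \<in> carrier X \<Longrightarrow> \<omega> \<one>\<^bsub>X\<^esub> y z = 1"
  "x \<in> carrier X \<Longrightarrow> z \<in> carrier X \<Longrightarrow> \<omega> x \<one>\<^bsub>X\<^esub> z = 1"
  "x \<in> carrier X \<Longrightarrow> y \<in> carrier X \<Longrightarrow> \<omega> x y \<one>\<^bsub>X\<^esub> = 1"
  "h \<in> carrier G \<Longrightarrow> x \<in> carrier X \<Longrightarrow> \<gamma> \<one>\<^bsub>G\<^esub> h x = 1"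
  "g \<in> carrier G \<Longrightarrow> x \<in> carrier X \<Longrightarrow> \<gamma> g \<one>\<^bsub>G\<^esub> x = 1"
  "g \<in> carrier G \<Longrightarrow> h \<in> carrier G \<Longrightarrow> \<gamma> g h \<one>\<^bsub>X\<^esub> = 1"
  "x \<in> carrier X \<Longrightarrow> y \<in> carrier X \<Longrightarrow> \<mu> \<one>\<^bsub>G\<^esub> x y = 1"
  "g \<in> carrier G \<Longrightarrow> y \<in> carrier X \<Longrightarrow> \<mu> g \<one>\<^bsub>X\<^esub> y = 1"
  "g \<in> carrier G \<Longrightarrow> x \<in> carrier X \<Longrightarrow> \<mu> g x \<one>\<^bsub>X\<^esub> = 1"
  "y \<in> carrier X \<Longrightarrow> c \<one>\<^bsub>X\<^esub> y = 1"
  "x \<in> carrier X \<Longrightarrow> c x \<one>\<^bsub>X\<^esub> = 1"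
  using nrm Xp.one_closed Gp.one_closed unfolding normalized_cocycle_def by metis+

abbreviation "BB \<equiv> H_basis G X"
abbreviation "sc \<equiv> H_sc G X act \<gamma>"

lemma BB_eq: "BB = carrier X \<times> carrier G" by (simp add: H_basis_def)
lemma finBB: "finite BB" using finG finX by (simp add: BB_eq)

lemma basic1:
  assumes "y \<in> carrier X" "h \<in> carrier G" "z \<in> carrier X" "m \<in> carrier G"
  shows "(\<Sum>I\<in>BB. (w I :: 'k) * sc I (y, h) (z, m)) =
    (if y = z then w (act h z, m \<otimes>\<^bsub>G\<^esub> inv\<^bsub>G\<^esub> h) * inverse (\<gamma> (m \<otimes>\<^bsub>G\<^esub> inv\<^bsub>G\<^esub> h) h z) else 0)"
proof -
  have "(\<Sum>I\<in>BB. w I * sc I (y, h) (z, m)) = (\<Sum>I\<in>BB. if I = (act h z, m \<otimes>\<^bsub>G\<^esub> inv\<^bsub>G\<^esub> h) then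
     (if y = z then w (act h z, m \<otimes>\<^bsub>G\<^esub> inv\<^bsub>G\<^esub> h) * inverse (\<gamma> (m \<otimes>\<^bsub>G\<^esub> inv\<^bsub>G\<^esub> h) h z) else 0) else 0)"
  proof (intro sum.cong refl)
    fix I assume "I \<in> BB"
    then obtain x g where I: "I = (x, g)" "x \<in> carrier X" "g \<in> carrier G" by (auto simp: BB_eq)
    have "(m = g \<otimes>\<^bsub>G\<^esub> h) = (g = m \<otimes>\<^bsub>G\<^esub> inv\<^bsub>G\<^esub> h)"
      using I assms by (metis Gp.inv_solve_right)
    thus "w I * sc I (y, h) (z, m) = (if I = (act h z, m \<otimes>\<^bsub>G\<^esub> inv\<^bsub>G\<^esub> h) then
     (if y = z then w (act h z, m \<otimes>\<^bsub>G\<^esub> inv\<^bsub>G\<^esub> h) * inverse (\<gamma> (m \<otimes>\<^bsub>G\<^esub> inv\<^bsub>G\<^esub> h) h z) else 0) else 0)"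
      using I by (auto simp: H_sc_def)
  qed
  also have "\<dots> = (if y = z then w (act h z, m \<otimes>\<^bsub>G\<^esub> inv\<^bsub>G\<^esub> h) * inverse (\<gamma> (m \<otimes>\<^bsub>G\<^esub> inv\<^bsub>G\<^esub> h) h z) else 0)"
    using assms finBB by (simp add: BB_eq)
  finally show ?thesis .
qed

definition pre1 :: "'x \<times> 'g \<Rightarrow> 'x \<times> 'g \<Rightarrow> 'x \<times> 'g" where
  "pre1 k p = (act (snd k) (fst p), snd p \<otimes>\<^bsub>G\<^esub> inv\<^bsub>G\<^esub> snd k)"
definition gk1 :: "'x \<times> 'g \<Rightarrow> 'x \<times> 'g \<Rightarrow> 'k" where
  "gk1 k p = inverse (\<gamma> (snd p \<otimes>\<^bsub>G\<^esub> inv\<^bsub>G\<^esub> snd k) (snd k) (fst p))"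

lemma sc_basic1: "sc_basic BB sc (\<lambda>k p. fst k = fst p) pre1 gk1"
  unfolding sc_basic_def
proof (clarify)
  fix y h z m w assume "(y, h) \<in> BB" "(z, m) \<in> BB"
  hence "y \<in> carrier X" "h \<in> carrier G" "z \<in> carrier X" "m \<in> carrier G" by (auto simp: BB_eq)
  thus "(\<Sum>I\<in>BB. w I * sc I (y, h) (z, m)) =
       (if fst (y, h) = fst (z, m) then w (pre1 (y, h) (z, m)) * gk1 (y, h) (z, m) else 0)"
    by (simp add: basic1 pre1_def gk1_def)
qed

abbreviation "GG \<equiv> carrier G"
abbreviation "XX \<equiv> carrier X"

lemma mul1_closed:
  assumes "z \<in> XX" "m \<in> GG"
  shows "mul1 BB sc u v (z, m) = (\<Sum>h\<in>GG. v (z, h) *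
     (u (act h z, m \<otimes>\<^bsub>G\<^esub> inv\<^bsub>G\<^esub> h) * inverse (\<gamma> (m \<otimes>\<^bsub>G\<^esub> inv\<^bsub>G\<^esub> h) h z)))"
proof -
  have "mul1 BB sc u v (z, m) = (\<Sum>K\<in>BB. v K * (if fst K = fst (z, m) then u (pre1 K (z, m)) * gk1 K (z, m) else 0))"
    using assms by (intro mul1_via_basic[OF sc_basic1]) (simp add: BB_eq)
  also have "\<dots> = (\<Sum>h\<in>GG. (\<lambda>K. v K * (if fst K = fst (z, m) then u (pre1 K (z, m)) * gk1 K (z, m) else 0)) (z, h))"
    by (rule sum_support_reindex[where \<phi>="\<lambda>h. (z, h)", unfolded comp_def]) (use assms finBB in \<open>auto simp: BB_eq inj_on_def\<close>)
  finally show ?thesis by (simp add: pre1_def gk1_def)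
qed

lemma mul2_closed:
  assumes "z1 \<in> XX" "m1 \<in> GG" "z2 \<in> XX" "m2 \<in> GG"
  shows "mul2 BB sc u v ((z1, m1), (z2, m2)) = (\<Sum>(h1, h2)\<in>GG \<times> GG. v ((z1, h1), (z2, h2)) *
     (u ((act h1 z1, m1 \<otimes>\<^bsub>G\<^esub> inv\<^bsub>G\<^esub> h1), (act h2 z2, m2 \<otimes>\<^bsub>G\<^esub> inv\<^bsub>G\<^esub> h2)) *
      (inverse (\<gamma> (m1 \<otimes>\<^bsub>G\<^esub> inv\<^bsub>G\<^esub> h1) h1 z1) * inverse (\<gamma> (m2 \<otimes>\<^bsub>G\<^esub> inv\<^bsub>G\<^esub> h2) h2 z2))))"
proof -
  note b = sc_basic_T[OF sc_basic1 sc_basic1]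
  let ?P = "(\<lambda>(k1, k2) (p1, p2). fst k1 = fst p1 \<and> fst k2 = fst p2)"
  let ?pre = "(\<lambda>(k1, k2) (p1, p2). (pre1 k1 p1, pre1 k2 p2))"
  let ?g = "(\<lambda>(k1, k2) (p1, p2). gk1 k1 p1 * gk1 k2 p2)"
  let ?p = "((z1, m1), (z2, m2))"
  have "mul2 BB sc u v ?p = (\<Sum>K\<in>BB \<times> BB. v K * (if ?P K ?p then u (?pre K ?p) * ?g K ?p else 0))"
    unfolding mul2_as_mul1 using assms by (intro mul1_via_basic[OF b]) (simp add: BB_eq)
  also have "\<dots> = (\<Sum>hh\<in>GG \<times> GG. (\<lambda>K. v K * (if ?P K ?p then u (?pre K ?p) * ?g K ?p else 0)) ((\<lambda>(h1, h2). ((z1, h1), (z2, h2))) hh))"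
    by (rule sum_support_reindex[where \<phi>="\<lambda>(h1, h2). ((z1, h1), (z2, h2))", unfolded comp_def])
      (use assms finBB in \<open>auto simp: BB_eq inj_on_def\<close>)
  finally show ?thesis by (simp add: pre1_def gk1_def split_def)
qed

lemma mul3_closed:
  assumes "z1 \<in> XX" "m1 \<in> GG" "z2 \<in> XX" "m2 \<in> GG" "z3 \<in> XX" "m3 \<in> GG"
  shows "mul3 BB sc u v ((z1, m1), (z2, m2), (z3, m3)) = (\<Sum>(h1, h2, h3)\<in>GG \<times> GG \<times> GG. v ((z1, h1), (z2, h2), (z3, h3)) *
     (u ((act h1 z1, m1 \<otimes>\<^bsub>G\<^esub> inv\<^bsub>G\<^esub> h1), (act h2 z2, m2 \<otimes>\<^bsub>G\<^esub> inv\<^bsub>G\<^esub> h2), (act h3 z3, m3 \<otimes>\<^bsub>G\<^esub> inv\<^bsub>G\<^esub> h3)) *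
      (inverse (\<gamma> (m1 \<otimes>\<^bsub>G\<^esub> inv\<^bsub>G\<^esub> h1) h1 z1) * (inverse (\<gamma> (m2 \<otimes>\<^bsub>G\<^esub> inv\<^bsub>G\<^esub> h2) h2 z2) *
       inverse (\<gamma> (m3 \<otimes>\<^bsub>G\<^esub> inv\<^bsub>G\<^esub> h3) h3 z3)))))"
proof -
  note b = sc_basic_T[OF sc_basic1 sc_basic_T[OF sc_basic1 sc_basic1]]
  let ?p = "((z1, m1), (z2, m2), (z3, m3))"
  let ?phi = "\<lambda>(h1, h2, h3). ((z1, h1), (z2, h2), (z3, h3))"
  show ?thesis
    unfolding mul3_as_mul1
    apply (subst mul1_via_basic[OF b])
     apply (use assms in \<open>simp add: BB_eq\<close>)
    apply (subst sum_support_reindex[where \<phi>="?phi" and A="GG \<times> GG \<times> GG"])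
    using assms finBB by (auto simp: BB_eq inj_on_def pre1_def gk1_def split_def image_iff)
qed

lemma mul4_closed:
  assumes "z1 \<in> XX" "m1 \<in> GG" "z2 \<in> XX" "m2 \<in> GG" "z3 \<in> XX" "m3 \<in> GG" "z4 \<in> XX" "m4 \<in> GG"
  shows "mul4 BB sc u v ((z1, m1), (z2, m2), (z3, m3), (z4, m4)) = (\<Sum>(h1, h2, h3, h4)\<in>GG \<times> GG \<times> GG \<times> GG. v ((z1, h1), (z2, h2), (z3, h3), (z4, h4)) *
     (u ((act h1 z1, m1 \<otimes>\<^bsub>G\<^esub> inv\<^bsub>G\<^esub> h1), (act h2 z2, m2 \<otimes>\<^bsub>G\<^esub> inv\<^bsub>G\<^esub> h2), (act h3 z3, m3 \<otimes>\<^bsub>G\<^esub> inv\<^bsub>G\<^esub> h3), (act h4 z4, m4 \<otimes>\<^bsub>G\<^esub> inv\<^bsub>G\<^esub> h4)) *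
      (inverse (\<gamma> (m1 \<otimes>\<^bsub>G\<^esub> inv\<^bsub>G\<^esub> h1) h1 z1) * (inverse (\<gamma> (m2 \<otimes>\<^bsub>G\<^esub> inv\<^bsub>G\<^esub> h2) h2 z2) *
       (inverse (\<gamma> (m3 \<otimes>\<^bsub>G\<^esub> inv\<^bsub>G\<^esub> h3) h3 z3) * inverse (\<gamma> (m4 \<otimes>\<^bsub>G\<^esub> inv\<^bsub>G\<^esub> h4) h4 z4))))))"
proof -
  note b = sc_basic_T[OF sc_basic1 sc_basic_T[OF sc_basic1 sc_basic_T[OF sc_basic1 sc_basic1]]]
  let ?phi = "\<lambda>(h1, h2, h3, h4). ((z1, h1), (z2, h2), (z3, h3), (z4, h4))"
  show ?thesis
    unfolding mul4_as_mul1
    apply (subst mul1_via_basic[OF b])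
     apply (use assms in \<open>simp add: BB_eq\<close>)
    apply (subst sum_support_reindex[where \<phi>="?phi" and A="GG \<times> GG \<times> GG \<times> GG"])
    using assms finBB by (auto simp: BB_eq inj_on_def pre1_def gk1_def split_def image_iff)
qed

end




lemma sum_single:
  assumes "finite A" "t \<in> A" "\<And>i. i \<in> A \<Longrightarrow> i \<noteq> t \<Longrightarrow> f i = 0"
  shows "sum f A = f t"
proof -
  have "sum f A = f t + sum f (A - {t})" using assms by (simp add: sum.remove)
  also have "sum f (A - {t}) = 0" using assms by (intro sum.neutral) auto
  finally show ?thesis by simp
qed

context qa
begin

definition sec1 :: "('x \<Rightarrow> 'k) \<Rightarrow> ('x \<Rightarrow> 'g) \<Rightarrow> 'x \<times> 'g \<Rightarrow> 'k" where
  "sec1 cf f = ext0 BB (\<lambda>(x, g). if g = f x then cf x else 0)"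
definition sec2 :: "('x \<times> 'x \<Rightarrow> 'k) \<Rightarrow> ('x \<times> 'x \<Rightarrow> 'g) \<Rightarrow> ('x \<times> 'x \<Rightarrow> 'g) \<Rightarrow> ('x \<times> 'g) \<times> ('x \<times> 'g) \<Rightarrow> 'k" where
  "sec2 cf f1 f2 = ext0 (BB \<times> BB) (\<lambda>((x, g), (y, h)). if g = f1 (x, y) \<and> h = f2 (x, y) then cf (x, y) else 0)"
definition sec3 :: "('x \<times> 'x \<times> 'x \<Rightarrow> 'k) \<Rightarrow> ('x \<times> 'x \<times> 'x \<Rightarrow> 'g) \<Rightarrow> ('x \<times> 'x \<times> 'x \<Rightarrow> 'g) \<Rightarrow> ('x \<times> 'x \<times> 'x \<Rightarrow> 'g) \<Rightarrow>
    ('x \<times> 'g) \<times> ('x \<times> 'g) \<times> ('x \<times> 'g) \<Rightarrow> 'k" where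
  "sec3 cf f1 f2 f3 = ext0 (BB \<times> BB \<times> BB) (\<lambda>((x, g), (y, h), (z, k)).
     if g = f1 (x, y, z) \<and> h = f2 (x, y, z) \<and> k = f3 (x, y, z) then cf (x, y, z) else 0)"
definition sec4 :: "('x \<times> 'x \<times> 'x \<times> 'x \<Rightarrow> 'k) \<Rightarrow> ('x \<times> 'g) \<times> ('x \<times> 'g) \<times> ('x \<times> 'g) \<times> ('x \<times> 'g) \<Rightarrow> 'k" where
  "sec4 cf = ext0 (BB \<times> BB \<times> BB \<times> BB) (\<lambda>((x, g), (y, h), (z, k), (w, l)).
     if g = \<one>\<^bsub>G\<^esub> \<and> h = \<one>\<^bsub>G\<^esub> \<and> k = \<one>\<^bsub>G\<^esub> \<and> l = \<one>\<^bsub>G\<^esub> then cf (x, y, z, w) else 0)"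

lemma sec1_apply: "sec1 cf f (x, g) = (if x \<in> XX \<and> g \<in> GG \<and> g = f x then cf x else 0)"
  by (auto simp: sec1_def ext0_def BB_eq)
lemma sec2_apply: "sec2 cf f1 f2 ((x, g), (y, h)) =
   (if x \<in> XX \<and> g \<in> GG \<and> y \<in> XX \<and> h \<in> GG \<and> g = f1 (x, y) \<and> h = f2 (x, y) then cf (x, y) else 0)"
  by (auto simp: sec2_def ext0_def BB_eq)
lemma sec3_apply: "sec3 cf f1 f2 f3 ((x, g), (y, h), (z, k)) =
   (if x \<in> XX \<and> g \<in> GG \<and> y \<in> XX \<and> h \<in> GG \<and> z \<in> XX \<and> k \<in> GG \<and>
       g = f1 (x, y, z) \<and> h = f2 (x, y, z) \<and> k = f3 (x, y, z) then cf (x, y, z) else 0)"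
  by (auto simp: sec3_def ext0_def BB_eq)
lemma sec4_apply: "sec4 cf ((x, g), (y, h), (z, k), (w, l)) =
   (if x \<in> XX \<and> g \<in> GG \<and> y \<in> XX \<and> h \<in> GG \<and> z \<in> XX \<and> k \<in> GG \<and> w \<in> XX \<and> l \<in> GG \<and>
       g = \<one>\<^bsub>G\<^esub> \<and> h = \<one>\<^bsub>G\<^esub> \<and> k = \<one>\<^bsub>G\<^esub> \<and> l = \<one>\<^bsub>G\<^esub> then cf (x, y, z, w) else 0)"
  by (auto simp: sec4_def ext0_def BB_eq)

lemma mul1_sec_right:
  assumes "z \<in> XX" "m \<in> GG" "f z = k" "k \<in> GG"
  shows "mul1 BB sc W (sec1 df f) (z, m) = df z * (W (act k z, m \<otimes>\<^bsub>G\<^esub> inv\<^bsub>G\<^esub> k) *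
      inverse (\<gamma> (m \<otimes>\<^bsub>G\<^esub> inv\<^bsub>G\<^esub> k) k z))"
  unfolding mul1_closed[OF assms(1,2)]
  by (subst sum_single[where t=k]) (use assms finG in \<open>auto simp: sec1_apply split: if_splits\<close>)

lemma mul2_sec_right:
  assumes "z1 \<in> XX" "m1 \<in> GG" "z2 \<in> XX" "m2 \<in> GG" "f1 (z1, z2) = k1" "k1 \<in> GG" "f2 (z1, z2) = k2" "k2 \<in> GG"
  shows "mul2 BB sc W (sec2 df f1 f2) ((z1, m1), (z2, m2)) = df (z1, z2) *
      (W ((act k1 z1, m1 \<otimes>\<^bsub>G\<^esub> inv\<^bsub>G\<^esub> k1), (act k2 z2, m2 \<otimes>\<^bsub>G\<^esub> inv\<^bsub>G\<^esub> k2)) *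
      (inverse (\<gamma> (m1 \<otimes>\<^bsub>G\<^esub> inv\<^bsub>G\<^esub> k1) k1 z1) * inverse (\<gamma> (m2 \<otimes>\<^bsub>G\<^esub> inv\<^bsub>G\<^esub> k2) k2 z2)))"
  unfolding mul2_closed[OF assms(1-4)]
  by (subst sum_single[where t="(k1, k2)"]) (use assms finG in \<open>auto simp: sec2_apply split: if_splits\<close>)

lemma mul3_sec_right:
  assumes "z1 \<in> XX" "m1 \<in> GG" "z2 \<in> XX" "m2 \<in> GG" "z3 \<in> XX" "m3 \<in> GG"
    "f1 (z1, z2, z3) = k1" "k1 \<in> GG" "f2 (z1, z2, z3) = k2" "k2 \<in> GG" "f3 (z1, z2, z3) = k3" "k3 \<in> GG"
  shows "mul3 BB sc W (sec3 df f1 f2 f3) ((z1, m1), (z2, m2), (z3, m3)) = df (z1, z2, z3) *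
      (W ((act k1 z1, m1 \<otimes>\<^bsub>G\<^esub> inv\<^bsub>G\<^esub> k1), (act k2 z2, m2 \<otimes>\<^bsub>G\<^esub> inv\<^bsub>G\<^esub> k2), (act k3 z3, m3 \<otimes>\<^bsub>G\<^esub> inv\<^bsub>G\<^esub> k3)) *
      (inverse (\<gamma> (m1 \<otimes>\<^bsub>G\<^esub> inv\<^bsub>G\<^esub> k1) k1 z1) * (inverse (\<gamma> (m2 \<otimes>\<^bsub>G\<^esub> inv\<^bsub>G\<^esub> k2) k2 z2) *
       inverse (\<gamma> (m3 \<otimes>\<^bsub>G\<^esub> inv\<^bsub>G\<^esub> k3) k3 z3))))"
  unfolding mul3_closed[OF assms(1-6)]
  by (subst sum_single[where t="(k1, k2, k3)"]) (use assms finG in \<open>auto simp: sec3_apply split: if_splits\<close>)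

lemma mul4_sec_right:
  assumes "z1 \<in> XX" "m1 \<in> GG" "z2 \<in> XX" "m2 \<in> GG" "z3 \<in> XX" "m3 \<in> GG" "z4 \<in> XX" "m4 \<in> GG"
  shows "mul4 BB sc W (sec4 df) ((z1, m1), (z2, m2), (z3, m3), (z4, m4)) = df (z1, z2, z3, z4) *
      W ((z1, m1), (z2, m2), (z3, m3), (z4, m4))"
  unfolding mul4_closed[OF assms(1-8)]
  by (subst sum_single[where t="(\<one>\<^bsub>G\<^esub>, \<one>\<^bsub>G\<^esub>, \<one>\<^bsub>G\<^esub>, \<one>\<^bsub>G\<^esub>)"]) (use assms finG in \<open>auto simp: sec4_apply split: if_splits\<close>)

lemma mul3_E_left:
  assumes "z1 \<in> XX" "m1 \<in> GG" "z2 \<in> XX" "m2 \<in> GG" "z3 \<in> XX" "m3 \<in> GG"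
  shows "mul3 BB sc (sec3 cf (\<lambda>_. \<one>\<^bsub>G\<^esub>) (\<lambda>_. \<one>\<^bsub>G\<^esub>) (\<lambda>_. \<one>\<^bsub>G\<^esub>)) W ((z1, m1), (z2, m2), (z3, m3)) =
      cf (act m1 z1, act m2 z2, act m3 z3) * W ((z1, m1), (z2, m2), (z3, m3))"
  unfolding mul3_closed[OF assms(1-6)]
  by (subst sum_single[where t="(m1, m2, m3)"]) (use assms finG in \<open>auto simp: sec3_apply Gp.inv_solve_right' split: if_splits\<close>)

lemma mul1_out: "P \<notin> BB \<Longrightarrow> mul1 BB sc u v P = 0" by (simp add: mul1_def ext0_def)
lemma mul2_out: "P \<notin> BB \<times> BB \<Longrightarrow> mul2 BB sc u v P = 0" by (auto simp: mul2_def ext0_def)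
lemma mul3_out: "P \<notin> BB \<times> BB \<times> BB \<Longrightarrow> mul3 BB sc u v P = 0" by (auto simp: mul3_def ext0_def)
lemma mul4_out: "P \<notin> BB \<times> BB \<times> BB \<times> BB \<Longrightarrow> mul4 BB sc u v P = 0" by (auto simp: mul4_def ext0_def)

lemma inv_solve_G: "m \<in> GG \<Longrightarrow> k \<in> GG \<Longrightarrow> f \<in> GG \<Longrightarrow> (m \<otimes>\<^bsub>G\<^esub> inv\<^bsub>G\<^esub> k = f) = (m = f \<otimes>\<^bsub>G\<^esub> k)"
  by (rule Gp.inv_solve_right')

lemma sec1_mul:
  assumes "\<And>z. z \<in> XX \<Longrightarrow> f z \<in> GG" "\<And>z. z \<in> XX \<Longrightarrow> h z \<in> GG"
  shows "mul1 BB sc (sec1 cf f) (sec1 df h) = sec1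
     (\<lambda>z. cf (act (h z) z) * df z * inverse (\<gamma> (f (act (h z) z)) (h z) z))
     (\<lambda>z. f (act (h z) z) \<otimes>\<^bsub>G\<^esub> h z)"
proof
  fix P :: "'x \<times> 'g"
  obtain z m where P: "P = (z, m)" by (cases P)
  show "mul1 BB sc (sec1 cf f) (sec1 df h) P = sec1 (\<lambda>z. cf (act (h z) z) * df z * inverse (\<gamma> (f (act (h z) z)) (h z) z))
     (\<lambda>z. f (act (h z) z) \<otimes>\<^bsub>G\<^esub> h z) P"
  proof (cases "z \<in> XX \<and> m \<in> GG")
    case True
    then show ?thesis unfolding P using assms
      by (subst mul1_sec_right[OF _ _ refl]) (auto simp: sec1_apply inv_solve_G Gp.m_assoc)
  next
    case False thus ?thesis unfolding P by (subst mul1_out) (auto simp: BB_eq sec1_apply)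
  qed
qed

lemma sec2_mul:
  assumes "\<And>z. z \<in> XX \<times> XX \<Longrightarrow> f1 z \<in> GG" "\<And>z. z \<in> XX \<times> XX \<Longrightarrow> f2 z \<in> GG"
     "\<And>z. z \<in> XX \<times> XX \<Longrightarrow> h1 z \<in> GG" "\<And>z. z \<in> XX \<times> XX \<Longrightarrow> h2 z \<in> GG"
  shows "mul2 BB sc (sec2 cf f1 f2) (sec2 df h1 h2) = sec2
     (\<lambda>z. cf (act (h1 z) (fst z), act (h2 z) (snd z)) * df z *
        (inverse (\<gamma> (f1 (act (h1 z) (fst z), act (h2 z) (snd z))) (h1 z) (fst z)) *
         inverse (\<gamma> (f2 (act (h1 z) (fst z), act (h2 z) (snd z))) (h2 z) (snd z))))
     (\<lambda>z. f1 (act (h1 z) (fst z), act (h2 z) (snd z)) \<otimes>\<^bsub>G\<^esub> h1 z)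
     (\<lambda>z. f2 (act (h1 z) (fst z), act (h2 z) (snd z)) \<otimes>\<^bsub>G\<^esub> h2 z)"
    (is "?L = ?R")
proof
  fix P :: "('x \<times> 'g) \<times> ('x \<times> 'g)"
  obtain z1 m1 z2 m2 where P: "P = ((z1, m1), (z2, m2))" by (metis prod.collapse)
  show "?L P = ?R P"
  proof (cases "z1 \<in> XX \<and> m1 \<in> GG \<and> z2 \<in> XX \<and> m2 \<in> GG")
    case True
    then show ?thesis unfolding P using assms
      by (subst mul2_sec_right[OF _ _ _ _ refl _ refl]) (auto simp: sec2_apply inv_solve_G Gp.m_assoc)
  next
    case False thus ?thesis unfolding P by (subst mul2_out) (auto simp: BB_eq sec2_apply)
  qed
qed

definition xa3 :: "('x \<times> 'x \<times> 'x \<Rightarrow> 'g) \<Rightarrow> ('x \<times> 'x \<times> 'x \<Rightarrow> 'g) \<Rightarrow> ('x \<times> 'x \<times> 'x \<Rightarrow> 'g) \<Rightarrow> 'x \<times> 'x \<times> 'x \<Rightarrow> 'x \<times> 'x \<times> 'x" where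
  "xa3 h1 h2 h3 z = (act (h1 z) (fst z), act (h2 z) (fst (snd z)), act (h3 z) (snd (snd z)))"

lemma sec3_mul:
  assumes "\<And>z. z \<in> XX \<times> XX \<times> XX \<Longrightarrow> f1 z \<in> GG" "\<And>z. z \<in> XX \<times> XX \<times> XX \<Longrightarrow> f2 z \<in> GG"
     "\<And>z. z \<in> XX \<times> XX \<times> XX \<Longrightarrow> f3 z \<in> GG"
     "\<And>z. z \<in> XX \<times> XX \<times> XX \<Longrightarrow> h1 z \<in> GG" "\<And>z. z \<in> XX \<times> XX \<times> XX \<Longrightarrow> h2 z \<in> GG"
     "\<And>z. z \<in> XX \<times> XX \<times> XX \<Longrightarrow> h3 z \<in> GG"
  shows "mul3 BB sc (sec3 cf f1 f2 f3) (sec3 df h1 h2 h3) = sec3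
     (\<lambda>z. cf (xa3 h1 h2 h3 z) * df z *
        (inverse (\<gamma> (f1 (xa3 h1 h2 h3 z)) (h1 z) (fst z)) *
         (inverse (\<gamma> (f2 (xa3 h1 h2 h3 z)) (h2 z) (fst (snd z))) *
          inverse (\<gamma> (f3 (xa3 h1 h2 h3 z)) (h3 z) (snd (snd z))))))
     (\<lambda>z. f1 (xa3 h1 h2 h3 z) \<otimes>\<^bsub>G\<^esub> h1 z)
     (\<lambda>z. f2 (xa3 h1 h2 h3 z) \<otimes>\<^bsub>G\<^esub> h2 z)
     (\<lambda>z. f3 (xa3 h1 h2 h3 z) \<otimes>\<^bsub>G\<^esub> h3 z)"
    (is "?L = ?R")
proof
  fix P :: "('x \<times> 'g) \<times> ('x \<times> 'g) \<times> ('x \<times> 'g)"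
  obtain z1 m1 z2 m2 z3 m3 where P: "P = ((z1, m1), (z2, m2), (z3, m3))" by (metis prod.collapse)
  show "?L P = ?R P"
  proof (cases "z1 \<in> XX \<and> m1 \<in> GG \<and> z2 \<in> XX \<and> m2 \<in> GG \<and> z3 \<in> XX \<and> m3 \<in> GG")
    case True
    then show ?thesis unfolding P using assms
      by (subst mul3_sec_right[OF _ _ _ _ _ _ refl _ refl _ refl]) (auto simp: sec3_apply inv_solve_G xa3_def Gp.m_assoc)
  next
    case False thus ?thesis unfolding P by (subst mul3_out) (auto simp: BB_eq sec3_apply)
  qed
qed

lemma sec4_mul: "mul4 BB sc (sec4 cf) (sec4 df) = sec4 (\<lambda>z. df z * cf z)"
proof
  fix P :: "('x \<times> 'g) \<times> ('x \<times> 'g) \<times> ('x \<times> 'g) \<times> ('x \<times> 'g)"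
  obtain z1 m1 z2 m2 z3 m3 z4 m4 where P: "P = ((z1, m1), (z2, m2), (z3, m3), (z4, m4))" by (metis prod.collapse)
  show "mul4 BB sc (sec4 cf) (sec4 df) P = sec4 (\<lambda>z. df z * cf z) P"
  proof (cases "z1 \<in> XX \<and> m1 \<in> GG \<and> z2 \<in> XX \<and> m2 \<in> GG \<and> z3 \<in> XX \<and> m3 \<in> GG \<and> z4 \<in> XX \<and> m4 \<in> GG")
    case True
    then show ?thesis unfolding P by (subst mul4_sec_right) (auto simp: sec4_apply)
  next
    case False thus ?thesis unfolding P by (subst mul4_out) (auto simp: BB_eq sec4_apply)
  qed
qed

abbreviation "dcH \<equiv> H_dc G X \<mu>"
abbreviation "epH \<equiv> H_ep G X"
abbreviation "smH \<equiv> H_sm G X act \<gamma> \<mu>"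
abbreviation "unH \<equiv> H_unit G X"
abbreviation "eG \<equiv> \<one>\<^bsub>G\<^esub>"
abbreviation "eX \<equiv> \<one>\<^bsub>X\<^esub>"

lemma H_unit_sec: "unH = sec1 (\<lambda>_. 1) (\<lambda>_. eG)"
  by (auto simp: H_unit_def sec1_def ext0_def fun_eq_iff)
lemma H_beta_sec: "H_beta G X \<omega> = sec1 (\<lambda>x. \<omega> (inv\<^bsub>X\<^esub> x) x (inv\<^bsub>X\<^esub> x)) (\<lambda>_. eG)"
  by (auto simp: H_beta_def sec1_def ext0_def fun_eq_iff)
lemma H_Phi_sec: "H_Phi G X \<omega> = sec3 (\<lambda>(x, y, z). \<omega> x y z) (\<lambda>_. eG) (\<lambda>_. eG) (\<lambda>_. eG)"
  by (auto simp: H_Phi_def sec3_def ext0_def fun_eq_iff)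
lemma H_R_sec: "H_R G X d c = sec2 (\<lambda>(x, y). c x y) (\<lambda>_. eG) (\<lambda>(x, y). d x)"
  by (auto simp: H_R_def sec2_def ext0_def fun_eq_iff)
lemma bvec_sec: "x0 \<in> XX \<Longrightarrow> g0 \<in> GG \<Longrightarrow> bvec (x0, g0) = sec1 (\<lambda>x. if x = x0 then 1 else 0) (\<lambda>_. g0)"
  by (auto simp: bvec_def sec1_apply fun_eq_iff)
lemma one2_sec: "one2 unH = sec2 (\<lambda>_. 1) (\<lambda>_. eG) (\<lambda>_. eG)"
  by (auto simp: one2_def H_unit_sec sec1_apply sec2_apply fun_eq_iff)
lemma one3_sec: "one3 unH = sec3 (\<lambda>_. 1) (\<lambda>_. eG) (\<lambda>_. eG) (\<lambda>_. eG)"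
  by (auto simp: one3_def H_unit_sec sec1_apply sec3_apply fun_eq_iff)

lemma dc_sum:
  assumes "x \<in> XX" "g \<in> GG" "y \<in> XX" "h \<in> GG"
  shows "(\<Sum>i\<in>BB. F i * dcH i (x, g) (y, h)) = (if g = h then F (x \<otimes>\<^bsub>X\<^esub> y, g) * \<mu> g x y else 0)"
proof (cases "g = h")
  case True
  then show ?thesis using assms
    by (subst sum_single[where t="(x \<otimes>\<^bsub>X\<^esub> y, g)"]) (auto simp: finG finX BB_eq H_dc_def split: if_splits)
next
  case False
  then show ?thesis by (auto intro!: sum.neutral simp: H_dc_def)
qed

lemma Delta_closed:
  "Delta BB dcH a ((x, g), (y, h)) =
    (if x \<in> XX \<and> g \<in> GG \<and> y \<in> XX \<and> h \<in> GG \<and> g = h then a (x \<otimes>\<^bsub>X\<^esub> y, g) * \<mu> g x y else 0)"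
  by (auto simp: Delta_def ext0_def BB_eq dc_sum[simplified BB_eq])

lemma Delta_x_id_closed:
  "Delta_x_id BB dcH u ((x, g1), (y, g2), r) =
    (if x \<in> XX \<and> g1 \<in> GG \<and> y \<in> XX \<and> g2 \<in> GG \<and> r \<in> BB \<and> g1 = g2 then u ((x \<otimes>\<^bsub>X\<^esub> y, g1), r) * \<mu> g1 x y else 0)"
  by (auto simp: Delta_x_id_def ext0_def BB_eq dc_sum[simplified BB_eq])

lemma id_x_Delta_closed:
  "id_x_Delta BB dcH u (p, (y, g2), (z, g3)) =
    (if p \<in> BB \<and> y \<in> XX \<and> g2 \<in> GG \<and> z \<in> XX \<and> g3 \<in> GG \<and> g2 = g3 then u (p, (y \<otimes>\<^bsub>X\<^esub> z, g2)) * \<mu> g2 y z else 0)"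
  by (auto simp: id_x_Delta_def ext0_def BB_eq dc_sum[simplified BB_eq])

lemma Delta_1_3_closed:
  "Delta_1_3 BB dcH u ((x, g1), (y, g2), r, s) =
    (if x \<in> XX \<and> g1 \<in> GG \<and> y \<in> XX \<and> g2 \<in> GG \<and> r \<in> BB \<and> s \<in> BB \<and> g1 = g2 then u ((x \<otimes>\<^bsub>X\<^esub> y, g1), r, s) * \<mu> g1 x y else 0)"
  by (auto simp: Delta_1_3_def ext0_def BB_eq dc_sum[simplified BB_eq])

lemma Delta_2_3_closed:
  "Delta_2_3 BB dcH u (p, (x, g1), (y, g2), s) =
    (if p \<in> BB \<and> x \<in> XX \<and> g1 \<in> GG \<and> y \<in> XX \<and> g2 \<in> GG \<and> s \<in> BB \<and> g1 = g2 then u (p, (x \<otimes>\<^bsub>X\<^esub> y, g1), s) * \<mu> g1 x y else 0)"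
  by (auto simp: Delta_2_3_def ext0_def BB_eq dc_sum[simplified BB_eq])

lemma Delta_3_3_closed:
  "Delta_3_3 BB dcH u (p, q, (x, g1), (y, g2)) =
    (if p \<in> BB \<and> q \<in> BB \<and> x \<in> XX \<and> g1 \<in> GG \<and> y \<in> XX \<and> g2 \<in> GG \<and> g1 = g2 then u (p, q, (x \<otimes>\<^bsub>X\<^esub> y, g1)) * \<mu> g1 x y else 0)"
  by (auto simp: Delta_3_3_def ext0_def BB_eq dc_sum[simplified BB_eq])

lemma ep_sum: "(\<Sum>i\<in>BB. F i * epH i) = (\<Sum>g\<in>GG. F (eX, g))"
proof -
  have "(\<Sum>i\<in>BB. F i * epH i) = (\<Sum>x\<in>XX. \<Sum>g\<in>GG. F (x, g) * epH (x, g))"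
    by (simp add: BB_eq sum.cartesian_product)
  also have "\<dots> = (\<Sum>x\<in>XX. if x = eX then (\<Sum>g\<in>GG. F (eX, g)) else 0)"
    by (intro sum.cong refl) (auto simp: H_ep_def)
  also have "\<dots> = (\<Sum>g\<in>GG. F (eX, g))" using finX by simp
  finally show ?thesis .
qed

lemma eps_closed: "eps BB epH u = (\<Sum>g\<in>GG. u (eX, g))"
  by (simp add: eps_def ep_sum)

lemma ep_sum': "(\<Sum>i\<in>BB. epH i * F i) = (\<Sum>g\<in>GG. F (eX, g))"
  using ep_sum[of F] by (simp add: ac_simps)

lemma eps_x_id_closed: "eps_x_id BB epH u q = (if q \<in> BB then (\<Sum>g\<in>GG. u ((eX, g), q)) else 0)"
  by (simp add: eps_x_id_def ext0_def ep_sum')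
lemma id_x_eps_closed: "id_x_eps BB epH u p = (if p \<in> BB then (\<Sum>g\<in>GG. u (p, (eX, g))) else 0)"
  by (simp add: id_x_eps_def ext0_def ep_sum)
lemma id_eps_id_closed: "id_eps_id BB epH u (p, r) = (if p \<in> BB \<and> r \<in> BB then (\<Sum>g\<in>GG. u (p, (eX, g), r)) else 0)"
  by (simp add: id_eps_id_def ext0_def ep_sum)

definition kS :: "'x \<Rightarrow> 'g \<Rightarrow> 'k" where
  "kS y k = \<gamma> k (inv\<^bsub>G\<^esub> k) (act k y) / \<mu> (inv\<^bsub>G\<^esub> k) (inv\<^bsub>X\<^esub> (act k y)) (act k y)"

lemma lin_map_closed:
  "lin_map BB smH u (y, k) = (if y \<in> XX \<and> k \<in> GG then kS y k * u (inv\<^bsub>X\<^esub> (act k y), inv\<^bsub>G\<^esub> k) else 0)"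
proof (cases "y \<in> XX \<and> k \<in> GG")
  case True
  hence y: "y \<in> XX" and k: "k \<in> GG" by auto
  have "(\<Sum>i\<in>BB. u i * smH i (y, k)) = u (inv\<^bsub>X\<^esub> (act k y), inv\<^bsub>G\<^esub> k) * smH (inv\<^bsub>X\<^esub> (act k y), inv\<^bsub>G\<^esub> k) (y, k)"
  proof (rule sum_single[OF finBB])
    show "(inv\<^bsub>X\<^esub> (act k y), inv\<^bsub>G\<^esub> k) \<in> BB" using y k by (simp add: BB_eq)
  next
    fix i assume i: "i \<in> BB" "i \<noteq> (inv\<^bsub>X\<^esub> (act k y), inv\<^bsub>G\<^esub> k)"
    then obtain x g where ii: "i = (x, g)" "x \<in> XX" "g \<in> GG" by (auto simp: BB_eq)
    have "\<not> (y = act g (inv\<^bsub>X\<^esub> x) \<and> k = inv\<^bsub>G\<^esub> g)"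
    proof
      assume h: "y = act g (inv\<^bsub>X\<^esub> x) \<and> k = inv\<^bsub>G\<^esub> g"
      hence "g = inv\<^bsub>G\<^esub> k" using ii by simp
      moreover have "x = inv\<^bsub>X\<^esub> (act k y)" using h ii by simp
      ultimately show False using i ii by simp
    qed
    thus "u i * smH i (y, k) = 0" using ii by (auto simp: H_sm_def)
  qed
  also have "\<dots> = kS y k * u (inv\<^bsub>X\<^esub> (act k y), inv\<^bsub>G\<^esub> k)"
    using y k by (simp add: H_sm_def kS_def)
  finally show ?thesis using True by (simp add: lin_map_def ext0_def BB_eq)
next
  case False thus ?thesis by (auto simp: lin_map_def ext0_def BB_eq)
qed

end




context qa
begin

lemma mem_BB [simp]: "(x, g) \<in> BB \<longleftrightarrow> x \<in> XX \<and> g \<in> GG" by (simp add: BB_eq)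

lemma sc_sum_left:
  assumes "x \<in> XX" "g \<in> GG" "y \<in> XX" "h \<in> GG"
  shows "(\<Sum>j\<in>BB. sc (x, g) (y, h) j * F j) =
    (if x = act h y then inverse (\<gamma> g h y) * F (y, g \<otimes>\<^bsub>G\<^esub> h) else 0)"
proof (cases "x = act h y")
  case True
  then show ?thesis using assms
    by (subst sum_single[where t="(y, g \<otimes>\<^bsub>G\<^esub> h)"]) (auto simp: finG finX BB_eq H_sc_def split: if_splits)
next
  case False
  then show ?thesis by (auto intro!: sum.neutral simp: H_sc_def)
qed

lemma sc_sum_mid:
  assumes "y \<in> XX" "h \<in> GG" "z \<in> XX" "m \<in> GG"
  shows "(\<Sum>i\<in>BB. F i * sc (y, h) i (z, m)) =
    (if y = act (inv\<^bsub>G\<^esub> h \<otimes>\<^bsub>G\<^esub> m) z then F (z, inv\<^bsub>G\<^esub> h \<otimes>\<^bsub>G\<^esub> m) * inverse (\<gamma> h (inv\<^bsub>G\<^esub> h \<otimes>\<^bsub>G\<^esub> m) z) else 0)"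
proof (cases "y = act (inv\<^bsub>G\<^esub> h \<otimes>\<^bsub>G\<^esub> m) z")
  case True
  have "\<And>i. i \<in> BB \<Longrightarrow> i \<noteq> (z, inv\<^bsub>G\<^esub> h \<otimes>\<^bsub>G\<^esub> m) \<Longrightarrow> F i * sc (y, h) i (z, m) = 0"
  proof -
    fix i assume "i \<in> BB" "i \<noteq> (z, inv\<^bsub>G\<^esub> h \<otimes>\<^bsub>G\<^esub> m)"
    then obtain z' h' where i: "i = (z', h')" "z' \<in> XX" "h' \<in> GG" "(z', h') \<noteq> (z, inv\<^bsub>G\<^esub> h \<otimes>\<^bsub>G\<^esub> m)" by (auto simp: BB_eq)
    have "h' = inv\<^bsub>G\<^esub> h \<otimes>\<^bsub>G\<^esub> m" if "m = h \<otimes>\<^bsub>G\<^esub> h'"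
      using that i assms by (simp add: Gp.inv_solve_left)
    thus "F i * sc (y, h) i (z, m) = 0" using i by (auto simp: H_sc_def)
  qed
  hence "(\<Sum>i\<in>BB. F i * sc (y, h) i (z, m)) = F (z, inv\<^bsub>G\<^esub> h \<otimes>\<^bsub>G\<^esub> m) * sc (y, h) (z, inv\<^bsub>G\<^esub> h \<otimes>\<^bsub>G\<^esub> m) (z, m)"
    using assms by (intro sum_single[OF finBB]) (auto simp: BB_eq)
  then show ?thesis using assms True by (simp add: H_sc_def Gp.m_assoc[symmetric])
next
  case False
  have "\<And>i. i \<in> BB \<Longrightarrow> F i * sc (y, h) i (z, m) = 0"
  proof -
    fix i assume "i \<in> BB"
    then obtain z' h' where i: "i = (z', h')" "z' \<in> XX" "h' \<in> GG" by (auto simp: BB_eq)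
    have "h' = inv\<^bsub>G\<^esub> h \<otimes>\<^bsub>G\<^esub> m" if "m = h \<otimes>\<^bsub>G\<^esub> h'"
      using that i assms by (simp add: Gp.inv_solve_left)
    thus "F i * sc (y, h) i (z, m) = 0" using False i by (auto simp: H_sc_def)
  qed
  thus ?thesis using False by (simp add: sum.neutral)
qed

lemma gamma_cocB_inv:
  assumes "g \<in> GG" "h \<in> GG" "k \<in> GG" "z \<in> XX"
  shows "inverse (\<gamma> g h (act k z)) * inverse (\<gamma> (g \<otimes>\<^bsub>G\<^esub> h) k z) =
         inverse (\<gamma> h k z) * inverse (\<gamma> g (h \<otimes>\<^bsub>G\<^esub> k) z)"
  using cocB[OF assms] by (metis inverse_mult_distrib mult.commute)

lemma sc_assoc_H: "sc_assoc BB sc"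
  unfolding sc_assoc_def
proof (clarify)
  fix x g y h z k w m
  assume m: "(x, g) \<in> BB" "(y, h) \<in> BB" "(z, k) \<in> BB" "(w, m) \<in> BB"
  hence mm: "x \<in> XX" "g \<in> GG" "y \<in> XX" "h \<in> GG" "z \<in> XX" "k \<in> GG" "w \<in> XX" "m \<in> GG"
    by (auto simp: BB_eq)
  show "(\<Sum>j\<in>BB. sc (x, g) (y, h) j * sc j (z, k) (w, m)) = (\<Sum>j\<in>BB. sc (y, h) (z, k) j * sc (x, g) j (w, m))"
  proof (cases "y = act k z \<and> w = z \<and> x = act h y \<and> m = g \<otimes>\<^bsub>G\<^esub> h \<otimes>\<^bsub>G\<^esub> k")
    case True
    then show ?thesis unfolding sc_sum_left[OF mm(1-4)] sc_sum_left[OF mm(3-6)]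
      using mm gamma_cocB_inv[of g h k z] by (simp add: H_sc_def act_mult Gp.m_assoc)
  next
    case False
    have e1: "act (h \<otimes>\<^bsub>G\<^esub> k) z = act h (act k z)" using mm by (simp add: act_mult)
    have e2: "g \<otimes>\<^bsub>G\<^esub> (h \<otimes>\<^bsub>G\<^esub> k) = g \<otimes>\<^bsub>G\<^esub> h \<otimes>\<^bsub>G\<^esub> k" using mm by (simp add: Gp.m_assoc)
    have L: "(if x = act h y then inverse (\<gamma> g h y) * sc (y, g \<otimes>\<^bsub>G\<^esub> h) (z, k) (w, m) else 0) = 0"
      using False by (auto simp: H_sc_def)
    have R: "(if y = act k z then inverse (\<gamma> h k z) * sc (x, g) (z, h \<otimes>\<^bsub>G\<^esub> k) (w, m) else 0) = 0"
      using False by (auto simp: H_sc_def e1 e2)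
    show ?thesis unfolding sc_sum_left[OF mm(1-4)] sc_sum_left[OF mm(3-6)] L R ..
  qed
qed

lemma sc_lunit_H: "sc_lunit BB sc unH"
  unfolding sc_lunit_def
proof (clarify)
  fix y h z m
  assume "(y, h) \<in> BB" "(z, m) \<in> BB"
  hence mm: "y \<in> XX" "h \<in> GG" "z \<in> XX" "m \<in> GG" by (auto simp: BB_eq)
  show "(\<Sum>i\<in>BB. unH i * sc i (y, h) (z, m)) = (if (y, h) = (z, m) then 1 else 0)"
    unfolding basic1[OF mm] using mm by (auto simp: H_unit_sec sec1_apply Gp.inv_solve_right')
qed

lemma sc_runit_H: "sc_runit BB sc unH"
  unfolding sc_runit_def
proof (clarify)
  fix y h z m
  assume "(y, h) \<in> BB" "(z, m) \<in> BB"
  hence mm: "y \<in> XX" "h \<in> GG" "z \<in> XX" "m \<in> GG" by (auto simp: BB_eq)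
  show "(\<Sum>i\<in>BB. unH i * sc (y, h) i (z, m)) = (if (y, h) = (z, m) then 1 else 0)"
    unfolding sc_sum_mid[OF mm] using mm by (auto simp: H_unit_sec sec1_apply Gp.inv_solve_left')
qed

lemma mul1_assoc_H: "mul1 BB sc (mul1 BB sc u v) w = mul1 BB sc u (mul1 BB sc v w)"
  by (rule mul1_assoc_gen[OF sc_assoc_H])

lemma mul2_assoc_H: "mul2 BB sc (mul2 BB sc u v) w = mul2 BB sc u (mul2 BB sc v w)"
  unfolding mul2_as_mul1 by (rule mul1_assoc_gen[OF scT_assoc[OF sc_assoc_H sc_assoc_H]])

lemma mul3_assoc_H: "mul3 BB sc (mul3 BB sc u v) w = mul3 BB sc u (mul3 BB sc v w)"
  unfolding mul3_as_mul1 by (rule mul1_assoc_gen[OF scT_assoc[OF sc_assoc_H scT_assoc[OF sc_assoc_H sc_assoc_H]]])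

lemma mul1_lunit_H: "u \<in> V1 BB \<Longrightarrow> mul1 BB sc unH u = u"
  by (rule mul1_lunit_gen[OF finBB sc_lunit_H])
lemma mul1_runit_H: "u \<in> V1 BB \<Longrightarrow> mul1 BB sc u unH = u"
  by (rule mul1_runit_gen[OF finBB sc_runit_H])

lemma finBB2: "finite (BB \<times> BB)" using finBB by simp
lemma finBB3: "finite (BB \<times> BB \<times> BB)" using finBB by simp

lemma mul2_lunit_H: "u \<in> V2 BB \<Longrightarrow> mul2 BB sc (one2 unH) u = u"
  unfolding mul2_as_mul1 one2_eq V2_eq
  by (rule mul1_lunit_gen[OF finBB2 scT_lunit[OF sc_lunit_H sc_lunit_H]])
lemma mul2_runit_H: "u \<in> V2 BB \<Longrightarrow> mul2 BB sc u (one2 unH) = u"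
  unfolding mul2_as_mul1 one2_eq V2_eq
  by (rule mul1_runit_gen[OF finBB2 scT_runit[OF sc_runit_H sc_runit_H]])
lemma mul3_lunit_H: "u \<in> V3 BB \<Longrightarrow> mul3 BB sc (one3 unH) u = u"
  unfolding mul3_as_mul1 one3_eq V3_eq
  by (rule mul1_lunit_gen[OF finBB3 scT_lunit[OF sc_lunit_H scT_lunit[OF sc_lunit_H sc_lunit_H]]])
lemma mul3_runit_H: "u \<in> V3 BB \<Longrightarrow> mul3 BB sc u (one3 unH) = u"
  unfolding mul3_as_mul1 one3_eq V3_eq
  by (rule mul1_runit_gen[OF finBB3 scT_runit[OF sc_runit_H scT_runit[OF sc_runit_H sc_runit_H]]])

lemma inv2_eqI:
  assumes "v \<in> V2 BB" "mul2 BB sc u v = one2 unH" "mul2 BB sc v u = one2 unH"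
  shows "inv2 BB sc unH u = v" "invertible2 BB sc unH u"
proof -
  show "inv2 BB sc unH u = v"
    unfolding inv2_def
  proof (rule the_equality)
    show "v \<in> V2 BB \<and> mul2 BB sc u v = one2 unH \<and> mul2 BB sc v u = one2 unH" using assms by simp
  next
    fix w assume w: "w \<in> V2 BB \<and> mul2 BB sc u w = one2 unH \<and> mul2 BB sc w u = one2 unH"
    show "w = v"
    proof (rule inv_unique_gen[OF finBB2 scT_assoc[OF sc_assoc_H sc_assoc_H]
              scT_lunit[OF sc_lunit_H sc_lunit_H] scT_runit[OF sc_runit_H sc_runit_H], where u=u])
      show "w \<in> V1 (BB \<times> BB)" "v \<in> V1 (BB \<times> BB)" using w assms by (auto simp: V2_eq)
      show "mul1 (BB \<times> BB) (scT sc sc) w u = (\<lambda>(p, q). unH p * unH q)"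
           "mul1 (BB \<times> BB) (scT sc sc) u v = (\<lambda>(p, q). unH p * unH q)"
        using w assms by (auto simp: mul2_as_mul1 one2_eq)
    qed
  qed
  show "invertible2 BB sc unH u" using assms unfolding invertible2_def by blast
qed

lemma inv3_eqI:
  assumes "v \<in> V3 BB" "mul3 BB sc u v = one3 unH" "mul3 BB sc v u = one3 unH"
  shows "inv3 BB sc unH u = v" "invertible3 BB sc unH u"
proof -
  show "inv3 BB sc unH u = v"
    unfolding inv3_def
  proof (rule the_equality)
    show "v \<in> V3 BB \<and> mul3 BB sc u v = one3 unH \<and> mul3 BB sc v u = one3 unH" using assms by simp
  next
    fix w assume w: "w \<in> V3 BB \<and> mul3 BB sc u w = one3 unH \<and> mul3 BB sc w u = one3 unH"
    show "w = v"
    proof (rule inv_unique_gen[OF finBB3 scT_assoc[OF sc_assoc_H scT_assoc[OF sc_assoc_H sc_assoc_H]]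
              scT_lunit[OF sc_lunit_H scT_lunit[OF sc_lunit_H sc_lunit_H]]
              scT_runit[OF sc_runit_H scT_runit[OF sc_runit_H sc_runit_H]], where u=u])
      show "w \<in> V1 (BB \<times> BB \<times> BB)" "v \<in> V1 (BB \<times> BB \<times> BB)" using w assms by (auto simp: V3_eq)
      show "mul1 (BB \<times> BB \<times> BB) (scT sc (scT sc sc)) w u = (\<lambda>(p, q). unH p * (\<lambda>(p, q). unH p * unH q) q)"
           "mul1 (BB \<times> BB \<times> BB) (scT sc (scT sc sc)) u v = (\<lambda>(p, q). unH p * (\<lambda>(p, q). unH p * unH q) q)"
        using w assms by (auto simp: mul3_as_mul1 one3_eq)
    qed
  qed
  show "invertible3 BB sc unH u" using assms unfolding invertible3_def by blast
qed

lemma sec1_V1: "sec1 cf f \<in> V1 BB" by (simp add: sec1_def ext0_def V1_def)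
lemma sec2_V2: "sec2 cf f1 f2 \<in> V2 BB" by (auto simp: sec2_def ext0_def V2_def)
lemma sec3_V3: "sec3 cf f1 f2 f3 \<in> V3 BB" by (auto simp: sec3_def ext0_def V3_def)

lemma sec1_cong: "(\<And>x. x \<in> XX \<Longrightarrow> cf x = cf' x) \<Longrightarrow> (\<And>x. x \<in> XX \<Longrightarrow> f x = f' x) \<Longrightarrow>
   sec1 cf f = sec1 cf' f'"
  by (auto simp: sec1_def ext0_def BB_eq fun_eq_iff)
lemma sec2_cong: "(\<And>x y. x \<in> XX \<Longrightarrow> y \<in> XX \<Longrightarrow> cf (x, y) = cf' (x, y)) \<Longrightarrow>
   (\<And>x y. x \<in> XX \<Longrightarrow> y \<in> XX \<Longrightarrow> f1 (x, y) = f1' (x, y)) \<Longrightarrow>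
   (\<And>x y. x \<in> XX \<Longrightarrow> y \<in> XX \<Longrightarrow> f2 (x, y) = f2' (x, y)) \<Longrightarrow>
   sec2 cf f1 f2 = sec2 cf' f1' f2'"
  by (auto simp: sec2_def ext0_def BB_eq fun_eq_iff)
lemma sec3_cong: "(\<And>x y z. x \<in> XX \<Longrightarrow> y \<in> XX \<Longrightarrow> z \<in> XX \<Longrightarrow> cf (x, y, z) = cf' (x, y, z)) \<Longrightarrow>
   (\<And>x y z. x \<in> XX \<Longrightarrow> y \<in> XX \<Longrightarrow> z \<in> XX \<Longrightarrow> f1 (x, y, z) = f1' (x, y, z)) \<Longrightarrow>
   (\<And>x y z. x \<in> XX \<Longrightarrow> y \<in> XX \<Longrightarrow> z \<in> XX \<Longrightarrow> f2 (x, y, z) = f2' (x, y, z)) \<Longrightarrow>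
   (\<And>x y z. x \<in> XX \<Longrightarrow> y \<in> XX \<Longrightarrow> z \<in> XX \<Longrightarrow> f3 (x, y, z) = f3' (x, y, z)) \<Longrightarrow>
   sec3 cf f1 f2 f3 = sec3 cf' f1' f2' f3'"
  by (auto simp: sec3_def ext0_def BB_eq fun_eq_iff)
lemma sec4_cong: "(\<And>x y z w. x \<in> XX \<Longrightarrow> y \<in> XX \<Longrightarrow> z \<in> XX \<Longrightarrow> w \<in> XX \<Longrightarrow> cf (x, y, z, w) = cf' (x, y, z, w)) \<Longrightarrow>
   sec4 cf = sec4 cf'"
  by (auto simp: sec4_def ext0_def BB_eq fun_eq_iff)

abbreviation "PhiH \<equiv> H_Phi G X \<omega>"
definition "PsiH = sec3 (\<lambda>(x, y, z). inverse (\<omega> x y z)) (\<lambda>_. eG) (\<lambda>_. eG) (\<lambda>_. eG)"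

lemma Phi_Psi: "mul3 BB sc PhiH PsiH = one3 unH" "mul3 BB sc PsiH PhiH = one3 unH"
  unfolding H_Phi_sec PsiH_def one3_sec
   by (subst sec3_mul; simp; rule sec3_cong; simp add: xa3_def coc_nz)+

lemma inv3_Phi: "inv3 BB sc unH PhiH = PsiH" and invertible3_Phi: "invertible3 BB sc unH PhiH"
  using inv3_eqI[OF _ Phi_Psi] by (auto simp: PsiH_def sec3_V3)

lemma sum_diag:
  assumes "finite A" "\<And>a b. a \<in> A \<Longrightarrow> b \<in> A \<Longrightarrow> a \<noteq> b \<Longrightarrow> F (a, b) = 0"
  shows "(\<Sum>ab\<in>A \<times> A. F ab) = (\<Sum>a\<in>A. F (a, a))"
proof -
  have "(\<Sum>ab\<in>A \<times> A. F ab) = (\<Sum>a\<in>A. \<Sum>b\<in>A. F (a, b))" by (simp add: sum.cartesian_product)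
  also have "\<dots> = (\<Sum>a\<in>A. F (a, a))"
    by (intro sum.cong refl sum_single) (use assms in auto)
  finally show ?thesis .
qed

lemma cocD':
  assumes "g \<in> GG" "k \<in> GG" "x \<in> XX" "y \<in> XX"
  shows "inverse (\<gamma> (g \<otimes>\<^bsub>G\<^esub> inv\<^bsub>G\<^esub> k) k (x \<otimes>\<^bsub>X\<^esub> y)) * \<mu> g x y =
    \<mu> (g \<otimes>\<^bsub>G\<^esub> inv\<^bsub>G\<^esub> k) (act k x) (act k y) * \<mu> k x y *
    (inverse (\<gamma> (g \<otimes>\<^bsub>G\<^esub> inv\<^bsub>G\<^esub> k) k x) * inverse (\<gamma> (g \<otimes>\<^bsub>G\<^esub> inv\<^bsub>G\<^esub> k) k y))"
proof -
  have gk: "g \<otimes>\<^bsub>G\<^esub> inv\<^bsub>G\<^esub> k \<in> GG" using assms by simp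
  have e: "g \<otimes>\<^bsub>G\<^esub> inv\<^bsub>G\<^esub> k \<otimes>\<^bsub>G\<^esub> k = g" using assms by (simp add: Gp.m_assoc)
  have D: "(\<gamma> (g \<otimes>\<^bsub>G\<^esub> inv\<^bsub>G\<^esub> k) k x * \<gamma> (g \<otimes>\<^bsub>G\<^esub> inv\<^bsub>G\<^esub> k) k y) / \<gamma> (g \<otimes>\<^bsub>G\<^esub> inv\<^bsub>G\<^esub> k) k (x \<otimes>\<^bsub>X\<^esub> y)
        = (\<mu> (g \<otimes>\<^bsub>G\<^esub> inv\<^bsub>G\<^esub> k) (act k x) (act k y) * \<mu> k x y) / \<mu> g x y"
    using cocD[OF gk assms(2-4)] by (simp add: e)
  have nz: "\<gamma> (g \<otimes>\<^bsub>G\<^esub> inv\<^bsub>G\<^esub> k) k x \<noteq> 0" "\<gamma> (g \<otimes>\<^bsub>G\<^esub> inv\<^bsub>G\<^esub> k) k y \<noteq> 0"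
     "\<gamma> (g \<otimes>\<^bsub>G\<^esub> inv\<^bsub>G\<^esub> k) k (x \<otimes>\<^bsub>X\<^esub> y) \<noteq> 0" "\<mu> g x y \<noteq> 0"
    using assms gk by (simp_all add: coc_nz)
  show ?thesis using D nz by (simp add: field_simps)
qed

lemma Delta_mul: "Delta BB dcH (mul1 BB sc u v) = mul2 BB sc (Delta BB dcH u) (Delta BB dcH v)"
proof
  fix P :: "('x \<times> 'g) \<times> ('x \<times> 'g)"
  obtain x g y h where P: "P = ((x, g), (y, h))" by (metis prod.collapse)
  show "Delta BB dcH (mul1 BB sc u v) P = mul2 BB sc (Delta BB dcH u) (Delta BB dcH v) P"
  proof (cases "x \<in> XX \<and> g \<in> GG \<and> y \<in> XX \<and> h \<in> GG")
    case False
    have "mul2 BB sc (Delta BB dcH u) (Delta BB dcH v) P = 0" by (rule mul2_out) (use False in \<open>auto simp: P BB_eq\<close>)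
    moreover have "Delta BB dcH (mul1 BB sc u v) P = 0" using False by (auto simp: P Delta_closed)
    ultimately show ?thesis by simp
  next
    case True
    hence m: "x \<in> XX" "g \<in> GG" "y \<in> XX" "h \<in> GG" by auto
    have R: "mul2 BB sc (Delta BB dcH u) (Delta BB dcH v) P =
      (\<Sum>k\<in>GG. Delta BB dcH v ((x, k), (y, k)) *
        (Delta BB dcH u ((act k x, g \<otimes>\<^bsub>G\<^esub> inv\<^bsub>G\<^esub> k), (act k y, h \<otimes>\<^bsub>G\<^esub> inv\<^bsub>G\<^esub> k)) *
         (inverse (\<gamma> (g \<otimes>\<^bsub>G\<^esub> inv\<^bsub>G\<^esub> k) k x) * inverse (\<gamma> (h \<otimes>\<^bsub>G\<^esub> inv\<^bsub>G\<^esub> k) k y))))"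
      unfolding P mul2_closed[OF m]
      by (rule sum_diag[OF finG, where F="\<lambda>(h1, h2). _ h1 h2", simplified]) (auto simp: Delta_closed)
    show ?thesis
    proof (cases "g = h")
      case False
      have "mul2 BB sc (Delta BB dcH u) (Delta BB dcH v) P = 0"
        unfolding R using m False by (intro sum.neutral) (auto simp: Delta_closed Gp.inv_solve_right')
      thus ?thesis using False unfolding P by (simp add: Delta_closed)
    next
      case True
      have "Delta BB dcH (mul1 BB sc u v) P = (\<Sum>k\<in>GG. v (x \<otimes>\<^bsub>X\<^esub> y, k) *
         (u (act k (x \<otimes>\<^bsub>X\<^esub> y), g \<otimes>\<^bsub>G\<^esub> inv\<^bsub>G\<^esub> k) * (inverse (\<gamma> (g \<otimes>\<^bsub>G\<^esub> inv\<^bsub>G\<^esub> k) k (x \<otimes>\<^bsub>X\<^esub> y)) * \<mu> g x y)))"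
        unfolding P using m True by (simp add: Delta_closed mul1_closed sum_distrib_right sum_distrib_left ac_simps)
      also have "\<dots> = mul2 BB sc (Delta BB dcH u) (Delta BB dcH v) P"
        unfolding R
      proof (intro sum.cong refl)
        fix k assume k: "k \<in> GG"
        note c = cocD'[OF m(2) k m(1) m(3)]
        show "v (x \<otimes>\<^bsub>X\<^esub> y, k) * (u (act k (x \<otimes>\<^bsub>X\<^esub> y), g \<otimes>\<^bsub>G\<^esub> inv\<^bsub>G\<^esub> k) *
           (inverse (\<gamma> (g \<otimes>\<^bsub>G\<^esub> inv\<^bsub>G\<^esub> k) k (x \<otimes>\<^bsub>X\<^esub> y)) * \<mu> g x y)) =
          Delta BB dcH v ((x, k), y, k) * (Delta BB dcH u ((act k x, g \<otimes>\<^bsub>G\<^esub> inv\<^bsub>G\<^esub> k), act k y, h \<otimes>\<^bsub>G\<^esub> inv\<^bsub>G\<^esub> k) *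
           (inverse (\<gamma> (g \<otimes>\<^bsub>G\<^esub> inv\<^bsub>G\<^esub> k) k x) * inverse (\<gamma> (h \<otimes>\<^bsub>G\<^esub> inv\<^bsub>G\<^esub> k) k y)))"
          unfolding c using m k True by (simp add: Delta_closed ac_simps)
      qed
      finally show ?thesis .
    qed
  qed
qed

lemma Delta_unit: "Delta BB dcH unH = one2 unH"
  unfolding one2_sec by (auto simp: fun_eq_iff Delta_closed sec2_apply H_unit_sec sec1_apply)

lemma sum_G_shift:
  assumes "h \<in> GG"
  shows "(\<Sum>m\<in>GG. F (m \<otimes>\<^bsub>G\<^esub> inv\<^bsub>G\<^esub> h)) = (\<Sum>g\<in>GG. F g)"
  by (rule sum.reindex_bij_witness[where i="\<lambda>g. g \<otimes>\<^bsub>G\<^esub> h" and j="\<lambda>m. m \<otimes>\<^bsub>G\<^esub> inv\<^bsub>G\<^esub> h"])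
     (use assms in \<open>auto simp: Gp.m_assoc\<close>)

lemma eps_mul: "eps BB epH (mul1 BB sc u v) = eps BB epH u * eps BB epH v"
proof -
  have "eps BB epH (mul1 BB sc u v) = (\<Sum>m\<in>GG. \<Sum>h\<in>GG. v (eX, h) * u (eX, m \<otimes>\<^bsub>G\<^esub> inv\<^bsub>G\<^esub> h))"
    by (simp add: eps_closed mul1_closed)
  also have "\<dots> = (\<Sum>h\<in>GG. v (eX, h) * (\<Sum>m\<in>GG. u (eX, m \<otimes>\<^bsub>G\<^esub> inv\<^bsub>G\<^esub> h)))"
    by (subst sum.swap) (simp add: sum_distrib_left)
  also have "\<dots> = (\<Sum>h\<in>GG. v (eX, h) * (\<Sum>g\<in>GG. u (eX, g)))"
    by (intro sum.cong refl) (simp add: sum_G_shift[where F="\<lambda>g. u (eX, g)"])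
  also have "\<dots> = eps BB epH u * eps BB epH v"
    by (simp add: eps_closed sum_distrib_right[symmetric] mult.commute)
  finally show ?thesis .
qed

lemma eps_unit: "eps BB epH (unH :: _ \<Rightarrow> 'k) = 1"
  unfolding eps_closed
  by (subst sum_single[where t=eG]) (auto simp: finG H_unit_sec sec1_apply)

lemma cocC':
  assumes "g \<in> GG" "x \<in> XX" "y \<in> XX" "z \<in> XX"
  shows "\<mu> g y z * \<mu> g x (y \<otimes>\<^bsub>X\<^esub> z) =
    inverse (\<omega> x y z) * (\<omega> (act g x) (act g y) (act g z) * (\<mu> g (x \<otimes>\<^bsub>X\<^esub> y) z * \<mu> g x y))"
proof -
  have nz: "\<mu> g (x \<otimes>\<^bsub>X\<^esub> y) z \<noteq> 0" "\<mu> g x y \<noteq> 0" "\<omega> x y z \<noteq> 0"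
    using assms by (simp_all add: coc_nz)
  show ?thesis using cocC[OF assms] nz by (simp add: field_simps)
qed

lemma quasi_coassoc:
  "id_x_Delta BB dcH (Delta BB dcH a) =
   mul3 BB sc (mul3 BB sc PhiH (Delta_x_id BB dcH (Delta BB dcH a))) PsiH"
proof
  fix P :: "('x \<times> 'g) \<times> ('x \<times> 'g) \<times> ('x \<times> 'g)"
  obtain x g1 y g2 z g3 where P: "P = ((x, g1), (y, g2), (z, g3))" by (metis prod.collapse)
  show "id_x_Delta BB dcH (Delta BB dcH a) P = mul3 BB sc (mul3 BB sc PhiH (Delta_x_id BB dcH (Delta BB dcH a))) PsiH P"
  proof (cases "x \<in> XX \<and> g1 \<in> GG \<and> y \<in> XX \<and> g2 \<in> GG \<and> z \<in> XX \<and> g3 \<in> GG")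
    case False
    have "mul3 BB sc (mul3 BB sc PhiH (Delta_x_id BB dcH (Delta BB dcH a))) PsiH P = 0"
      by (rule mul3_out) (use False in \<open>auto simp: P BB_eq\<close>)
    moreover have "id_x_Delta BB dcH (Delta BB dcH a) P = 0" using False by (auto simp: P id_x_Delta_closed)
    ultimately show ?thesis by simp
  next
    case True
    hence m: "x \<in> XX" "g1 \<in> GG" "y \<in> XX" "g2 \<in> GG" "z \<in> XX" "g3 \<in> GG" by auto
    have "mul3 BB sc (mul3 BB sc PhiH (Delta_x_id BB dcH (Delta BB dcH a))) PsiH P =
       inverse (\<omega> x y z) * mul3 BB sc PhiH (Delta_x_id BB dcH (Delta BB dcH a)) P"
      unfolding P PsiH_def using m by (subst mul3_sec_right[OF m refl _ refl _ refl]) simp_all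
    also have "\<dots> = inverse (\<omega> x y z) * (\<omega> (act g1 x) (act g2 y) (act g3 z) *
        Delta_x_id BB dcH (Delta BB dcH a) P)"
      unfolding P H_Phi_sec by (subst mul3_E_left[OF m]) simp
    finally have R: "mul3 BB sc (mul3 BB sc PhiH (Delta_x_id BB dcH (Delta BB dcH a))) PsiH P =
       inverse (\<omega> x y z) * (\<omega> (act g1 x) (act g2 y) (act g3 z) * Delta_x_id BB dcH (Delta BB dcH a) P)" .
    show ?thesis
    proof (cases "g1 = g2 \<and> g2 = g3")
      case False
      thus ?thesis unfolding R unfolding P using m by (auto simp: Delta_x_id_closed id_x_Delta_closed Delta_closed)
    next
      case True
      note c = cocC'[OF m(6) m(1) m(3) m(5)]
      show ?thesis unfolding R unfolding P using m True
        by (simp add: Delta_x_id_closed id_x_Delta_closed Delta_closed Xp.m_assoc c ac_simps)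
    qed
  qed
qed

lemma counit_left: assumes a: "a \<in> V1 BB" shows "eps_x_id BB epH (Delta BB dcH a) = a"
proof
  fix q :: "'x \<times> 'g"
  obtain y h where q: "q = (y, h)" by (cases q)
  show "eps_x_id BB epH (Delta BB dcH a) q = a q"
  proof (cases "q \<in> BB")
    case True
    hence m: "y \<in> XX" "h \<in> GG" by (auto simp: q BB_eq)
    show ?thesis unfolding eps_x_id_closed q using True m
      by (subst sum_single[where t=h]) (auto simp: finG Delta_closed q)
  next
    case False thus ?thesis using a by (auto simp: eps_x_id_closed V1_def q)
  qed
qed

lemma counit_right: assumes a: "a \<in> V1 BB" shows "id_x_eps BB epH (Delta BB dcH a) = a"
proof
  fix q :: "'x \<times> 'g"
  obtain y h where q: "q = (y, h)" by (cases q)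
  show "id_x_eps BB epH (Delta BB dcH a) q = a q"
  proof (cases "q \<in> BB")
    case True
    hence m: "y \<in> XX" "h \<in> GG" by (auto simp: q BB_eq)
    show ?thesis unfolding id_x_eps_closed q using True m
      by (subst sum_single[where t=h]) (auto simp: finG Delta_closed q)
  next
    case False thus ?thesis using a by (auto simp: id_x_eps_closed V1_def q)
  qed
qed

lemma id_eps_id_Phi: "id_eps_id BB epH PhiH = one2 unH"
proof
  fix P :: "('x \<times> 'g) \<times> ('x \<times> 'g)"
  obtain x g y h where P: "P = ((x, g), (y, h))" by (metis prod.collapse)
  show "id_eps_id BB epH PhiH P = one2 unH P"
    unfolding P id_eps_id_closed one2_sec
    by (subst sum_single[where t=eG]) (auto simp: finG H_Phi_sec sec3_apply sec2_apply)
qed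

lemma Delta_3_3_Phi: "Delta_3_3 BB dcH PhiH = sec4 (\<lambda>(x, y, z, w). \<omega> x y (z \<otimes>\<^bsub>X\<^esub> w))"
  by (auto simp: fun_eq_iff Delta_3_3_closed H_Phi_sec sec3_apply sec4_apply)
lemma Delta_1_3_Phi: "Delta_1_3 BB dcH PhiH = sec4 (\<lambda>(x, y, z, w). \<omega> (x \<otimes>\<^bsub>X\<^esub> y) z w)"
  by (auto simp: fun_eq_iff Delta_1_3_closed H_Phi_sec sec3_apply sec4_apply)
lemma Delta_2_3_Phi: "Delta_2_3 BB dcH PhiH = sec4 (\<lambda>(x, y, z, w). \<omega> x (y \<otimes>\<^bsub>X\<^esub> z) w)"
  by (auto simp: fun_eq_iff Delta_2_3_closed H_Phi_sec sec3_apply sec4_apply)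
lemma one_x3_Phi: "one_x3 unH PhiH = sec4 (\<lambda>(x, y, z, w). \<omega> y z w)"
  by (auto simp: fun_eq_iff one_x3_def H_unit_sec sec1_apply H_Phi_sec sec3_apply sec4_apply)
lemma x3_one_Phi: "x3_one unH PhiH = sec4 (\<lambda>(x, y, z, w). \<omega> x y z)"
  by (auto simp: fun_eq_iff x3_one_def H_unit_sec sec1_apply H_Phi_sec sec3_apply sec4_apply)

lemma pentagon:
  "mul4 BB sc (Delta_3_3 BB dcH PhiH) (Delta_1_3 BB dcH PhiH) =
   mul4 BB sc (mul4 BB sc (one_x3 unH PhiH) (Delta_2_3 BB dcH PhiH)) (x3_one unH PhiH)"
  unfolding Delta_3_3_Phi Delta_1_3_Phi Delta_2_3_Phi one_x3_Phi x3_one_Phi sec4_mul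
  apply (rule sec4_cong)
  subgoal for x y z w using cocA[of x y z w] by (simp add: ac_simps)
  done

lemma QB: "quasi_bialgebra BB sc unH dcH epH PhiH"
  unfolding quasi_bialgebra_def
  using finBB sec1_V1 sec3_V3 mul1_assoc_H mul1_lunit_H mul1_runit_H Delta_mul Delta_unit
    eps_mul eps_unit invertible3_Phi quasi_coassoc pentagon counit_left counit_right id_eps_id_Phi
  by (simp add: inv3_Phi) (simp add: H_unit_sec H_Phi_sec sec1_V1 sec3_V3)

end




context qa
begin

abbreviation "SH \<equiv> lin_map BB smH"

lemma kS_nz: "y \<in> XX \<Longrightarrow> k \<in> GG \<Longrightarrow> kS y k \<noteq> 0"
  by (simp add: kS_def coc_nz)
lemma kS_one [simp]: "y \<in> XX \<Longrightarrow> kS y eG = 1"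
  by (simp add: kS_def)

lemma S_closed: "SH u (y, k) = (if y \<in> XX \<and> k \<in> GG then kS y k * u (inv\<^bsub>X\<^esub> (act k y), inv\<^bsub>G\<^esub> k) else 0)"
  by (rule lin_map_closed)

definition TH :: "('x \<times> 'g \<Rightarrow> 'k) \<Rightarrow> 'x \<times> 'g \<Rightarrow> 'k" where
  "TH v = (\<lambda>(x, g). if x \<in> XX \<and> g \<in> GG then
     inverse (kS (inv\<^bsub>X\<^esub> (act g x)) (inv\<^bsub>G\<^esub> g)) * v (inv\<^bsub>X\<^esub> (act g x), inv\<^bsub>G\<^esub> g) else 0)"

lemma S_bij: "bij_betw SH (V1 BB) (V1 BB)"
proof (rule bij_betw_byWitness[where f'=TH])
  show "\<forall>a\<in>V1 BB. TH (SH a) = a"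
  proof
    fix a :: "'x \<times> 'g \<Rightarrow> 'k" assume a: "a \<in> V1 BB"
    show "TH (SH a) = a"
    proof
      fix p :: "'x \<times> 'g"
      obtain x g where p: "p = (x, g)" by (cases p)
      show "TH (SH a) p = a p"
        using a kS_nz[of "inv\<^bsub>X\<^esub> (act g x)" "inv\<^bsub>G\<^esub> g"]
        by (auto simp: p TH_def S_closed V1_def)
    qed
  qed
  show "\<forall>a\<in>V1 BB. SH (TH a) = a"
  proof
    fix a :: "'x \<times> 'g \<Rightarrow> 'k" assume a: "a \<in> V1 BB"
    show "SH (TH a) = a"
    proof
      fix p :: "'x \<times> 'g"
      obtain y k where p: "p = (y, k)" by (cases p)
      show "SH (TH a) p = a p"
        using a kS_nz[of y k]
        by (auto simp: p TH_def S_closed V1_def)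
    qed
  qed
  show "SH ` V1 BB \<subseteq> V1 BB" by (auto simp: V1_def lin_map_def ext0_def)
  show "TH ` V1 BB \<subseteq> V1 BB" by (auto simp: V1_def TH_def)
qed

lemma S_unit: "SH unH = unH"
proof
  fix p :: "'x \<times> 'g"
  obtain y k where p: "p = (y, k)" by (cases p)
  show "SH unH p = unH p" by (auto simp: p S_closed H_unit_sec sec1_apply)
qed

lemma S_bvec:
  assumes "x \<in> XX" "g \<in> GG"
  shows "SH (bvec (x, g)) = sec1 (\<lambda>y. if y = act g (inv\<^bsub>X\<^esub> x) then kS y (inv\<^bsub>G\<^esub> g) else 0) (\<lambda>_. inv\<^bsub>G\<^esub> g)"
proof
  fix p :: "'x \<times> 'g"
  obtain y k where p: "p = (y, k)" by (cases p)
  have e1: "k \<in> GG \<Longrightarrow> (inv\<^bsub>G\<^esub> k = g) = (k = inv\<^bsub>G\<^esub> g)" using assms by auto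
  have e2: "y \<in> XX \<Longrightarrow> k = inv\<^bsub>G\<^esub> g \<Longrightarrow> (inv\<^bsub>X\<^esub> (act k y) = x) = (y = act g (inv\<^bsub>X\<^esub> x))"
    using assms by auto
  show "SH (bvec (x, g)) p = sec1 (\<lambda>y. if y = act g (inv\<^bsub>X\<^esub> x) then kS y (inv\<^bsub>G\<^esub> g) else 0) (\<lambda>_. inv\<^bsub>G\<^esub> g) p"
    using e1 e2 assms by (auto simp: p S_closed sec1_apply bvec_def)
qed

lemma S_coef:
  assumes y: "y \<in> XX" and a: "a \<in> GG" and b: "b \<in> GG"
  shows "kS y a * inverse (\<gamma> (inv\<^bsub>G\<^esub> a \<otimes>\<^bsub>G\<^esub> inv\<^bsub>G\<^esub> b) b (inv\<^bsub>X\<^esub> (act a y))) =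
    kS y (b \<otimes>\<^bsub>G\<^esub> a) * (kS (act b (act a y)) (inv\<^bsub>G\<^esub> b) * inverse (\<gamma> (inv\<^bsub>G\<^esub> b) (b \<otimes>\<^bsub>G\<^esub> a) y))"
proof -
  define Y where "Y = act a y"
  define g' where "g' = inv\<^bsub>G\<^esub> a \<otimes>\<^bsub>G\<^esub> inv\<^bsub>G\<^esub> b"
  have Y: "Y \<in> XX" using y a by (simp add: Y_def)
  have g': "g' \<in> GG" using a b by (simp add: g'_def)
  have yY: "y = act (inv\<^bsub>G\<^esub> a) Y" using y a by (simp add: Y_def)
  have g'b: "g' \<otimes>\<^bsub>G\<^esub> b = inv\<^bsub>G\<^esub> a" using a b by (simp add: g'_def Gp.m_assoc)
  have ag': "a \<otimes>\<^bsub>G\<^esub> g' = inv\<^bsub>G\<^esub> b" using a b by (simp add: g'_def Gp.m_assoc[symmetric])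
  have bag': "b \<otimes>\<^bsub>G\<^esub> a \<otimes>\<^bsub>G\<^esub> g' = eG" using a b unfolding g'_def
    by (metis Gp.inv_mult_group Gp.m_closed Gp.r_inv)
  have iba: "inv\<^bsub>G\<^esub> (b \<otimes>\<^bsub>G\<^esub> a) = g'" using a b by (simp add: g'_def Gp.inv_mult_group)
  have F1: "\<gamma> g' b (inv\<^bsub>X\<^esub> Y) * \<gamma> g' b Y * \<mu> (inv\<^bsub>G\<^esub> a) (inv\<^bsub>X\<^esub> Y) Y =
      \<mu> g' (inv\<^bsub>X\<^esub> (act b Y)) (act b Y) * \<mu> b (inv\<^bsub>X\<^esub> Y) Y"
  proof -
    have "(\<gamma> g' b (inv\<^bsub>X\<^esub> Y) * \<gamma> g' b Y) / \<gamma> g' b (inv\<^bsub>X\<^esub> Y \<otimes>\<^bsub>X\<^esub> Y)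
        = (\<mu> g' (act b (inv\<^bsub>X\<^esub> Y)) (act b Y) * \<mu> b (inv\<^bsub>X\<^esub> Y) Y) / \<mu> (g' \<otimes>\<^bsub>G\<^esub> b) (inv\<^bsub>X\<^esub> Y) Y"
      by (rule cocD[OF g' b _ Y]) (use Y in simp)
    moreover have "\<mu> (inv\<^bsub>G\<^esub> a) (inv\<^bsub>X\<^esub> Y) Y \<noteq> 0" using a Y by (simp add: coc_nz)
    ultimately show ?thesis using Y b g' by (simp add: g'b field_simps)
  qed
  have F2: "\<gamma> (b \<otimes>\<^bsub>G\<^esub> a) g' (act b Y) = \<gamma> a g' (act b Y) * \<gamma> (inv\<^bsub>G\<^esub> b) (b \<otimes>\<^bsub>G\<^esub> a) y"
  proof -
    have "\<gamma> (b \<otimes>\<^bsub>G\<^esub> a) g' (act b Y) * \<gamma> (inv\<^bsub>G\<^esub> b) (b \<otimes>\<^bsub>G\<^esub> a \<otimes>\<^bsub>G\<^esub> g') (act b Y) =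
        \<gamma> (inv\<^bsub>G\<^esub> b \<otimes>\<^bsub>G\<^esub> (b \<otimes>\<^bsub>G\<^esub> a)) g' (act b Y) * \<gamma> (inv\<^bsub>G\<^esub> b) (b \<otimes>\<^bsub>G\<^esub> a) (act g' (act b Y))"
      by (rule cocB) (use a b g' Y in simp_all)
    moreover have "inv\<^bsub>G\<^esub> b \<otimes>\<^bsub>G\<^esub> (b \<otimes>\<^bsub>G\<^esub> a) = a" using a b by (simp add: Gp.m_assoc[symmetric])
    moreover have "act g' (act b Y) = y" using a b Y yY g' act_mult[of g' b Y] by (simp add: g'b)
    ultimately show ?thesis using bag' Y b g' by simp
  qed
  have F3: "\<gamma> g' b Y * \<gamma> a (inv\<^bsub>G\<^esub> a) Y = \<gamma> (inv\<^bsub>G\<^esub> b) b Y * \<gamma> a g' (act b Y)"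
    using cocB[OF a g' b Y] by (simp add: g'b ag')
  have nz: "\<gamma> g' b (inv\<^bsub>X\<^esub> Y) \<noteq> 0" "\<gamma> g' b Y \<noteq> 0" "\<mu> (inv\<^bsub>G\<^esub> a) (inv\<^bsub>X\<^esub> Y) Y \<noteq> 0"
    "\<mu> g' (inv\<^bsub>X\<^esub> (act b Y)) (act b Y) \<noteq> 0" "\<mu> b (inv\<^bsub>X\<^esub> Y) Y \<noteq> 0"
    "\<gamma> (inv\<^bsub>G\<^esub> b) (b \<otimes>\<^bsub>G\<^esub> a) y \<noteq> 0" "\<gamma> a g' (act b Y) \<noteq> 0"
    using a b g' Y y by (simp_all add: coc_nz)
  have L: "kS y a * inverse (\<gamma> (inv\<^bsub>G\<^esub> a \<otimes>\<^bsub>G\<^esub> inv\<^bsub>G\<^esub> b) b (inv\<^bsub>X\<^esub> (act a y))) =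
     \<gamma> a (inv\<^bsub>G\<^esub> a) Y / (\<mu> (inv\<^bsub>G\<^esub> a) (inv\<^bsub>X\<^esub> Y) Y * \<gamma> g' b (inv\<^bsub>X\<^esub> Y))"
    by (simp add: kS_def Y_def g'_def divide_inverse ac_simps)
  have R: "kS y (b \<otimes>\<^bsub>G\<^esub> a) * (kS (act b (act a y)) (inv\<^bsub>G\<^esub> b) * inverse (\<gamma> (inv\<^bsub>G\<^esub> b) (b \<otimes>\<^bsub>G\<^esub> a) y)) =
     \<gamma> (b \<otimes>\<^bsub>G\<^esub> a) g' (act b Y) / \<mu> g' (inv\<^bsub>X\<^esub> (act b Y)) (act b Y) *
     (\<gamma> (inv\<^bsub>G\<^esub> b) b Y / \<mu> b (inv\<^bsub>X\<^esub> Y) Y * inverse (\<gamma> (inv\<^bsub>G\<^esub> b) (b \<otimes>\<^bsub>G\<^esub> a) y))"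
    using a b y by (simp add: kS_def Y_def iba act_mult)
  show ?thesis unfolding L R F2
  proof -
    have "\<gamma> a (inv\<^bsub>G\<^esub> a) Y * (\<mu> g' (inv\<^bsub>X\<^esub> (act b Y)) (act b Y) * \<mu> b (inv\<^bsub>X\<^esub> Y) Y) =
        \<gamma> a (inv\<^bsub>G\<^esub> a) Y * (\<gamma> g' b (inv\<^bsub>X\<^esub> Y) * \<gamma> g' b Y * \<mu> (inv\<^bsub>G\<^esub> a) (inv\<^bsub>X\<^esub> Y) Y)"
      by (simp add: F1)
    also have "\<dots> = (\<gamma> g' b Y * \<gamma> a (inv\<^bsub>G\<^esub> a) Y) * (\<gamma> g' b (inv\<^bsub>X\<^esub> Y) * \<mu> (inv\<^bsub>G\<^esub> a) (inv\<^bsub>X\<^esub> Y) Y)"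
      by (simp add: ac_simps)
    also have "\<dots> = (\<gamma> (inv\<^bsub>G\<^esub> b) b Y * \<gamma> a g' (act b Y)) * (\<gamma> g' b (inv\<^bsub>X\<^esub> Y) * \<mu> (inv\<^bsub>G\<^esub> a) (inv\<^bsub>X\<^esub> Y) Y)"
      by (simp add: F3)
    finally have E: "\<gamma> a (inv\<^bsub>G\<^esub> a) Y * (\<mu> g' (inv\<^bsub>X\<^esub> (act b Y)) (act b Y) * \<mu> b (inv\<^bsub>X\<^esub> Y) Y) =
        (\<gamma> (inv\<^bsub>G\<^esub> b) b Y * \<gamma> a g' (act b Y)) * (\<gamma> g' b (inv\<^bsub>X\<^esub> Y) * \<mu> (inv\<^bsub>G\<^esub> a) (inv\<^bsub>X\<^esub> Y) Y)" .
    show "\<gamma> a (inv\<^bsub>G\<^esub> a) Y / (\<mu> (inv\<^bsub>G\<^esub> a) (inv\<^bsub>X\<^esub> Y) Y * \<gamma> g' b (inv\<^bsub>X\<^esub> Y)) =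
     \<gamma> a g' (act b Y) * \<gamma> (inv\<^bsub>G\<^esub> b) (b \<otimes>\<^bsub>G\<^esub> a) y / \<mu> g' (inv\<^bsub>X\<^esub> (act b Y)) (act b Y) *
     (\<gamma> (inv\<^bsub>G\<^esub> b) b Y / \<mu> b (inv\<^bsub>X\<^esub> Y) Y * inverse (\<gamma> (inv\<^bsub>G\<^esub> b) (b \<otimes>\<^bsub>G\<^esub> a) y))"
      using E nz by (simp add: field_simps)
  qed
qed

lemma sum_G_rshift:
  assumes "k \<in> GG"
  shows "(\<Sum>h'\<in>GG. F h') = (\<Sum>h\<in>GG. F (h \<otimes>\<^bsub>G\<^esub> k))"
  by (rule sum.reindex_bij_witness[where j="\<lambda>h'. h' \<otimes>\<^bsub>G\<^esub> inv\<^bsub>G\<^esub> k" and i="\<lambda>h. h \<otimes>\<^bsub>G\<^esub> k"])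
     (use assms in \<open>auto simp: Gp.m_assoc\<close>)

lemma S_anti: "SH (mul1 BB sc u v) = mul1 BB sc (SH v) (SH u)"
proof
  fix p :: "'x \<times> 'g"
  obtain y k where p: "p = (y, k)" by (cases p)
  show "SH (mul1 BB sc u v) p = mul1 BB sc (SH v) (SH u) p"
  proof (cases "y \<in> XX \<and> k \<in> GG")
    case False
    thus ?thesis by (auto simp: p S_closed mul1_out)
  next
    case True
    hence y: "y \<in> XX" and k: "k \<in> GG" by auto
    have "SH (mul1 BB sc u v) p = (\<Sum>h\<in>GG. kS y k * (v (inv\<^bsub>X\<^esub> (act k y), h) *
       (u (act h (inv\<^bsub>X\<^esub> (act k y)), inv\<^bsub>G\<^esub> k \<otimes>\<^bsub>G\<^esub> inv\<^bsub>G\<^esub> h) *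
        inverse (\<gamma> (inv\<^bsub>G\<^esub> k \<otimes>\<^bsub>G\<^esub> inv\<^bsub>G\<^esub> h) h (inv\<^bsub>X\<^esub> (act k y))))))"
      using y k by (simp add: p S_closed mul1_closed sum_distrib_left)
    also have "\<dots> = (\<Sum>h\<in>GG. SH u (y, h \<otimes>\<^bsub>G\<^esub> k) * (SH v (act (h \<otimes>\<^bsub>G\<^esub> k) y, k \<otimes>\<^bsub>G\<^esub> inv\<^bsub>G\<^esub> (h \<otimes>\<^bsub>G\<^esub> k)) *
       inverse (\<gamma> (k \<otimes>\<^bsub>G\<^esub> inv\<^bsub>G\<^esub> (h \<otimes>\<^bsub>G\<^esub> k)) (h \<otimes>\<^bsub>G\<^esub> k) y)))"
    proof (intro sum.cong refl)
      fix h assume h: "h \<in> GG"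
      have e1: "k \<otimes>\<^bsub>G\<^esub> inv\<^bsub>G\<^esub> (h \<otimes>\<^bsub>G\<^esub> k) = inv\<^bsub>G\<^esub> h"
        using h k by (simp add: Gp.inv_mult_group Gp.m_assoc[symmetric])
      have e2: "act (inv\<^bsub>G\<^esub> h) (act (h \<otimes>\<^bsub>G\<^esub> k) y) = act k y" using h k y by (simp add: act_mult)
      have e3: "inv\<^bsub>G\<^esub> (h \<otimes>\<^bsub>G\<^esub> k) = inv\<^bsub>G\<^esub> k \<otimes>\<^bsub>G\<^esub> inv\<^bsub>G\<^esub> h" using h k by (simp add: Gp.inv_mult_group)
      have e4: "act h (inv\<^bsub>X\<^esub> (act k y)) = inv\<^bsub>X\<^esub> (act (h \<otimes>\<^bsub>G\<^esub> k) y)" using h k y by (simp add: act_mult)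
      note c = S_coef[OF y k h]
      show "kS y k * (v (inv\<^bsub>X\<^esub> (act k y), h) *
       (u (act h (inv\<^bsub>X\<^esub> (act k y)), inv\<^bsub>G\<^esub> k \<otimes>\<^bsub>G\<^esub> inv\<^bsub>G\<^esub> h) *
        inverse (\<gamma> (inv\<^bsub>G\<^esub> k \<otimes>\<^bsub>G\<^esub> inv\<^bsub>G\<^esub> h) h (inv\<^bsub>X\<^esub> (act k y))))) =
        SH u (y, h \<otimes>\<^bsub>G\<^esub> k) * (SH v (act (h \<otimes>\<^bsub>G\<^esub> k) y, k \<otimes>\<^bsub>G\<^esub> inv\<^bsub>G\<^esub> (h \<otimes>\<^bsub>G\<^esub> k)) *
       inverse (\<gamma> (k \<otimes>\<^bsub>G\<^esub> inv\<^bsub>G\<^esub> (h \<otimes>\<^bsub>G\<^esub> k)) (h \<otimes>\<^bsub>G\<^esub> k) y))"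
      proof -
        have "kS y k * (v (inv\<^bsub>X\<^esub> (act k y), h) *
           (u (act h (inv\<^bsub>X\<^esub> (act k y)), inv\<^bsub>G\<^esub> k \<otimes>\<^bsub>G\<^esub> inv\<^bsub>G\<^esub> h) *
            inverse (\<gamma> (inv\<^bsub>G\<^esub> k \<otimes>\<^bsub>G\<^esub> inv\<^bsub>G\<^esub> h) h (inv\<^bsub>X\<^esub> (act k y))))) =
          (kS y k * inverse (\<gamma> (inv\<^bsub>G\<^esub> k \<otimes>\<^bsub>G\<^esub> inv\<^bsub>G\<^esub> h) h (inv\<^bsub>X\<^esub> (act k y)))) *
          (v (inv\<^bsub>X\<^esub> (act k y), h) * u (inv\<^bsub>X\<^esub> (act (h \<otimes>\<^bsub>G\<^esub> k) y), inv\<^bsub>G\<^esub> (h \<otimes>\<^bsub>G\<^esub> k)))"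
          by (simp add: e3 e4 ac_simps)
        also have "\<dots> = (kS y (h \<otimes>\<^bsub>G\<^esub> k) * (kS (act h (act k y)) (inv\<^bsub>G\<^esub> h) * inverse (\<gamma> (inv\<^bsub>G\<^esub> h) (h \<otimes>\<^bsub>G\<^esub> k) y))) *
          (v (inv\<^bsub>X\<^esub> (act k y), h) * u (inv\<^bsub>X\<^esub> (act (h \<otimes>\<^bsub>G\<^esub> k) y), inv\<^bsub>G\<^esub> (h \<otimes>\<^bsub>G\<^esub> k)))"
          by (simp only: c)
        also have "\<dots> = SH u (y, h \<otimes>\<^bsub>G\<^esub> k) * (SH v (act (h \<otimes>\<^bsub>G\<^esub> k) y, k \<otimes>\<^bsub>G\<^esub> inv\<^bsub>G\<^esub> (h \<otimes>\<^bsub>G\<^esub> k)) *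
           inverse (\<gamma> (k \<otimes>\<^bsub>G\<^esub> inv\<^bsub>G\<^esub> (h \<otimes>\<^bsub>G\<^esub> k)) (h \<otimes>\<^bsub>G\<^esub> k) y))"
          unfolding e1 S_closed using h k y e2 by (simp add: act_mult ac_simps)
        finally show ?thesis .
      qed
    qed
    also have "\<dots> = mul1 BB sc (SH v) (SH u) p"
      unfolding p mul1_closed[OF y k] by (rule sum_G_rshift[OF k, symmetric])
    finally show ?thesis .
  qed
qed

lemma sum_BB: "(\<Sum>i\<in>BB. f i) = (\<Sum>x\<in>XX. \<Sum>g\<in>GG. f (x, g))"
  by (simp add: BB_eq sum.cartesian_product)

lemma sum_Delta:
  "(\<Sum>i\<in>BB. \<Sum>j\<in>BB. Delta BB dcH a (i, j) * F i j) =
   (\<Sum>g\<in>GG. \<Sum>x\<in>XX. \<Sum>y\<in>XX. a (x \<otimes>\<^bsub>X\<^esub> y, g) * \<mu> g x y * F (x, g) (y, g))"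
proof -
  have "(\<Sum>i\<in>BB. \<Sum>j\<in>BB. Delta BB dcH a (i, j) * F i j) =
     (\<Sum>x\<in>XX. \<Sum>g\<in>GG. \<Sum>y\<in>XX. \<Sum>h\<in>GG. Delta BB dcH a ((x, g), (y, h)) * F (x, g) (y, h))"
    by (simp add: sum_BB)
  also have "\<dots> = (\<Sum>x\<in>XX. \<Sum>g\<in>GG. \<Sum>y\<in>XX. a (x \<otimes>\<^bsub>X\<^esub> y, g) * \<mu> g x y * F (x, g) (y, g))"
  proof (intro sum.cong refl)
    fix x g y assume "x \<in> XX" "g \<in> GG" "y \<in> XX"
    thus "(\<Sum>h\<in>GG. Delta BB dcH a ((x, g), (y, h)) * F (x, g) (y, h)) = a (x \<otimes>\<^bsub>X\<^esub> y, g) * \<mu> g x y * F (x, g) (y, g)"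
      by (subst sum_single[where t=g]) (auto simp: finG Delta_closed)
  qed
  also have "\<dots> = (\<Sum>g\<in>GG. \<Sum>x\<in>XX. \<Sum>y\<in>XX. a (x \<otimes>\<^bsub>X\<^esub> y, g) * \<mu> g x y * F (x, g) (y, g))"
    by (rule sum.swap)
  finally show ?thesis .
qed

lemma act_eq_act [simp]: "g \<in> GG \<Longrightarrow> a \<in> XX \<Longrightarrow> b \<in> XX \<Longrightarrow> (act g a = act g b) = (a = b)"
  by (metis act_inv_act)
lemma act_eq_inv_act [simp]: "g \<in> GG \<Longrightarrow> a \<in> XX \<Longrightarrow> b \<in> XX \<Longrightarrow> (act g a = inv\<^bsub>X\<^esub> (act g b)) = (a = inv\<^bsub>X\<^esub> b)"
  by (metis act_inv act_eq_act Xp.inv_closed)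

lemma SH_V1: "SH u \<in> V1 BB" by (simp add: lin_map_def ext0_def V1_def)

lemma antipode_T1:
  assumes "x \<in> XX" "g \<in> GG" "y \<in> XX"
  shows "mul1 BB sc (mul1 BB sc (SH (bvec (x, g))) unH) (bvec (y, g)) (z, m) =
    (if z \<in> XX \<and> m \<in> GG \<and> m = eG \<and> x = inv\<^bsub>X\<^esub> z \<and> y = z then
       kS (act g z) (inv\<^bsub>G\<^esub> g) * inverse (\<gamma> (inv\<^bsub>G\<^esub> g) g z) else 0)"
  unfolding mul1_runit_H[OF SH_V1] unfolding S_bvec[OF assms(1,2)] bvec_sec[OF assms(3,2)]
  by (subst sec1_mul) (use assms in \<open>auto simp: sec1_apply\<close>)

lemma antipode1:
  assumes a: "a \<in> V1 BB"
  shows "(\<lambda>p. \<Sum>i\<in>BB. \<Sum>j\<in>BB. Delta BB dcH a (i, j) *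
            mul1 BB sc (mul1 BB sc (SH (bvec i)) unH) (bvec j) p) = smult1 (eps BB epH a) unH"
proof
  fix p :: "'x \<times> 'g"
  obtain z m where p: "p = (z, m)" by (cases p)
  have "(\<Sum>i\<in>BB. \<Sum>j\<in>BB. Delta BB dcH a (i, j) * mul1 BB sc (mul1 BB sc (SH (bvec i)) unH) (bvec j) p) =
     (\<Sum>g\<in>GG. \<Sum>x\<in>XX. \<Sum>y\<in>XX. a (x \<otimes>\<^bsub>X\<^esub> y, g) * \<mu> g x y *
        mul1 BB sc (mul1 BB sc (SH (bvec (x, g))) unH) (bvec (y, g)) p)"
    by (rule sum_Delta)
  also have "\<dots> = (\<Sum>g\<in>GG. \<Sum>x\<in>XX. \<Sum>y\<in>XX. a (x \<otimes>\<^bsub>X\<^esub> y, g) * \<mu> g x y *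
       (if z \<in> XX \<and> m \<in> GG \<and> m = eG \<and> x = inv\<^bsub>X\<^esub> z \<and> y = z then
       kS (act g z) (inv\<^bsub>G\<^esub> g) * inverse (\<gamma> (inv\<^bsub>G\<^esub> g) g z) else 0))"
    unfolding p by (intro sum.cong refl) (simp add: antipode_T1)
  also have "\<dots> = (if z \<in> XX \<and> m = eG then (\<Sum>g\<in>GG. a (eX, g)) else 0)"
  proof (cases "z \<in> XX \<and> m = eG")
    case True
    hence z: "z \<in> XX" and me: "m = eG" by auto
    have "(\<Sum>g\<in>GG. \<Sum>x\<in>XX. \<Sum>y\<in>XX. a (x \<otimes>\<^bsub>X\<^esub> y, g) * \<mu> g x y *
       (if z \<in> XX \<and> m \<in> GG \<and> m = eG \<and> x = inv\<^bsub>X\<^esub> z \<and> y = z then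
       kS (act g z) (inv\<^bsub>G\<^esub> g) * inverse (\<gamma> (inv\<^bsub>G\<^esub> g) g z) else 0)) =
       (\<Sum>g\<in>GG. a (eX, g))"
    proof (intro sum.cong refl)
      fix g assume g: "g \<in> GG"
      have c: "\<mu> g (inv\<^bsub>X\<^esub> z) z * (kS (act g z) (inv\<^bsub>G\<^esub> g) * inverse (\<gamma> (inv\<^bsub>G\<^esub> g) g z)) = 1"
        using g z by (simp add: kS_def coc_nz)
      show "(\<Sum>x\<in>XX. \<Sum>y\<in>XX. a (x \<otimes>\<^bsub>X\<^esub> y, g) * \<mu> g x y *
       (if z \<in> XX \<and> m \<in> GG \<and> m = eG \<and> x = inv\<^bsub>X\<^esub> z \<and> y = z then
       kS (act g z) (inv\<^bsub>G\<^esub> g) * inverse (\<gamma> (inv\<^bsub>G\<^esub> g) g z) else 0)) = a (eX, g)"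
      proof -
        have pw: "\<And>x y. x \<in> XX \<Longrightarrow> y \<in> XX \<Longrightarrow> a (x \<otimes>\<^bsub>X\<^esub> y, g) * \<mu> g x y *
         (if z \<in> XX \<and> m \<in> GG \<and> m = eG \<and> x = inv\<^bsub>X\<^esub> z \<and> y = z then
         kS (act g z) (inv\<^bsub>G\<^esub> g) * inverse (\<gamma> (inv\<^bsub>G\<^esub> g) g z) else 0) =
         (if x = inv\<^bsub>X\<^esub> z then (if y = z then a (eX, g) else 0) else 0)"
          using z me g c by (auto simp: mult.assoc)
        have "(\<Sum>x\<in>XX. \<Sum>y\<in>XX. a (x \<otimes>\<^bsub>X\<^esub> y, g) * \<mu> g x y *
         (if z \<in> XX \<and> m \<in> GG \<and> m = eG \<and> x = inv\<^bsub>X\<^esub> z \<and> y = z then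
         kS (act g z) (inv\<^bsub>G\<^esub> g) * inverse (\<gamma> (inv\<^bsub>G\<^esub> g) g z) else 0)) =
         (\<Sum>x\<in>XX. \<Sum>y\<in>XX. (if x = inv\<^bsub>X\<^esub> z then (if y = z then a (eX, g) else 0) else 0))"
          by (intro sum.cong refl pw)
        also have "\<dots> = (\<Sum>y\<in>XX. (if y = z then a (eX, g) else 0))"
          by (subst sum_single[where t="inv\<^bsub>X\<^esub> z"]) (use z finX in auto)
        also have "\<dots> = a (eX, g)" using z finX by simp
        finally show ?thesis .
      qed
    qed
    thus ?thesis using True by simp
  next
    case False
    thus ?thesis by (auto intro!: sum.neutral)
  qed
  also have "\<dots> = smult1 (eps BB epH a) unH p"
    by (auto simp: p smult1_def eps_closed H_unit_sec sec1_apply)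
  finally show "(\<Sum>i\<in>BB. \<Sum>j\<in>BB. Delta BB dcH a (i, j) * mul1 BB sc (mul1 BB sc (SH (bvec i)) unH) (bvec j) p) =
     smult1 (eps BB epH a) unH p" .
qed

abbreviation "beH \<equiv> H_beta G X \<omega>"

lemma X_inv_eq: "a \<in> XX \<Longrightarrow> b \<in> XX \<Longrightarrow> (inv\<^bsub>X\<^esub> a = b) = (a = inv\<^bsub>X\<^esub> b)"
  by auto

lemma Phi_T:
  assumes "x \<in> XX" "y \<in> XX" "z \<in> XX"
  shows "mul1 BB sc (mul1 BB sc (mul1 BB sc (mul1 BB sc (bvec (x, eG)) beH) (SH (bvec (y, eG)))) unH) (bvec (z, eG)) (w, m) =
     (if w \<in> XX \<and> m = eG \<and> w = x \<and> w = inv\<^bsub>X\<^esub> y \<and> w = z then \<omega> (inv\<^bsub>X\<^esub> x) x (inv\<^bsub>X\<^esub> x) else 0)"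
  unfolding S_bvec[OF assms(2) Gp.one_closed]
  using assms by (simp add: bvec_sec H_beta_sec S_bvec sec1_mul sec1_V1 mul1_runit_H sec1_apply)

lemma Psi_T:
  assumes "x \<in> XX" "y \<in> XX" "z \<in> XX"
  shows "mul1 BB sc (mul1 BB sc (mul1 BB sc (mul1 BB sc (SH (bvec (x, eG))) unH) (bvec (y, eG))) beH) (SH (bvec (z, eG))) (w, m) =
     (if w \<in> XX \<and> m = eG \<and> w = inv\<^bsub>X\<^esub> x \<and> w = y \<and> w = inv\<^bsub>X\<^esub> z then \<omega> (inv\<^bsub>X\<^esub> y) y (inv\<^bsub>X\<^esub> y) else 0)"
  unfolding S_bvec[OF assms(1) Gp.one_closed] S_bvec[OF assms(3) Gp.one_closed]
  using assms by (auto simp: bvec_sec H_beta_sec S_bvec sec1_mul sec1_V1 mul1_runit_H sec1_apply X_inv_eq)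

lemma antipode_T2:
  assumes "x \<in> XX" "g \<in> GG" "y \<in> XX"
  shows "mul1 BB sc (mul1 BB sc (bvec (x, g)) beH) (SH (bvec (y, g))) (z, m) =
    (if z \<in> XX \<and> m \<in> GG \<and> m = eG \<and> x = act (inv\<^bsub>G\<^esub> g) z \<and> y = inv\<^bsub>X\<^esub> x then
       \<omega> (inv\<^bsub>X\<^esub> x) x (inv\<^bsub>X\<^esub> x) * kS z (inv\<^bsub>G\<^esub> g) * inverse (\<gamma> g (inv\<^bsub>G\<^esub> g) z) else 0)"
  unfolding S_bvec[OF assms(3,2)]
  using assms by (auto simp: bvec_sec H_beta_sec S_bvec sec1_mul sec1_V1 sec1_apply)

lemma omega_inv_id: "w \<in> XX \<Longrightarrow> \<omega> w (inv\<^bsub>X\<^esub> w) w * \<omega> (inv\<^bsub>X\<^esub> w) w (inv\<^bsub>X\<^esub> w) = 1"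
  using cocA[of w "inv\<^bsub>X\<^esub> w" w "inv\<^bsub>X\<^esub> w"] by (simp add: ac_simps)

lemma beta_coef:
  assumes g: "g \<in> GG" and x: "x \<in> XX"
  shows "\<mu> g x (inv\<^bsub>X\<^esub> x) * (\<omega> (inv\<^bsub>X\<^esub> x) x (inv\<^bsub>X\<^esub> x) * kS (act g x) (inv\<^bsub>G\<^esub> g) *
      inverse (\<gamma> g (inv\<^bsub>G\<^esub> g) (act g x))) = \<omega> (inv\<^bsub>X\<^esub> (act g x)) (act g x) (inv\<^bsub>X\<^esub> (act g x))"
proof -
  have G1: "\<gamma> (inv\<^bsub>G\<^esub> g) g x = \<gamma> g (inv\<^bsub>G\<^esub> g) (act g x)"
    using cocB[of g "inv\<^bsub>G\<^esub> g" g x] g x by simp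
  have C1: "(\<mu> g x (inv\<^bsub>X\<^esub> x) * \<mu> g (inv\<^bsub>X\<^esub> x) (x \<otimes>\<^bsub>X\<^esub> inv\<^bsub>X\<^esub> x)) /
      (\<mu> g (inv\<^bsub>X\<^esub> x \<otimes>\<^bsub>X\<^esub> x) (inv\<^bsub>X\<^esub> x) * \<mu> g (inv\<^bsub>X\<^esub> x) x) =
      \<omega> (act g (inv\<^bsub>X\<^esub> x)) (act g x) (act g (inv\<^bsub>X\<^esub> x)) / \<omega> (inv\<^bsub>X\<^esub> x) x (inv\<^bsub>X\<^esub> x)"
    by (rule cocC) (use g x in simp_all)
  hence C2: "\<mu> g x (inv\<^bsub>X\<^esub> x) / \<mu> g (inv\<^bsub>X\<^esub> x) x =
      \<omega> (inv\<^bsub>X\<^esub> (act g x)) (act g x) (inv\<^bsub>X\<^esub> (act g x)) / \<omega> (inv\<^bsub>X\<^esub> x) x (inv\<^bsub>X\<^esub> x)"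
    using g x by simp
  have nz: "\<mu> g (inv\<^bsub>X\<^esub> x) x \<noteq> 0" "\<omega> (inv\<^bsub>X\<^esub> x) x (inv\<^bsub>X\<^esub> x) \<noteq> 0" "\<gamma> g (inv\<^bsub>G\<^esub> g) (act g x) \<noteq> 0"
    using g x by (simp_all add: coc_nz)
  have K: "kS (act g x) (inv\<^bsub>G\<^esub> g) = \<gamma> g (inv\<^bsub>G\<^esub> g) (act g x) / \<mu> g (inv\<^bsub>X\<^esub> x) x"
    using g x by (simp add: kS_def G1)
  show ?thesis unfolding K using C2 nz by (simp add: field_simps)
qed

lemma sum_sec3E:
  "(\<Sum>(i, j, k)\<in>BB \<times> BB \<times> BB. sec3 cf (\<lambda>_. eG) (\<lambda>_. eG) (\<lambda>_. eG) (i, j, k) * F i j k) =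
   (\<Sum>(x, y, z)\<in>XX \<times> XX \<times> XX. cf (x, y, z) * F (x, eG) (y, eG) (z, eG))"
  apply (subst sum_support_reindex[where \<phi>="\<lambda>(x, y, z). ((x, eG), (y, eG), (z, eG))" and A="XX \<times> XX \<times> XX"])
  using finBB by (auto simp: inj_on_def sec3_apply image_iff split_def intro!: sum.cong)

lemma Phi_axiom:
  "(\<lambda>p. \<Sum>(i, j, k)\<in>BB \<times> BB \<times> BB.
      PhiH (i, j, k) * mul1 BB sc (mul1 BB sc (mul1 BB sc (mul1 BB sc (bvec i) beH) (SH (bvec j))) unH) (bvec k) p) = unH"
proof
  fix p :: "'x \<times> 'g"
  obtain w m where p: "p = (w, m)" by (cases p)
  have "(\<Sum>(i, j, k)\<in>BB \<times> BB \<times> BB.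
      PhiH (i, j, k) * mul1 BB sc (mul1 BB sc (mul1 BB sc (mul1 BB sc (bvec i) beH) (SH (bvec j))) unH) (bvec k) p) =
     (\<Sum>(x, y, z)\<in>XX \<times> XX \<times> XX. \<omega> x y z *
       (if w \<in> XX \<and> m = eG \<and> w = x \<and> w = inv\<^bsub>X\<^esub> y \<and> w = z then \<omega> (inv\<^bsub>X\<^esub> x) x (inv\<^bsub>X\<^esub> x) else 0))"
    unfolding H_Phi_sec sum_sec3E p by (intro sum.cong refl) (auto simp: Phi_T)
  also have "\<dots> = unH p"
  proof (cases "w \<in> XX \<and> m = eG")
    case True
    show ?thesis
      by (subst sum_single[where t="(w, inv\<^bsub>X\<^esub> w, w)"])
         (use True finX omega_inv_id[of w] in \<open>auto simp: p H_unit_sec sec1_apply X_inv_eq split: if_splits\<close>)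
  next
    case False thus ?thesis by (auto simp: p H_unit_sec sec1_apply intro!: sum.neutral)
  qed
  finally show "(\<Sum>(i, j, k)\<in>BB \<times> BB \<times> BB.
      PhiH (i, j, k) * mul1 BB sc (mul1 BB sc (mul1 BB sc (mul1 BB sc (bvec i) beH) (SH (bvec j))) unH) (bvec k) p) = unH p" .
qed

lemma Psi_axiom:
  "(\<lambda>p. \<Sum>(i, j, k)\<in>BB \<times> BB \<times> BB.
      PsiH (i, j, k) * mul1 BB sc (mul1 BB sc (mul1 BB sc (mul1 BB sc (SH (bvec i)) unH) (bvec j)) beH) (SH (bvec k)) p) = unH"
proof
  fix p :: "'x \<times> 'g"
  obtain w m where p: "p = (w, m)" by (cases p)
  have "(\<Sum>(i, j, k)\<in>BB \<times> BB \<times> BB.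
      PsiH (i, j, k) * mul1 BB sc (mul1 BB sc (mul1 BB sc (mul1 BB sc (SH (bvec i)) unH) (bvec j)) beH) (SH (bvec k)) p) =
     (\<Sum>(x, y, z)\<in>XX \<times> XX \<times> XX. inverse (\<omega> x y z) *
       (if w \<in> XX \<and> m = eG \<and> w = inv\<^bsub>X\<^esub> x \<and> w = y \<and> w = inv\<^bsub>X\<^esub> z then \<omega> (inv\<^bsub>X\<^esub> y) y (inv\<^bsub>X\<^esub> y) else 0))"
    unfolding PsiH_def sum_sec3E p by (intro sum.cong refl) (auto simp: Psi_T)
  also have "\<dots> = unH p"
  proof (cases "w \<in> XX \<and> m = eG")
    case True
    show ?thesis
      by (subst sum_single[where t="(inv\<^bsub>X\<^esub> w, w, inv\<^bsub>X\<^esub> w)"])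
         (use True finX in \<open>auto simp: p H_unit_sec sec1_apply X_inv_eq coc_nz split: if_splits\<close>)
  next
    case False thus ?thesis by (auto simp: p H_unit_sec sec1_apply intro!: sum.neutral)
  qed
  finally show "(\<Sum>(i, j, k)\<in>BB \<times> BB \<times> BB.
      PsiH (i, j, k) * mul1 BB sc (mul1 BB sc (mul1 BB sc (mul1 BB sc (SH (bvec i)) unH) (bvec j)) beH) (SH (bvec k)) p) = unH p" .
qed

lemma antipode2:
  assumes a: "a \<in> V1 BB"
  shows "(\<lambda>p. \<Sum>i\<in>BB. \<Sum>j\<in>BB. Delta BB dcH a (i, j) *
            mul1 BB sc (mul1 BB sc (bvec i) beH) (SH (bvec j)) p) = smult1 (eps BB epH a) beH"
proof
  fix p :: "'x \<times> 'g"
  obtain z m where p: "p = (z, m)" by (cases p)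
  have "(\<Sum>i\<in>BB. \<Sum>j\<in>BB. Delta BB dcH a (i, j) * mul1 BB sc (mul1 BB sc (bvec i) beH) (SH (bvec j)) p) =
     (\<Sum>g\<in>GG. \<Sum>x\<in>XX. \<Sum>y\<in>XX. a (x \<otimes>\<^bsub>X\<^esub> y, g) * \<mu> g x y *
        mul1 BB sc (mul1 BB sc (bvec (x, g)) beH) (SH (bvec (y, g))) p)"
    by (rule sum_Delta)
  also have "\<dots> = (\<Sum>g\<in>GG. \<Sum>x\<in>XX. \<Sum>y\<in>XX. a (x \<otimes>\<^bsub>X\<^esub> y, g) * \<mu> g x y *
       (if z \<in> XX \<and> m \<in> GG \<and> m = eG \<and> x = act (inv\<^bsub>G\<^esub> g) z \<and> y = inv\<^bsub>X\<^esub> x then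
       \<omega> (inv\<^bsub>X\<^esub> x) x (inv\<^bsub>X\<^esub> x) * kS z (inv\<^bsub>G\<^esub> g) * inverse (\<gamma> g (inv\<^bsub>G\<^esub> g) z) else 0))"
    unfolding p by (intro sum.cong refl) (simp add: antipode_T2)
  also have "\<dots> = (if z \<in> XX \<and> m = eG then (\<Sum>g\<in>GG. a (eX, g)) * \<omega> (inv\<^bsub>X\<^esub> z) z (inv\<^bsub>X\<^esub> z) else 0)"
  proof (cases "z \<in> XX \<and> m = eG")
    case True
    hence z: "z \<in> XX" and me: "m = eG" by auto
    have "(\<Sum>g\<in>GG. \<Sum>x\<in>XX. \<Sum>y\<in>XX. a (x \<otimes>\<^bsub>X\<^esub> y, g) * \<mu> g x y *
       (if z \<in> XX \<and> m \<in> GG \<and> m = eG \<and> x = act (inv\<^bsub>G\<^esub> g) z \<and> y = inv\<^bsub>X\<^esub> x then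
       \<omega> (inv\<^bsub>X\<^esub> x) x (inv\<^bsub>X\<^esub> x) * kS z (inv\<^bsub>G\<^esub> g) * inverse (\<gamma> g (inv\<^bsub>G\<^esub> g) z) else 0)) =
       (\<Sum>g\<in>GG. a (eX, g) * \<omega> (inv\<^bsub>X\<^esub> z) z (inv\<^bsub>X\<^esub> z))"
    proof (intro sum.cong refl)
      fix g assume g: "g \<in> GG"
      define x0 where "x0 = act (inv\<^bsub>G\<^esub> g) z"
      have x0: "x0 \<in> XX" using g z by (simp add: x0_def)
      have zx0: "z = act g x0" using g z by (simp add: x0_def)
      note c = beta_coef[OF g x0, folded zx0]
      have pw: "\<And>x y. x \<in> XX \<Longrightarrow> y \<in> XX \<Longrightarrow> a (x \<otimes>\<^bsub>X\<^esub> y, g) * \<mu> g x y *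
         (if z \<in> XX \<and> m \<in> GG \<and> m = eG \<and> x = act (inv\<^bsub>G\<^esub> g) z \<and> y = inv\<^bsub>X\<^esub> x then
         \<omega> (inv\<^bsub>X\<^esub> x) x (inv\<^bsub>X\<^esub> x) * kS z (inv\<^bsub>G\<^esub> g) * inverse (\<gamma> g (inv\<^bsub>G\<^esub> g) z) else 0) =
         (if x = x0 then (if y = inv\<^bsub>X\<^esub> x0 then a (eX, g) * \<omega> (inv\<^bsub>X\<^esub> z) z (inv\<^bsub>X\<^esub> z) else 0) else 0)"
        using z me g c x0 by (auto simp: x0_def[symmetric] mult.assoc)
      have "(\<Sum>x\<in>XX. \<Sum>y\<in>XX. a (x \<otimes>\<^bsub>X\<^esub> y, g) * \<mu> g x y *
         (if z \<in> XX \<and> m \<in> GG \<and> m = eG \<and> x = act (inv\<^bsub>G\<^esub> g) z \<and> y = inv\<^bsub>X\<^esub> x then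
         \<omega> (inv\<^bsub>X\<^esub> x) x (inv\<^bsub>X\<^esub> x) * kS z (inv\<^bsub>G\<^esub> g) * inverse (\<gamma> g (inv\<^bsub>G\<^esub> g) z) else 0)) =
         (\<Sum>x\<in>XX. \<Sum>y\<in>XX. (if x = x0 then (if y = inv\<^bsub>X\<^esub> x0 then a (eX, g) * \<omega> (inv\<^bsub>X\<^esub> z) z (inv\<^bsub>X\<^esub> z) else 0) else 0))"
        by (intro sum.cong refl pw)
      also have "\<dots> = (\<Sum>y\<in>XX. (if y = inv\<^bsub>X\<^esub> x0 then a (eX, g) * \<omega> (inv\<^bsub>X\<^esub> z) z (inv\<^bsub>X\<^esub> z) else 0))"
        by (subst sum_single[where t=x0]) (use x0 finX in auto)
      also have "\<dots> = a (eX, g) * \<omega> (inv\<^bsub>X\<^esub> z) z (inv\<^bsub>X\<^esub> z)" using x0 finX by simp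
      finally show "(\<Sum>x\<in>XX. \<Sum>y\<in>XX. a (x \<otimes>\<^bsub>X\<^esub> y, g) * \<mu> g x y *
         (if z \<in> XX \<and> m \<in> GG \<and> m = eG \<and> x = act (inv\<^bsub>G\<^esub> g) z \<and> y = inv\<^bsub>X\<^esub> x then
         \<omega> (inv\<^bsub>X\<^esub> x) x (inv\<^bsub>X\<^esub> x) * kS z (inv\<^bsub>G\<^esub> g) * inverse (\<gamma> g (inv\<^bsub>G\<^esub> g) z) else 0)) =
         a (eX, g) * \<omega> (inv\<^bsub>X\<^esub> z) z (inv\<^bsub>X\<^esub> z)" .
    qed
    thus ?thesis using True by (simp add: sum_distrib_right)
  next
    case False
    thus ?thesis by (auto intro!: sum.neutral)
  qed
  also have "\<dots> = smult1 (eps BB epH a) beH p"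
    by (auto simp: p smult1_def eps_closed H_beta_sec sec1_apply)
  finally show "(\<Sum>i\<in>BB. \<Sum>j\<in>BB. Delta BB dcH a (i, j) * mul1 BB sc (mul1 BB sc (bvec i) beH) (SH (bvec j)) p) =
     smult1 (eps BB epH a) beH p" .
qed

lemma QH: "quasi_hopf_algebra BB sc unH dcH epH PhiH smH unH beH"
  unfolding quasi_hopf_algebra_def Let_def inv3_Phi
  using QB S_bij S_unit S_anti antipode1 antipode2 Phi_axiom Psi_axiom
  by (simp add: H_unit_sec H_beta_sec sec1_V1)

end




context qa
begin

abbreviation "RH \<equiv> H_R G X d c"

lemma X_cancel [simp]:
  "x \<in> XX \<Longrightarrow> y \<in> XX \<Longrightarrow> x \<otimes>\<^bsub>X\<^esub> (inv\<^bsub>X\<^esub> x \<otimes>\<^bsub>X\<^esub> y) = y"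
  "x \<in> XX \<Longrightarrow> y \<in> XX \<Longrightarrow> inv\<^bsub>X\<^esub> x \<otimes>\<^bsub>X\<^esub> (x \<otimes>\<^bsub>X\<^esub> y) = y"
  by (simp_all add: Xp.m_assoc[symmetric])
lemma G_cancel [simp]:
  "x \<in> GG \<Longrightarrow> y \<in> GG \<Longrightarrow> x \<otimes>\<^bsub>G\<^esub> (inv\<^bsub>G\<^esub> x \<otimes>\<^bsub>G\<^esub> y) = y"
  "x \<in> GG \<Longrightarrow> y \<in> GG \<Longrightarrow> inv\<^bsub>G\<^esub> x \<otimes>\<^bsub>G\<^esub> (x \<otimes>\<^bsub>G\<^esub> y) = y"
  by (simp_all add: Gp.m_assoc[symmetric])

lemma d_act' [simp]: "x \<in> XX \<Longrightarrow> y \<in> XX \<Longrightarrow> act (d x) y = x \<otimes>\<^bsub>X\<^esub> (y \<otimes>\<^bsub>X\<^esub> inv\<^bsub>X\<^esub> x)"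
  by (simp add: d_act Xp.m_assoc)
lemma d_inv_act [simp]: "x \<in> XX \<Longrightarrow> y \<in> XX \<Longrightarrow> act (inv\<^bsub>G\<^esub> (d x)) y = inv\<^bsub>X\<^esub> x \<otimes>\<^bsub>X\<^esub> (y \<otimes>\<^bsub>X\<^esub> x)"
  using d_act[of "inv\<^bsub>X\<^esub> x" y] by (simp add: Xp.m_assoc)

lemma gamma_inv_swap: "g \<in> GG \<Longrightarrow> x \<in> XX \<Longrightarrow> \<gamma> (inv\<^bsub>G\<^esub> g) g x = \<gamma> g (inv\<^bsub>G\<^esub> g) (act g x)"
  using cocB[of g "inv\<^bsub>G\<^esub> g" g x] by simp

definition "RinvH = sec2 (\<lambda>(x, y). \<gamma> (d x) (inv\<^bsub>G\<^esub> (d x)) y * inverse (c x (inv\<^bsub>X\<^esub> x \<otimes>\<^bsub>X\<^esub> (y \<otimes>\<^bsub>X\<^esub> x))))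
   (\<lambda>_. eG) (\<lambda>t. inv\<^bsub>G\<^esub> (d (fst t)))"

lemma H_R_sec': "RH = sec2 (\<lambda>(x, y). c x y) (\<lambda>_. eG) (\<lambda>t. d (fst t))"
  unfolding H_R_sec by (rule sec2_cong) auto

lemma R_Rinv1: "mul2 BB sc RH RinvH = one2 unH"
  unfolding H_R_sec' RinvH_def one2_sec
  apply (subst sec2_mul)
  apply (simp_all add: mem_Times_iff)
  apply (rule sec2_cong; simp add: coc_nz Xp.m_assoc field_simps)
  done

lemma R_Rinv2: "mul2 BB sc RinvH RH = one2 unH"
  unfolding H_R_sec' RinvH_def one2_sec
  apply (subst sec2_mul)
  apply (simp_all add: mem_Times_iff)
  apply (rule sec2_cong; simp add: coc_nz Xp.m_assoc gamma_inv_swap field_simps)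
  done

lemmas R_Rinv = R_Rinv1 R_Rinv2

lemma inv2_R: "inv2 BB sc unH RH = RinvH" and invertible2_R: "invertible2 BB sc unH RH"
  using inv2_eqI[OF _ R_Rinv] by (auto simp: RinvH_def sec2_V2)

lemma cocE':
  assumes g: "g \<in> GG" and x: "x \<in> XX" and y: "y \<in> XX"
  shows "c (act g x) (act g y) * \<mu> g x y * inverse (\<gamma> (g \<otimes>\<^bsub>G\<^esub> d x \<otimes>\<^bsub>G\<^esub> inv\<^bsub>G\<^esub> g) g y) =
         c x y * \<mu> g (x \<otimes>\<^bsub>X\<^esub> y \<otimes>\<^bsub>X\<^esub> inv\<^bsub>X\<^esub> x) x * inverse (\<gamma> g (d x) y)"
proof -
  have nz: "c x y \<noteq> 0" "\<mu> g x y \<noteq> 0" "\<gamma> g (d x) y \<noteq> 0" "\<gamma> (g \<otimes>\<^bsub>G\<^esub> d x \<otimes>\<^bsub>G\<^esub> inv\<^bsub>G\<^esub> g) g y \<noteq> 0"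
    using g x y by (simp_all add: coc_nz)
  show ?thesis using cocE[OF g x y] nz by (simp add: field_simps)
qed

lemma Delta_op_closed: "Delta_op BB dcH a (p, q) = Delta BB dcH a (q, p)"
  by (simp add: Delta_op_def)

lemma Delta_op_V2: "Delta_op BB dcH a \<in> V2 BB"
  by (auto simp: V2_def Delta_op_def Delta_def ext0_def)

lemma DopR: "mul2 BB sc (Delta_op BB dcH a) RH = mul2 BB sc RH (Delta BB dcH a)"
proof
  fix P :: "('x \<times> 'g) \<times> ('x \<times> 'g)"
  obtain z1 m1 z2 m2 where P: "P = ((z1, m1), (z2, m2))" by (metis prod.collapse)
  show "mul2 BB sc (Delta_op BB dcH a) RH P = mul2 BB sc RH (Delta BB dcH a) P"
  proof (cases "z1 \<in> XX \<and> m1 \<in> GG \<and> z2 \<in> XX \<and> m2 \<in> GG")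
    case False
    thus ?thesis by (simp add: P mul2_out)
  next
    case True
    hence m: "z1 \<in> XX" "m1 \<in> GG" "z2 \<in> XX" "m2 \<in> GG" by auto
    have L: "mul2 BB sc (Delta_op BB dcH a) RH P =
      c z1 z2 * (Delta BB dcH a ((act (d z1) z2, m2 \<otimes>\<^bsub>G\<^esub> inv\<^bsub>G\<^esub> (d z1)), (z1, m1)) *
        inverse (\<gamma> (m2 \<otimes>\<^bsub>G\<^esub> inv\<^bsub>G\<^esub> (d z1)) (d z1) z2))"
      unfolding P H_R_sec' using m
      by (subst mul2_sec_right[OF m refl _ refl]) (simp_all add: Delta_op_closed)
    have R: "mul2 BB sc RH (Delta BB dcH a) P =
      Delta BB dcH a ((z1, m1), (z2, m1)) * (RH ((act m1 z1, eG), (act m1 z2, m2 \<otimes>\<^bsub>G\<^esub> inv\<^bsub>G\<^esub> m1)) *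
        inverse (\<gamma> (m2 \<otimes>\<^bsub>G\<^esub> inv\<^bsub>G\<^esub> m1) m1 z2))"
      unfolding P mul2_closed[OF m]
      by (subst sum_single[where t="(m1, m1)"])
         (use m finG in \<open>auto simp: Delta_closed H_R_sec' sec2_apply Gp.inv_solve_right' split: if_splits\<close>)
    show ?thesis
    proof (cases "m2 = m1 \<otimes>\<^bsub>G\<^esub> d z1")
      case False
      have c1: "m2 \<otimes>\<^bsub>G\<^esub> inv\<^bsub>G\<^esub> (d z1) \<noteq> m1" using False m by (simp add: Gp.inv_solve_right')
      have c2: "m2 \<otimes>\<^bsub>G\<^esub> inv\<^bsub>G\<^esub> m1 \<noteq> d (act m1 z1)"
        using False m by (simp add: Gp.inv_solve_right' d_equiv Gp.m_assoc)
      show ?thesis unfolding L R using m c1 c2 by (simp add: Delta_closed H_R_sec' sec2_apply)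
    next
      case True
      have e1: "m2 \<otimes>\<^bsub>G\<^esub> inv\<^bsub>G\<^esub> (d z1) = m1" using True m by (simp add: Gp.m_assoc)
      have e2: "m2 \<otimes>\<^bsub>G\<^esub> inv\<^bsub>G\<^esub> m1 = m1 \<otimes>\<^bsub>G\<^esub> d z1 \<otimes>\<^bsub>G\<^esub> inv\<^bsub>G\<^esub> m1" using True by simp
      have e3: "d (act m1 z1) = m1 \<otimes>\<^bsub>G\<^esub> d z1 \<otimes>\<^bsub>G\<^esub> inv\<^bsub>G\<^esub> m1" using m by (simp add: d_equiv)
      have e4: "z1 \<otimes>\<^bsub>X\<^esub> z2 \<otimes>\<^bsub>X\<^esub> inv\<^bsub>X\<^esub> z1 \<otimes>\<^bsub>X\<^esub> z1 = z1 \<otimes>\<^bsub>X\<^esub> z2" using m by (simp add: Xp.m_assoc)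
      have e5: "act (d z1) z2 = z1 \<otimes>\<^bsub>X\<^esub> z2 \<otimes>\<^bsub>X\<^esub> inv\<^bsub>X\<^esub> z1" using m by (simp add: Xp.m_assoc)
      note ce = cocE'[OF m(2) m(1) m(3)]
      have "mul2 BB sc (Delta_op BB dcH a) RH P = a (z1 \<otimes>\<^bsub>X\<^esub> z2, m1) *
          (c z1 z2 * \<mu> m1 (z1 \<otimes>\<^bsub>X\<^esub> z2 \<otimes>\<^bsub>X\<^esub> inv\<^bsub>X\<^esub> z1) z1 * inverse (\<gamma> m1 (d z1) z2))"
        unfolding L e1 e5 using m by (simp add: Delta_closed e4 ac_simps del: d_act')
      also have "\<dots> = a (z1 \<otimes>\<^bsub>X\<^esub> z2, m1) *
          (c (act m1 z1) (act m1 z2) * \<mu> m1 z1 z2 * inverse (\<gamma> (m1 \<otimes>\<^bsub>G\<^esub> d z1 \<otimes>\<^bsub>G\<^esub> inv\<^bsub>G\<^esub> m1) m1 z2))"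
        by (simp only: ce)
      also have "\<dots> = mul2 BB sc RH (Delta BB dcH a) P"
        unfolding R e2 using m by (simp add: Delta_closed H_R_sec' sec2_apply e3 ac_simps)
      finally show ?thesis .
    qed
  qed
qed

lemma Delta_op_axiom: "Delta_op BB dcH a = mul2 BB sc (mul2 BB sc RH (Delta BB dcH a)) (inv2 BB sc unH RH)"
proof -
  have "mul2 BB sc (mul2 BB sc RH (Delta BB dcH a)) (inv2 BB sc unH RH) =
        mul2 BB sc (mul2 BB sc (Delta_op BB dcH a) RH) RinvH" by (simp add: DopR inv2_R)
  also have "\<dots> = mul2 BB sc (Delta_op BB dcH a) (mul2 BB sc RH RinvH)" by (rule mul2_assoc_H)
  also have "\<dots> = Delta_op BB dcH a" by (simp add: R_Rinv1 mul2_runit_H Delta_op_V2)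
  finally show ?thesis by simp
qed

lemma Delta_x_id_R: "Delta_x_id BB dcH RH = sec3 (\<lambda>(x, y, z). c (x \<otimes>\<^bsub>X\<^esub> y) z) (\<lambda>_. eG) (\<lambda>_. eG)
   (\<lambda>t. d (fst t \<otimes>\<^bsub>X\<^esub> fst (snd t)))"
  by (auto simp: fun_eq_iff Delta_x_id_closed H_R_sec' sec2_apply sec3_apply)
lemma id_x_Delta_R: "id_x_Delta BB dcH RH = sec3 (\<lambda>(x, y, z). c x (y \<otimes>\<^bsub>X\<^esub> z) * \<mu> (d x) y z) (\<lambda>_. eG)
   (\<lambda>t. d (fst t)) (\<lambda>t. d (fst t))"
  by (auto simp: fun_eq_iff id_x_Delta_closed H_R_sec' sec2_apply sec3_apply)
lemma leg312_Phi: "leg312 PhiH = sec3 (\<lambda>(x, y, z). \<omega> z x y) (\<lambda>_. eG) (\<lambda>_. eG) (\<lambda>_. eG)"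
  by (auto simp: fun_eq_iff leg312_def H_Phi_sec sec3_apply)
lemma leg213_Phi: "leg213 PhiH = sec3 (\<lambda>(x, y, z). \<omega> y x z) (\<lambda>_. eG) (\<lambda>_. eG) (\<lambda>_. eG)"
  by (auto simp: fun_eq_iff leg213_def H_Phi_sec sec3_apply)
lemma leg132_Psi: "leg132 PsiH = sec3 (\<lambda>(x, y, z). inverse (\<omega> x z y)) (\<lambda>_. eG) (\<lambda>_. eG) (\<lambda>_. eG)"
  by (auto simp: fun_eq_iff leg132_def PsiH_def sec3_apply)
lemma leg231_Psi: "leg231 PsiH = sec3 (\<lambda>(x, y, z). inverse (\<omega> y z x)) (\<lambda>_. eG) (\<lambda>_. eG) (\<lambda>_. eG)"
  by (auto simp: fun_eq_iff leg231_def PsiH_def sec3_apply)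
lemma R13_sec: "R13 unH RH = sec3 (\<lambda>(x, y, z). c x z) (\<lambda>_. eG) (\<lambda>_. eG) (\<lambda>t. d (fst t))"
  by (auto simp: fun_eq_iff R13_def H_R_sec' H_unit_sec sec1_apply sec2_apply sec3_apply)
lemma R23_sec: "R23 unH RH = sec3 (\<lambda>(x, y, z). c y z) (\<lambda>_. eG) (\<lambda>_. eG) (\<lambda>t. d (fst (snd t)))"
  by (auto simp: fun_eq_iff R23_def H_R_sec' H_unit_sec sec1_apply sec2_apply sec3_apply)
lemma R12_sec: "R12 unH RH = sec3 (\<lambda>(x, y, z). c x y) (\<lambda>_. eG) (\<lambda>t. d (fst t)) (\<lambda>_. eG)"
  by (auto simp: fun_eq_iff R12_def H_R_sec' H_unit_sec sec1_apply sec2_apply sec3_apply)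

lemma PhiH_sec': "PhiH = sec3 (\<lambda>(x, y, z). \<omega> x y z) (\<lambda>_. eG) (\<lambda>_. eG) (\<lambda>_. eG)"
  by (rule H_Phi_sec)

lemma hexagon1: "Delta_x_id BB dcH RH =
   mul3 BB sc (mul3 BB sc (mul3 BB sc (mul3 BB sc (leg312 PhiH) (R13 unH RH)) (leg132 (inv3 BB sc unH PhiH))) (R23 unH RH)) PhiH"
  unfolding inv3_Phi Delta_x_id_R leg312_Phi R13_sec leg132_Psi R23_sec
  unfolding PhiH_sec'

  apply (subst sec3_mul, simp_all add: mem_Times_iff xa3_def)+
  apply (rule sec3_cong)
     apply (simp_all add: xa3_def)
  subgoal for x y z using cocF[of x y z] by (simp add: Xp.m_assoc Xp.inv_mult_group divide_inverse ac_simps)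
  done

lemma hexagon2: "id_x_Delta BB dcH RH =
   mul3 BB sc (mul3 BB sc (mul3 BB sc (mul3 BB sc (leg231 (inv3 BB sc unH PhiH)) (R13 unH RH)) (leg213 PhiH)) (R12 unH RH)) (inv3 BB sc unH PhiH)"
  unfolding inv3_Phi id_x_Delta_R leg231_Psi R13_sec leg213_Phi R12_sec
  unfolding PsiH_def
  apply (subst sec3_mul, simp_all add: mem_Times_iff xa3_def)+
  apply (rule sec3_cong)
     apply (simp_all add: xa3_def)
  subgoal for x y z using cocG[of x y z] by (simp add: Xp.m_assoc Xp.inv_mult_group divide_inverse ac_simps coc_nz)
  done

lemma QT: "qt_quasi_hopf_algebra BB sc unH dcH epH PhiH smH unH beH RH"
  unfolding qt_quasi_hopf_algebra_def Let_def
proof (intro conjI ballI)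
  show "quasi_hopf_algebra BB sc unH dcH epH PhiH smH unH beH" by (rule QH)
  show "RH \<in> V2 BB" by (simp add: H_R_sec sec2_V2)
  show "invertible2 BB sc unH RH" by (rule invertible2_R)
  fix a show "Delta_op BB dcH a = mul2 BB sc (mul2 BB sc RH (Delta BB dcH a)) (inv2 BB sc unH RH)"
    by (rule Delta_op_axiom)
next
  show "Delta_x_id BB dcH RH =
   mul3 BB sc (mul3 BB sc (mul3 BB sc (mul3 BB sc (leg312 PhiH) (R13 unH RH)) (leg132 (inv3 BB sc unH PhiH))) (R23 unH RH)) PhiH"
    by (rule hexagon1)
  show "id_x_Delta BB dcH RH =
   mul3 BB sc (mul3 BB sc (mul3 BB sc (mul3 BB sc (leg231 (inv3 BB sc unH PhiH)) (R13 unH RH)) (leg213 PhiH)) (R12 unH RH)) (inv3 BB sc unH PhiH)"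
    by (rule hexagon2)
qed

end

theorem proposition6p1:
  fixes G :: "'g monoid" and X :: "'x monoid"
    and act :: "'g \<Rightarrow> 'x \<Rightarrow> 'x" and d :: "'x \<Rightarrow> 'g"
    and \<omega> :: "'x \<Rightarrow> 'x \<Rightarrow> 'x \<Rightarrow> 'k::field_char_0"
    and \<gamma> :: "'g \<Rightarrow> 'g \<Rightarrow> 'x \<Rightarrow> 'k" and \<mu> :: "'g \<Rightarrow> 'x \<Rightarrow> 'x \<Rightarrow> 'k"
    and c :: "'x \<Rightarrow> 'x \<Rightarrow> 'k"
  assumes "alg_closed_field TYPE('k)"
    and "finite_crossed_module G X act d"
    and "quasi_abelian_3_cocycle G X act d \<omega> \<gamma> \<mu> c"
    and "normalized_cocycle G X \<omega> \<gamma> \<mu> c"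
  shows "qt_quasi_hopf_algebra (H_basis G X) (H_sc G X act \<gamma>) (H_unit G X)
           (H_dc G X \<mu>) (H_ep G X) (H_Phi G X \<omega>)
           (H_sm G X act \<gamma> \<mu>) (H_unit G X) (H_beta G X \<omega>) (H_R G X d c)"
proof -
  interpret qa G X act d \<omega> \<gamma> \<mu> c using assms(2-4) by unfold_locales
  show ?thesis by (rule QT)
qed



end
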